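(* Let $m,n\ge1$ and let $\mathcal{C}$ be a simplicial complex on ground set $V$ obtained from $D_{m,n}$ (on vertex set $W\subseteq V$) by a finite sequence of operations, each of which is either $\operatorname{cone}^p(\cdot)$, $G(\cdot)$, or $\Lambda(\cdot)$. Call a vertex a Lawrence vertex if it is the new vertex added by one of the Lawrence liftings $\Lambda(\cdot)$ in this sequence. Let $\mathbf{d}=(d_v)_{v\in V}$ with all $d_v\ge 2$. Then $\mathcal{A}_{\mathcal{C},\mathbf{d}}$ is unimodular if and only if $d_v=2$ for every $v\in W$ and $d_v=2$ for every Lawrence vertex $v$.
   Context: A simplicial complex on a finite ground set $V$ is a family of subsets of $V$ closed under taking subsets; facets are inclusion-maximal faces. For $\mathbf{d}=(d_v)_{v\in V}$ with all $d_v\ge2$, $\mathcal{A}_{\mathcal{C},\mathbf{d}}$ is the $0/1$ matrix with columns indexed by $\mathbf{i}\in\prod_{v\in V}[d_v]$ and rows indexed by pairs $(F,\mathbf{e})$, $F$ a facet, $\mathbf{e}\in\prod_{v\in F}[d_v]$; entry $1$ iff $\mathbf{e}=\mathbf{i}|_F$. An integer matrix $A$ is unimodular if every circuit of $A$ (a nonzero integer vector in $\ker A$ with relatively prime entries and inclusion-minimal support among nonzero kernel vectors) has all entries in $\{0,\pm1\}$. $\Delta_k$ is the complex on a $(k+1)$-set with that set as its only facet; $\Delta_m\sqcup\Delta_n$ is the disjoint union; the Alexander dual of $\mathcal{C}$ on $V$ is $\{S\subseteq V: V\setminus S\notin\mathcal{C}\}$, and $D_{m,n}=(\Delta_m\sqcup\Delta_n)^*$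 (on $m+n+2$ vertices; its facets are the sets omitting exactly one vertex of each of the two blocks). $\operatorname{cone}^p(\mathcal{C})$ adds $p$ new vertices $u_1,\dots,u_p$ and has facets $F\cup\{u_1,\dots,u_p\}$; $G(\mathcal{C})$ is $\mathcal{C}$ with one new vertex added to the ground set lying in no face; for $\mathcal{C}$ on $[n]$, $\Lambda(\mathcal{C})$ is the complex on $[n+1]$ with facets $[n]$ and $F\cup\{n+1\}$ for $F$ a facet of $\mathcal{C}$. *)

theory Defs
  imports Main "HOL-Library.FuncSet"
begin

definition facets :: "'a set set \<Rightarrow> 'a set set" where
  "facets C = {F \<in> C. \<forall>G\<in>C. F \<subseteq> G \<longrightarrow> G = F}"

definition alexander_dual :: "'a set \<Rightarrow> 'a set set \<Rightarrow> 'a set set" where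
  "alexander_dual V C = {S. S \<subseteq> V \<and> V - S \<notin> C}"

text \<open>Delta_m disjoint-union Delta_n, realised on blocks A (|A|=m+1) and B (|B|=n+1).\<close>
definition simplex_disj_union :: "'a set \<Rightarrow> 'a set \<Rightarrow> 'a set set" where
  "simplex_disj_union A B = Pow A \<union> Pow B"

definition Dmn :: "'a set \<Rightarrow> 'a set \<Rightarrow> 'a set set" where
  "Dmn A B = alexander_dual (A \<union> B) (simplex_disj_union A B)"

text \<open>cone^p with new vertex set U (|U| = p): facets F \<union> U.\<close>
definition cone_cx :: "'a set \<Rightarrow> 'a set set \<Rightarrow> 'a set set" where
  "cone_cx U C = {S \<union> T | S T. S \<in> C \<and> T \<subseteq> U}"

text \<open>Lawrence lifting of C on ground set V with new vertex u:
  facets V and F \<union> {u} for F a facet of C.\<close>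
definition lawrence_cx :: "'a set \<Rightarrow> 'a \<Rightarrow> 'a set set \<Rightarrow> 'a set set" where
  "lawrence_cx V u C = Pow V \<union> {insert u S | S. S \<in> C}"

text \<open>obtained m n V C W L: the complex C on ground set V is obtained from D_{m,n}
  on vertex set W by a finite sequence of cone^p, G and Lambda operations;
  L is the set of Lawrence vertices of that sequence.\<close>
inductive obtained :: "nat \<Rightarrow> nat \<Rightarrow> 'a set \<Rightarrow> 'a set set \<Rightarrow> 'a set \<Rightarrow> 'a set \<Rightarrow> bool"
  for m n :: nat where
  base: "\<lbrakk> finite A; finite B; A \<inter> B = {}; card A = m + 1; card B = n + 1 \<rbrakk>
         \<Longrightarrow> obtained m n (A \<union> B) (Dmn A B) (A \<union> B) {}"
| cone: "\<lbrakk> obtained m n V C W L; finite U; U \<noteq> {}; U \<inter> V = {} \<rbrakk>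
         \<Longrightarrow> obtained m n (V \<union> U) (cone_cx U C) W L"
| ghost: "\<lbrakk> obtained m n V C W L; u \<notin> V \<rbrakk>
         \<Longrightarrow> obtained m n (insert u V) C W L"
| lawrence: "\<lbrakk> obtained m n V C W L; u \<notin> V \<rbrakk>
         \<Longrightarrow> obtained m n (insert u V) (lawrence_cx V u C) W (insert u L)"

text \<open>An integer matrix given by a row index set R, column index set K and entries M.\<close>
definition in_kernel :: "'r set \<Rightarrow> 'k set \<Rightarrow> ('r \<Rightarrow> 'k \<Rightarrow> int) \<Rightarrow> ('k \<Rightarrow> int) \<Rightarrow> bool" where
  "in_kernel R K M x \<longleftrightarrow> (\<forall>c. c \<notin> K \<longrightarrow> x c = 0) \<and> (\<forall>r\<in>R. (\<Sum>c\<in>K. M r c * x c) = 0)"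

definition supp_vec :: "('k \<Rightarrow> int) \<Rightarrow> 'k set" where
  "supp_vec x = {c. x c \<noteq> 0}"

definition is_circuit :: "'r set \<Rightarrow> 'k set \<Rightarrow> ('r \<Rightarrow> 'k \<Rightarrow> int) \<Rightarrow> ('k \<Rightarrow> int) \<Rightarrow> bool" where
  "is_circuit R K M x \<longleftrightarrow>
     in_kernel R K M x \<and> supp_vec x \<noteq> {} \<and> Gcd (x ` K) = 1 \<and>
     (\<forall>y. in_kernel R K M y \<and> supp_vec y \<noteq> {} \<longrightarrow> \<not> (supp_vec y \<subset> supp_vec x))"

definition unimodular_mat :: "'r set \<Rightarrow> 'k set \<Rightarrow> ('r \<Rightarrow> 'k \<Rightarrow> int) \<Rightarrow> bool" where
  "unimodular_mat R K M \<longleftrightarrow> (\<forall>x. is_circuit R K M x \<longrightarrow> (\<forall>c\<in>K. x c \<in> {-1, 0, 1}))"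

definition cols_A :: "'a set \<Rightarrow> ('a \<Rightarrow> nat) \<Rightarrow> ('a \<Rightarrow> nat) set" where
  "cols_A V d = PiE V (\<lambda>v. {1..d v})"

definition rows_A :: "'a set set \<Rightarrow> ('a \<Rightarrow> nat) \<Rightarrow> ('a set \<times> ('a \<Rightarrow> nat)) set" where
  "rows_A C d = {(F, e). F \<in> facets C \<and> e \<in> PiE F (\<lambda>v. {1..d v})}"

definition entry_A :: "'a set \<times> ('a \<Rightarrow> nat) \<Rightarrow> ('a \<Rightarrow> nat) \<Rightarrow> int" where
  "entry_A r i = (if snd r = restrict i (fst r) then 1 else 0)"

definition A_unimodular :: "'a set \<Rightarrow> 'a set set \<Rightarrow> ('a \<Rightarrow> nat) \<Rightarrow> bool" where
  "A_unimodular V C d = unimodular_mat (rows_A C d) (cols_A V d) entry_A"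

end

theory Submission
  imports Defs
begin

definition Pab :: "'r set \<Rightarrow> 'k set \<Rightarrow> ('r \<Rightarrow> 'k \<Rightarrow> int) \<Rightarrow> bool" where
  "Pab R K M \<longleftrightarrow> (\<forall>z. in_kernel R K M z \<and> supp_vec z \<noteq> {} \<longrightarrow>
     (\<exists>y. in_kernel R K M y \<and> supp_vec y \<noteq> {} \<and> (\<forall>c. y c \<in> {-1,0,1}) \<and> supp_vec y \<subseteq> supp_vec z))"

lemma in_kernel_lin:
  assumes "in_kernel R K M x" "in_kernel R K M y"
  shows "in_kernel R K M (\<lambda>c. a * x c + b * y c)"
proof -
  have "(\<Sum>c\<in>K. M r c * (a * x c + b * y c)) = a * (\<Sum>c\<in>K. M r c * x c) + b * (\<Sum>c\<in>K. M r c * y c)" for r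
    by (simp add: sum.distrib sum_distrib_left algebra_simps)
  then show ?thesis using assms unfolding in_kernel_def by auto
qed

lemma P_imp_unimod:
  assumes "Pab R K M"
  shows "unimodular_mat R K M"
  unfolding unimodular_mat_def
proof (intro allI impI ballI)
  fix x c assume circ: "is_circuit R K M x" and cK: "c \<in> K"
  have kx: "in_kernel R K M x" using circ unfolding is_circuit_def by (elim conjE)
  have nz: "supp_vec x \<noteq> {}" using circ unfolding is_circuit_def by (elim conjE)
  have g: "Gcd (x ` K) = 1" using circ unfolding is_circuit_def by (elim conjE)
  have mn: "\<And>y. in_kernel R K M y \<Longrightarrow> supp_vec y \<noteq> {} \<Longrightarrow> \<not> supp_vec y \<subset> supp_vec x"
    using circ unfolding is_circuit_def by (elim conjE) simp
  have "\<exists>y. in_kernel R K M y \<and> supp_vec y \<noteq> {} \<and> (\<forall>c. y c \<in> {-1,0,1}) \<and> supp_vec y \<subseteq> supp_vec x"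
    using assms kx nz unfolding Pab_def by simp
  then obtain y where ky: "in_kernel R K M y" and ny: "supp_vec y \<noteq> {}" and y1: "\<forall>c. y c \<in> {-1,0,1}"
    and sy: "supp_vec y \<subseteq> supp_vec x" by (elim exE conjE)
  have eq: "supp_vec y = supp_vec x" using mn[OF ky ny] sy by (simp add: psubset_eq)
  obtain j where j: "j \<in> supp_vec y" using ny by blast
  define v where "v = (\<lambda>c. x j * y c + (- y j) * x c)"
  have kv: "in_kernel R K M v" unfolding v_def by (rule in_kernel_lin[OF ky kx])
  have s1: "supp_vec v \<subseteq> supp_vec x"
  proof
    fix c assume "c \<in> supp_vec v"
    hence "y c \<noteq> 0 \<or> x c \<noteq> 0" unfolding v_def supp_vec_def by auto
    thus "c \<in> supp_vec x" using eq unfolding supp_vec_def by blast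
  qed
  have s2: "j \<notin> supp_vec v" unfolding v_def supp_vec_def by (simp add: mult.commute)
  have s3: "j \<in> supp_vec x" using j eq by simp
  have "supp_vec v \<subset> supp_vec x" using s1 s2 s3 by (simp add: psubset_eq) blast
  with mn[OF kv] have "supp_vec v = {}" by blast
  hence v0: "\<And>c. x j * y c = y j * x c" unfolding v_def supp_vec_def by auto
  have yj0: "y j \<noteq> 0" using j unfolding supp_vec_def by simp
  have yj: "y j * y j = 1"
  proof -
    have "y j \<in> {-1,0,1}" using y1 by simp
    with yj0 have "y j = -1 \<or> y j = 1" by simp
    thus ?thesis by (elim disjE) simp_all
  qed
  define k where "k = x j * y j"
  have xk: "\<And>c. x c = k * y c"
  proof -
    fix c have "y j * (x j * y c) = y j * (y j * x c)" using v0 by simp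
    thus "x c = k * y c" unfolding k_def using yj by (simp add: algebra_simps)
  qed
  have "k dvd Gcd (x ` K)"
  proof (rule Gcd_greatest)
    fix a assume "a \<in> x ` K" then obtain c where "a = x c" by blast
    thus "k dvd a" using xk by simp
  qed
  hence "\<bar>k\<bar> = 1" using g by simp
  hence "k = 1 \<or> k = -1" by linarith
  moreover have "y c \<in> {-1,0,1}" using y1 by simp
  ultimately show "x c \<in> {-1,0,1}" using xk[of c] by auto
qed
lemma supp_sub_K: "in_kernel R K M x \<Longrightarrow> supp_vec x \<subseteq> K"
  unfolding in_kernel_def supp_vec_def by auto

lemma unimod_imp_P:
  assumes fin: "finite K" and U: "unimodular_mat R K M"
  shows "Pab R K M"
  unfolding Pab_def
proof (intro allI impI)
  fix z assume H: "in_kernel R K M z \<and> supp_vec z \<noteq> {}"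
  have kz: "in_kernel R K M z" and nz: "supp_vec z \<noteq> {}" using H by simp_all
  define Q where "Q = (\<lambda>y. in_kernel R K M y \<and> supp_vec y \<noteq> {} \<and> supp_vec y \<subseteq> supp_vec z)"
  have "Q z" using kz nz unfolding Q_def by simp
  then obtain y where Qy: "Q y" and ymin0: "\<forall>y'. Q y' \<longrightarrow> card (supp_vec y) \<le> card (supp_vec y')"
    using ex_has_least_nat[of Q z "\<lambda>y. card (supp_vec y)"] by blast
  have ymin: "\<And>y'. Q y' \<Longrightarrow> card (supp_vec y) \<le> card (supp_vec y')" using ymin0 by simp
  have ky: "in_kernel R K M y" and ny: "supp_vec y \<noteq> {}" and sy: "supp_vec y \<subseteq> supp_vec z"
    using Qy unfolding Q_def by simp_all
  have yK: "\<And>c. c \<notin> K \<Longrightarrow> y c = 0" using ky unfolding in_kernel_def by simp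
  define g where "g = Gcd (y ` K)"
  obtain j where j: "j \<in> supp_vec y" using ny by blast
  have gd: "\<And>c. g dvd y c"
  proof -
    fix c show "g dvd y c"
    proof (cases "c \<in> K")
      case True thus ?thesis unfolding g_def by (simp add: Gcd_dvd)
    next
      case False thus ?thesis using yK by simp
    qed
  qed
  have yj: "y j \<noteq> 0" using j unfolding supp_vec_def by simp
  have g0: "g \<noteq> 0" using gd[of j] yj by auto
  define y' where "y' = (\<lambda>c. y c div g)"
  have yy': "\<And>c. y c = g * y' c" unfolding y'_def using gd by simp
  have supp': "supp_vec y' = supp_vec y" unfolding supp_vec_def using yy' g0 by simp
  have ky': "in_kernel R K M y'"
    unfolding in_kernel_def
  proof (intro conjI allI impI ballI)
    fix c assume "c \<notin> K" thus "y' c = 0" using yK yy' g0 by (metis mult_eq_0_iff)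
  next
    fix r assume r: "r \<in> R"
    have "g * (\<Sum>c\<in>K. M r c * y' c) = (\<Sum>c\<in>K. M r c * y c)"
      by (simp add: sum_distrib_left yy' algebra_simps)
    also have "\<dots> = 0" using ky r unfolding in_kernel_def by simp
    finally show "(\<Sum>c\<in>K. M r c * y' c) = 0" using g0 by simp
  qed
  have imgeq: "y ` K = (*) g ` (y' ` K)" using yy' by (simp add: image_image)
  have "Gcd (y ` K) = normalize (g * Gcd (y' ` K))" unfolding imgeq by (simp add: Gcd_mult)
  hence "g = normalize (g * Gcd (y' ` K))" unfolding g_def .
  moreover have "normalize g = g" unfolding g_def by simp
  moreover have "g \<ge> 0" unfolding g_def by simp
  moreover have "Gcd (y' ` K) \<ge> 0" by simp
  ultimately have "g * Gcd (y' ` K) = g" by (simp add: abs_mult)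
  hence gy': "Gcd (y' ` K) = 1" using g0 by simp
  have circ: "is_circuit R K M y'"
    unfolding is_circuit_def
  proof (intro conjI allI impI)
    show "in_kernel R K M y'" by fact
    show "supp_vec y' \<noteq> {}" using supp' ny by simp
    show "Gcd (y' ` K) = 1" by fact
  next
    fix w assume w: "in_kernel R K M w \<and> supp_vec w \<noteq> {}"
    show "\<not> supp_vec w \<subset> supp_vec y'"
    proof
      assume ss: "supp_vec w \<subset> supp_vec y'"
      have "Q w" using w ss supp' sy unfolding Q_def by auto
      hence "card (supp_vec y) \<le> card (supp_vec w)" by (rule ymin)
      moreover have "finite (supp_vec y)" using supp_sub_K[OF ky] fin finite_subset by blast
      moreover have "card (supp_vec w) < card (supp_vec y)"
        using ss supp' \<open>finite (supp_vec y)\<close> by (simp add: psubset_card_mono)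
      ultimately show False by simp
    qed
  qed
  have "\<forall>c. y' c \<in> {-1,0,1}"
  proof
    fix c show "y' c \<in> {-1,0,1}"
    proof (cases "c \<in> K")
      case True thus ?thesis using U circ unfolding unimodular_mat_def by simp
    next
      case False thus ?thesis using ky' unfolding in_kernel_def by simp
    qed
  qed
  thus "\<exists>y. in_kernel R K M y \<and> supp_vec y \<noteq> {} \<and> (\<forall>c. y c \<in> {-1,0,1}) \<and> supp_vec y \<subseteq> supp_vec z"
    using ky' supp' ny sy by (intro exI[of _ y']) simp
qed

lemma unimod_iff_P: "finite K \<Longrightarrow> unimodular_mat R K M \<longleftrightarrow> Pab R K M"
  using P_imp_unimod unimod_imp_P by metis


definition marg :: "'a set \<Rightarrow> ('a \<Rightarrow> nat) \<Rightarrow> 'a set \<Rightarrow> ('a \<Rightarrow> nat) \<Rightarrow> (('a \<Rightarrow> nat) \<Rightarrow> int) \<Rightarrow> int" where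
  "marg V d S e z = (\<Sum>i\<in>cols_A V d. if restrict i S = e then z i else 0)"

definition kerv :: "'a set \<Rightarrow> 'a set set \<Rightarrow> ('a \<Rightarrow> nat) \<Rightarrow> (('a \<Rightarrow> nat) \<Rightarrow> int) \<Rightarrow> bool" where
  "kerv V C d z \<longleftrightarrow> (\<forall>i. i \<notin> cols_A V d \<longrightarrow> z i = 0) \<and>
     (\<forall>S\<in>C. \<forall>e\<in>PiE S (\<lambda>v. {1..d v}). marg V d S e z = 0)"

definition PP :: "'a set \<Rightarrow> 'a set set \<Rightarrow> ('a \<Rightarrow> nat) \<Rightarrow> bool" where
  "PP V C d \<longleftrightarrow> (\<forall>z. kerv V C d z \<and> (\<exists>i. z i \<noteq> 0) \<longrightarrow>
     (\<exists>y. kerv V C d y \<and> (\<exists>i. y i \<noteq> 0) \<and> (\<forall>i. y i \<in> {-1,0,1}) \<and> (\<forall>i. y i \<noteq> 0 \<longrightarrow> z i \<noteq> 0)))"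

lemma finite_cols: "finite V \<Longrightarrow> finite (cols_A V d)"
  unfolding cols_A_def by (rule finite_PiE) auto

lemma facet_exists:
  assumes "finite C" "S \<in> C"
  shows "\<exists>F\<in>facets C. S \<subseteq> F"
proof -
  obtain m where m: "m \<in> C" "S \<subseteq> m" "\<forall>b\<in>C. m \<subseteq> b \<longrightarrow> m = b"
    using finite_has_maximal2[OF assms] by blast
  have "m \<in> facets C" unfolding facets_def using m by auto
  thus ?thesis using m by blast
qed

lemma restrict_restrict_sub: "S \<subseteq> F \<Longrightarrow> restrict (restrict i F) S = restrict i S"
  by (auto simp: restrict_def fun_eq_iff)

lemma marg_sub:
  assumes fV: "finite V" and SF: "S \<subseteq> F" and FV: "F \<subseteq> V"
  shows "marg V d S e z = (\<Sum>e'\<in>PiE F (\<lambda>v. {1..d v}). if restrict e' S = e then marg V d F e' z else 0)"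
proof -
  have fF: "finite (PiE F (\<lambda>v. {1..d v}))" using fV FV finite_subset by (intro finite_PiE) auto
  have "(\<Sum>e'\<in>PiE F (\<lambda>v. {1..d v}). if restrict e' S = e then marg V d F e' z else 0)
      = (\<Sum>e'\<in>PiE F (\<lambda>v. {1..d v}). \<Sum>i\<in>cols_A V d. if restrict i F = e' then (if restrict e' S = e then z i else 0) else 0)"
  proof (intro sum.cong refl)
    fix e' show "(if restrict e' S = e then marg V d F e' z else 0) =
      (\<Sum>i\<in>cols_A V d. if restrict i F = e' then (if restrict e' S = e then z i else 0) else 0)"
    proof -
      have "\<And>P. (if P then marg V d F e' z else 0) =
        (\<Sum>i\<in>cols_A V d. if restrict i F = e' then (if P then z i else 0) else 0)"
        unfolding marg_def by (case_tac P) (auto intro!: sum.cong sum.neutral)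
      thus ?thesis .
    qed
  qed
  also have "\<dots> = (\<Sum>i\<in>cols_A V d. \<Sum>e'\<in>PiE F (\<lambda>v. {1..d v}). if restrict i F = e' then (if restrict e' S = e then z i else 0) else 0)"
    by (rule sum.swap)
  also have "\<dots> = (\<Sum>i\<in>cols_A V d. if restrict i S = e then z i else 0)"
  proof (intro sum.cong refl)
    fix i assume i: "i \<in> cols_A V d"
    have "restrict i F \<in> PiE F (\<lambda>v. {1..d v})" using i FV unfolding cols_A_def by auto
    thus "(\<Sum>e'\<in>PiE F (\<lambda>v. {1..d v}). if restrict i F = e' then (if restrict e' S = e then z i else 0) else 0)
        = (if restrict i S = e then z i else 0)"
      using fF SF by (simp add: Int_absorb1)
  qed
  finally show ?thesis unfolding marg_def by simp
qed

lemma entry_sum: "(\<Sum>c\<in>cols_A V d. entry_A (F, e) c * z c) = marg V d F e z"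
  unfolding marg_def entry_A_def by (intro sum.cong refl) auto

lemma kernel_iff:
  assumes fV: "finite V" and CV: "C \<subseteq> Pow V"
  shows "in_kernel (rows_A C d) (cols_A V d) entry_A z \<longleftrightarrow> kerv V C d z"
proof
  assume H: "in_kernel (rows_A C d) (cols_A V d) entry_A z"
  have z0: "\<forall>i. i \<notin> cols_A V d \<longrightarrow> z i = 0" using H unfolding in_kernel_def by simp
  have fr: "\<And>F e. F \<in> facets C \<Longrightarrow> e \<in> PiE F (\<lambda>v. {1..d v}) \<Longrightarrow> marg V d F e z = 0"
  proof -
    fix F e assume "F \<in> facets C" "e \<in> PiE F (\<lambda>v. {1..d v})"
    hence "(F, e) \<in> rows_A C d" unfolding rows_A_def by simp
    hence "(\<Sum>c\<in>cols_A V d. entry_A (F, e) c * z c) = 0" using H unfolding in_kernel_def by blast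
    thus "marg V d F e z = 0" by (simp add: entry_sum)
  qed
  have fC: "finite C" using CV fV by (meson finite_Pow_iff finite_subset)
  have "\<forall>S\<in>C. \<forall>e\<in>PiE S (\<lambda>v. {1..d v}). marg V d S e z = 0"
  proof (intro ballI)
    fix S e assume S: "S \<in> C" and e: "e \<in> PiE S (\<lambda>v. {1..d v})"
    obtain F where F: "F \<in> facets C" "S \<subseteq> F" using facet_exists[OF fC S] by blast
    have FV: "F \<subseteq> V" using F CV unfolding facets_def by auto
    show "marg V d S e z = 0" unfolding marg_sub[OF fV F(2) FV] using fr[OF F(1)] by (intro sum.neutral) simp
  qed
  thus "kerv V C d z" using z0 unfolding kerv_def by simp
next
  assume K: "kerv V C d z"
  show "in_kernel (rows_A C d) (cols_A V d) entry_A z"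
    unfolding in_kernel_def
  proof (intro conjI allI impI ballI)
    fix c assume "c \<notin> cols_A V d" thus "z c = 0" using K unfolding kerv_def by simp
  next
    fix r assume r: "r \<in> rows_A C d"
    then obtain F e where r': "r = (F, e)" "F \<in> facets C" "e \<in> PiE F (\<lambda>v. {1..d v})"
      unfolding rows_A_def by blast
    have "F \<in> C" using r'(2) unfolding facets_def by simp
    thus "(\<Sum>c\<in>cols_A V d. entry_A r c * z c) = 0" using K r' unfolding kerv_def by (simp add: entry_sum)
  qed
qed

lemma A_unimodular_iff_PP:
  assumes fV: "finite V" and CV: "C \<subseteq> Pow V"
  shows "A_unimodular V C d \<longleftrightarrow> PP V C d"
proof -
  have "A_unimodular V C d \<longleftrightarrow> Pab (rows_A C d) (cols_A V d) entry_A"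
    unfolding A_unimodular_def by (rule unimod_iff_P[OF finite_cols[OF fV]])
  also have "\<dots> \<longleftrightarrow> PP V C d"
    unfolding Pab_def PP_def kernel_iff[OF fV CV] supp_vec_def by (simp add: subset_iff)
  finally show ?thesis .
qed


definition mg :: "'a set \<Rightarrow> ('a \<Rightarrow> nat) \<Rightarrow> ('a \<Rightarrow> nat) \<Rightarrow> ('a \<Rightarrow> nat)" where
  "mg V j t = (\<lambda>x. if x \<in> V then j x else t x)"

definition sl :: "'a set \<Rightarrow> ('a \<Rightarrow> nat) \<Rightarrow> (('a \<Rightarrow> nat) \<Rightarrow> int) \<Rightarrow> ('a \<Rightarrow> nat) \<Rightarrow> ('a \<Rightarrow> nat) \<Rightarrow> int" where
  "sl V d z t = (\<lambda>j. if j \<in> cols_A V d then z (mg V j t) else 0)"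

definition emb :: "'a set \<Rightarrow> 'a set \<Rightarrow> ('a \<Rightarrow> nat) \<Rightarrow> ('a \<Rightarrow> nat) \<Rightarrow> (('a \<Rightarrow> nat) \<Rightarrow> int) \<Rightarrow> ('a \<Rightarrow> nat) \<Rightarrow> int" where
  "emb V U d t y = (\<lambda>i. if i \<in> cols_A (V \<union> U) d \<and> restrict i U = t then y (restrict i V) else 0)"

lemma mg_cols: "j \<in> cols_A V d \<Longrightarrow> t \<in> cols_A U d \<Longrightarrow> mg V j t \<in> cols_A (V \<union> U) d"
  unfolding cols_A_def mg_def by (auto simp: PiE_def extensional_def Pi_def)

lemma restrict_mg_V: "j \<in> cols_A V d \<Longrightarrow> restrict (mg V j t) V = j"
  unfolding cols_A_def mg_def by (auto simp: fun_eq_iff PiE_def extensional_def)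

lemma restrict_mg_U: "V \<inter> U = {} \<Longrightarrow> t \<in> cols_A U d \<Longrightarrow> restrict (mg V j t) U = t"
  unfolding cols_A_def mg_def by (auto simp: fun_eq_iff PiE_def extensional_def)

lemma restrict_cols_V: "i \<in> cols_A (V \<union> U) d \<Longrightarrow> restrict i V \<in> cols_A V d"
  unfolding cols_A_def by auto

lemma restrict_cols_U: "i \<in> cols_A (V \<union> U) d \<Longrightarrow> restrict i U \<in> cols_A U d"
  unfolding cols_A_def by auto

lemma mg_restrict: "i \<in> cols_A (V \<union> U) d \<Longrightarrow> mg V (restrict i V) (restrict i U) = i"
  unfolding cols_A_def mg_def by (auto simp: fun_eq_iff PiE_def extensional_def)

lemma mg_inj:
  assumes "V \<inter> U = {}" "j \<in> cols_A V d" "t \<in> cols_A U d" "j' \<in> cols_A V d" "t' \<in> cols_A U d"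
    "mg V j t = mg V j' t'"
  shows "j = j' \<and> t = t'"
proof
  have "j = restrict (mg V j t) V" using restrict_mg_V[OF assms(2), of t] by simp
  also have "\<dots> = restrict (mg V j' t') V" using assms(6) by simp
  also have "\<dots> = j'" using restrict_mg_V[OF assms(4), of t'] by simp
  finally show "j = j'" .
  have "t = restrict (mg V j t) U" using restrict_mg_U[OF assms(1) assms(3), of j] by simp
  also have "\<dots> = restrict (mg V j' t') U" using assms(6) by simp
  also have "\<dots> = t'" using restrict_mg_U[OF assms(1) assms(5), of j'] by simp
  finally show "t = t'" .
qed

lemma bij_mg:
  assumes "V \<inter> U = {}"
  shows "bij_betw (\<lambda>(j, t). mg V j t) (cols_A V d \<times> cols_A U d) (cols_A (V \<union> U) d)"
  unfolding bij_betw_def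
proof
  show "inj_on (\<lambda>(j, t). mg V j t) (cols_A V d \<times> cols_A U d)"
    unfolding inj_on_def using mg_inj[OF assms] by auto
  show "(\<lambda>(j, t). mg V j t) ` (cols_A V d \<times> cols_A U d) = cols_A (V \<union> U) d"
  proof
    show "(\<lambda>(j, t). mg V j t) ` (cols_A V d \<times> cols_A U d) \<subseteq> cols_A (V \<union> U) d"
      using mg_cols by auto
    show "cols_A (V \<union> U) d \<subseteq> (\<lambda>(j, t). mg V j t) ` (cols_A V d \<times> cols_A U d)"
    proof
      fix i assume i: "i \<in> cols_A (V \<union> U) d"
      hence "(restrict i V, restrict i U) \<in> cols_A V d \<times> cols_A U d"
        using restrict_cols_V restrict_cols_U by blast
      moreover have "i = (\<lambda>(j, t). mg V j t) (restrict i V, restrict i U)" using mg_restrict[OF i] by simp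
      ultimately show "i \<in> (\<lambda>(j, t). mg V j t) ` (cols_A V d \<times> cols_A U d)" by blast
    qed
  qed
qed

lemma sum_split:
  assumes "V \<inter> U = {}" "finite V" "finite U"
  shows "(\<Sum>i\<in>cols_A (V \<union> U) d. f i) = (\<Sum>t\<in>cols_A U d. \<Sum>j\<in>cols_A V d. f (mg V j t))"
proof -
  have "(\<Sum>i\<in>cols_A (V \<union> U) d. f i) = (\<Sum>x\<in>cols_A V d \<times> cols_A U d. f ((\<lambda>(j, t). mg V j t) x))"
    using sum.reindex_bij_betw[OF bij_mg[OF assms(1)], of f] by simp
  also have "\<dots> = (\<Sum>x\<in>cols_A V d \<times> cols_A U d. (\<lambda>(j, t). f (mg V j t)) x)"
    by (intro sum.cong refl) (simp add: case_prod_beta)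
  also have "\<dots> = (\<Sum>j\<in>cols_A V d. \<Sum>t\<in>cols_A U d. f (mg V j t))"
    by (simp add: sum.cartesian_product)
  also have "\<dots> = (\<Sum>t\<in>cols_A U d. \<Sum>j\<in>cols_A V d. f (mg V j t))"
    by (rule sum.swap)
  finally show ?thesis .
qed

lemma restrict_mg_eq:
  assumes "V \<inter> U = {}" "S \<subseteq> V" "T \<subseteq> U" "e \<in> PiE (S \<union> T) D"
  shows "restrict (mg V j t) (S \<union> T) = e \<longleftrightarrow> restrict j S = restrict e S \<and> restrict t T = restrict e T"
proof
  assume H: "restrict (mg V j t) (S \<union> T) = e"
  have a: "\<And>x. x \<in> S \<Longrightarrow> j x = e x"
  proof -
    fix x assume x: "x \<in> S"
    have "restrict (mg V j t) (S \<union> T) x = e x" using H by simp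
    thus "j x = e x" using x assms(2) unfolding mg_def by auto
  qed
  have b: "\<And>x. x \<in> T \<Longrightarrow> t x = e x"
  proof -
    fix x assume x: "x \<in> T"
    have "restrict (mg V j t) (S \<union> T) x = e x" using H by simp
    moreover have "x \<notin> V" using x assms(1,3) by blast
    ultimately show "t x = e x" using x unfolding mg_def by simp
  qed
  show "restrict j S = restrict e S \<and> restrict t T = restrict e T" using a b by (auto simp: fun_eq_iff)
next
  assume H: "restrict j S = restrict e S \<and> restrict t T = restrict e T"
  have a: "\<And>x. x \<in> S \<Longrightarrow> j x = e x" using H by (metis restrict_apply')
  have b: "\<And>x. x \<in> T \<Longrightarrow> t x = e x" using H by (metis restrict_apply')
  have c: "\<And>x. x \<notin> S \<union> T \<Longrightarrow> e x = undefined" using assms(4) by (auto simp: PiE_def extensional_def)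
  show "restrict (mg V j t) (S \<union> T) = e"
  proof (rule ext)
    fix x show "restrict (mg V j t) (S \<union> T) x = e x"
    proof (cases "x \<in> S")
      case True thus ?thesis using a assms(2) unfolding mg_def by auto
    next
      case F: False
      show ?thesis
      proof (cases "x \<in> T")
        case True thus ?thesis using b assms(1,3) F unfolding mg_def by auto
      next
        case False thus ?thesis using F c by simp
      qed
    qed
  qed
qed

lemma marg_split:
  assumes disj: "V \<inter> U = {}" and fV: "finite V" and fU: "finite U"
    and SV: "S \<subseteq> V" and TU: "T \<subseteq> U" and e: "e \<in> PiE (S \<union> T) D"
  shows "marg (V \<union> U) d (S \<union> T) e z =
     (\<Sum>t\<in>cols_A U d. if restrict t T = restrict e T then marg V d S (restrict e S) (sl V d z t) else 0)"
proof -
  have "marg (V \<union> U) d (S \<union> T) e z =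
     (\<Sum>t\<in>cols_A U d. \<Sum>j\<in>cols_A V d. if restrict (mg V j t) (S \<union> T) = e then z (mg V j t) else 0)"
    unfolding marg_def by (rule sum_split[OF disj fV fU])
  also have "\<dots> = (\<Sum>t\<in>cols_A U d. if restrict t T = restrict e T then marg V d S (restrict e S) (sl V d z t) else 0)"
  proof (intro sum.cong refl)
    fix t assume t: "t \<in> cols_A U d"
    show "(\<Sum>j\<in>cols_A V d. if restrict (mg V j t) (S \<union> T) = e then z (mg V j t) else 0) =
          (if restrict t T = restrict e T then marg V d S (restrict e S) (sl V d z t) else 0)"
    proof (cases "restrict t T = restrict e T")
      case True
      have "(\<Sum>j\<in>cols_A V d. if restrict (mg V j t) (S \<union> T) = e then z (mg V j t) else 0) =
            (\<Sum>j\<in>cols_A V d. if restrict j S = restrict e S then sl V d z t j else 0)"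
        unfolding restrict_mg_eq[OF disj SV TU e] sl_def using True by (intro sum.cong refl) simp
      thus ?thesis using True unfolding marg_def by simp
    next
      case False
      have "(\<Sum>j\<in>cols_A V d. if restrict (mg V j t) (S \<union> T) = e then z (mg V j t) else 0) = 0"
        unfolding restrict_mg_eq[OF disj SV TU e] using False by (intro sum.neutral) simp
      thus ?thesis using False by simp
    qed
  qed
  finally show ?thesis .
qed

lemma marg_sum_fun:
  "marg V d S e (\<lambda>j. \<Sum>t\<in>X. f t j) = (\<Sum>t\<in>X. marg V d S e (f t))"
proof -
  have "marg V d S e (\<lambda>j. \<Sum>t\<in>X. f t j) = (\<Sum>i\<in>cols_A V d. \<Sum>t\<in>X. if restrict i S = e then f t i else 0)"
    unfolding marg_def by (intro sum.cong refl) simp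
  also have "\<dots> = (\<Sum>t\<in>X. marg V d S e (f t))" unfolding marg_def by (rule sum.swap)
  finally show ?thesis .
qed


locale dsj =
  fixes V U :: "'a set" and d :: "'a \<Rightarrow> nat"
  assumes disj: "V \<inter> U = {}" and fV: "finite V" and fU: "finite U"
begin

lemma restrict_cols_self: "t \<in> cols_A X d \<Longrightarrow> restrict t X = t"
  unfolding cols_A_def by (auto simp: fun_eq_iff PiE_def extensional_def)

lemma marg_SU:
  assumes SV: "S \<subseteq> V" and e: "e \<in> PiE (S \<union> U) (\<lambda>v. {1..d v})"
  shows "marg (V \<union> U) d (S \<union> U) e z = marg V d S (restrict e S) (sl V d z (restrict e U))"
proof -
  have eU: "restrict e U \<in> cols_A U d" using e unfolding cols_A_def by auto
  have "marg (V \<union> U) d (S \<union> U) e z =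
     (\<Sum>t\<in>cols_A U d. if restrict t U = restrict e U then marg V d S (restrict e S) (sl V d z t) else 0)"
    by (rule marg_split[OF disj fV fU SV subset_refl e])
  also have "\<dots> = (\<Sum>t\<in>cols_A U d. if t = restrict e U then marg V d S (restrict e S) (sl V d z t) else 0)"
    by (intro sum.cong refl) (simp add: restrict_cols_self)
  also have "\<dots> = marg V d S (restrict e S) (sl V d z (restrict e U))"
    using eU finite_cols[OF fU] by simp
  finally show ?thesis .
qed

lemma marg_S:
  assumes SV: "S \<subseteq> V" and e: "e \<in> PiE S (\<lambda>v. {1..d v})"
  shows "marg (V \<union> U) d S e z = marg V d S e (\<lambda>j. \<Sum>t\<in>cols_A U d. sl V d z t j)"
proof -
  have e': "e \<in> PiE (S \<union> {}) (\<lambda>v. {1..d v})" using e by simp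
  have "marg (V \<union> U) d (S \<union> {}) e z =
     (\<Sum>t\<in>cols_A U d. if restrict t {} = restrict e {} then marg V d S (restrict e S) (sl V d z t) else 0)"
    by (rule marg_split[OF disj fV fU SV empty_subsetI e'])
  also have "\<dots> = (\<Sum>t\<in>cols_A U d. marg V d S e (sl V d z t))"
  proof -
    have "restrict e S = e" using e by (auto simp: fun_eq_iff PiE_def extensional_def)
    moreover have "\<And>t. restrict t {} = restrict e {}" by (simp add: restrict_def)
    ultimately show ?thesis by simp
  qed
  also have "\<dots> = marg V d S e (\<lambda>j. \<Sum>t\<in>cols_A U d. sl V d z t j)"
    by (rule marg_sum_fun[symmetric])
  finally show ?thesis by simp
qed

lemma mg_PiE:
  assumes SV: "S \<subseteq> V" and e: "e \<in> PiE S (\<lambda>v. {1..d v})" and t: "t \<in> cols_A U d"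
  shows "mg S e t \<in> PiE (S \<union> U) (\<lambda>v. {1..d v})" "restrict (mg S e t) S = e" "restrict (mg S e t) U = t"
proof -
  show "mg S e t \<in> PiE (S \<union> U) (\<lambda>v. {1..d v})"
    using e t unfolding mg_def cols_A_def by (auto simp: PiE_def extensional_def Pi_def)
  show "restrict (mg S e t) S = e"
    using e unfolding mg_def by (auto simp: fun_eq_iff PiE_def extensional_def)
  have "S \<inter> U = {}" using SV disj by blast
  thus "restrict (mg S e t) U = t"
    using t unfolding mg_def cols_A_def by (auto simp: fun_eq_iff PiE_def extensional_def)
qed

lemma sl_vanish: "j \<notin> cols_A V d \<Longrightarrow> sl V d z t j = 0"
  unfolding sl_def by simp

lemma kerv_cone:
  assumes CV: "C \<subseteq> Pow V"
  shows "kerv (V \<union> U) (cone_cx U C) d z \<longleftrightarrow>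
    (\<forall>i. i \<notin> cols_A (V \<union> U) d \<longrightarrow> z i = 0) \<and> (\<forall>t\<in>cols_A U d. kerv V C d (sl V d z t))"
proof
  assume K: "kerv (V \<union> U) (cone_cx U C) d z"
  have "\<forall>t\<in>cols_A U d. kerv V C d (sl V d z t)"
  proof (intro ballI)
    fix t assume t: "t \<in> cols_A U d"
    show "kerv V C d (sl V d z t)"
      unfolding kerv_def
    proof (intro conjI allI impI ballI)
      fix j assume "j \<notin> cols_A V d" thus "sl V d z t j = 0" by (rule sl_vanish)
    next
      fix S e assume S: "S \<in> C" and e: "e \<in> PiE S (\<lambda>v. {1..d v})"
      have SV: "S \<subseteq> V" using S CV by blast
      have face: "S \<union> U \<in> cone_cx U C" unfolding cone_cx_def using S by blast
      have "marg (V \<union> U) d (S \<union> U) (mg S e t) z = 0"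
        using K face mg_PiE(1)[OF SV e t] unfolding kerv_def by blast
      thus "marg V d S e (sl V d z t) = 0"
        unfolding marg_SU[OF SV mg_PiE(1)[OF SV e t]] mg_PiE(2,3)[OF SV e t] .
    qed
  qed
  thus "(\<forall>i. i \<notin> cols_A (V \<union> U) d \<longrightarrow> z i = 0) \<and> (\<forall>t\<in>cols_A U d. kerv V C d (sl V d z t))"
    using K unfolding kerv_def by simp
next
  assume H: "(\<forall>i. i \<notin> cols_A (V \<union> U) d \<longrightarrow> z i = 0) \<and> (\<forall>t\<in>cols_A U d. kerv V C d (sl V d z t))"
  show "kerv (V \<union> U) (cone_cx U C) d z"
    unfolding kerv_def
  proof (intro conjI allI impI ballI)
    fix i assume "i \<notin> cols_A (V \<union> U) d" thus "z i = 0" using H by simp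
  next
    fix F e assume F: "F \<in> cone_cx U C" and e: "e \<in> PiE F (\<lambda>v. {1..d v})"
    obtain S T where ST: "F = S \<union> T" "S \<in> C" "T \<subseteq> U" using F unfolding cone_cx_def by blast
    have SV: "S \<subseteq> V" using ST CV by blast
    have e': "e \<in> PiE (S \<union> T) (\<lambda>v. {1..d v})" using e ST by simp
    have eS: "restrict e S \<in> PiE S (\<lambda>v. {1..d v})" using e' by auto
    have "marg (V \<union> U) d (S \<union> T) e z =
     (\<Sum>t\<in>cols_A U d. if restrict t T = restrict e T then marg V d S (restrict e S) (sl V d z t) else 0)"
      by (rule marg_split[OF disj fV fU SV ST(3) e'])
    also have "\<dots> = 0"
    proof (intro sum.neutral ballI)
      fix t assume t: "t \<in> cols_A U d"
      have "marg V d S (restrict e S) (sl V d z t) = 0"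
        using H t ST(2) eS unfolding kerv_def by blast
      thus "(if restrict t T = restrict e T then marg V d S (restrict e S) (sl V d z t) else 0) = 0" by simp
    qed
    finally show "marg (V \<union> U) d F e z = 0" using ST by simp
  qed
qed

lemma kerv_ghost:
  assumes CV: "C \<subseteq> Pow V"
  shows "kerv (V \<union> U) C d z \<longleftrightarrow>
    (\<forall>i. i \<notin> cols_A (V \<union> U) d \<longrightarrow> z i = 0) \<and> kerv V C d (\<lambda>j. \<Sum>t\<in>cols_A U d. sl V d z t j)"
proof -
  have van: "\<forall>j. j \<notin> cols_A V d \<longrightarrow> (\<Sum>t\<in>cols_A U d. sl V d z t j) = 0"
    by (simp add: sl_vanish)
  have "(\<forall>S\<in>C. \<forall>e\<in>PiE S (\<lambda>v. {1..d v}). marg (V \<union> U) d S e z = 0) \<longleftrightarrow>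
        (\<forall>S\<in>C. \<forall>e\<in>PiE S (\<lambda>v. {1..d v}). marg V d S e (\<lambda>j. \<Sum>t\<in>cols_A U d. sl V d z t j) = 0)"
  proof (intro ball_cong refl)
    fix S e assume "S \<in> C" "e \<in> PiE S (\<lambda>v. {1..d v})"
    moreover have "S \<subseteq> V" using \<open>S \<in> C\<close> CV by blast
    ultimately show "(marg (V \<union> U) d S e z = 0) = (marg V d S e (\<lambda>j. \<Sum>t\<in>cols_A U d. sl V d z t j) = 0)"
      using marg_S by simp
  qed
  thus ?thesis using van unfolding kerv_def by blast
qed

lemma marg_full:
  "marg V d V e w = (if e \<in> cols_A V d then w e else 0)"
proof -
  have "marg V d V e w = (\<Sum>i\<in>cols_A V d. if i = e then w i else 0)"
    unfolding marg_def by (intro sum.cong refl) (simp add: restrict_cols_self)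
  also have "\<dots> = (if e \<in> cols_A V d then w e else 0)" using finite_cols[OF fV] by simp
  finally show ?thesis .
qed

lemma kerv_law:
  assumes CV: "C \<subseteq> Pow V" and Uu: "U = {u}"
  shows "kerv (V \<union> U) (lawrence_cx V u C) d z \<longleftrightarrow>
    (\<forall>i. i \<notin> cols_A (V \<union> U) d \<longrightarrow> z i = 0) \<and> (\<forall>j. (\<Sum>t\<in>cols_A U d. sl V d z t j) = 0) \<and>
    (\<forall>t\<in>cols_A U d. kerv V C d (sl V d z t))"
proof
  assume K: "kerv (V \<union> U) (lawrence_cx V u C) d z"
  have s0: "\<forall>j. (\<Sum>t\<in>cols_A U d. sl V d z t j) = 0"
  proof
    fix j show "(\<Sum>t\<in>cols_A U d. sl V d z t j) = 0"
    proof (cases "j \<in> cols_A V d")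
      case True
      have face: "V \<in> lawrence_cx V u C" unfolding lawrence_cx_def by simp
      have jP: "j \<in> PiE V (\<lambda>v. {1..d v})" using True unfolding cols_A_def .
      have "marg (V \<union> U) d V j z = 0" using K face jP unfolding kerv_def by blast
      thus ?thesis unfolding marg_S[OF subset_refl jP] marg_full using True by simp
    next
      case False thus ?thesis by (simp add: sl_vanish)
    qed
  qed
  have "\<forall>t\<in>cols_A U d. kerv V C d (sl V d z t)"
  proof (intro ballI)
    fix t assume t: "t \<in> cols_A U d"
    show "kerv V C d (sl V d z t)"
      unfolding kerv_def
    proof (intro conjI allI impI ballI)
      fix j assume "j \<notin> cols_A V d" thus "sl V d z t j = 0" by (rule sl_vanish)
    next
      fix S e assume S: "S \<in> C" and e: "e \<in> PiE S (\<lambda>v. {1..d v})"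
      have SV: "S \<subseteq> V" using S CV by blast
      have face: "S \<union> U \<in> lawrence_cx V u C" unfolding lawrence_cx_def using S Uu by blast
      have "marg (V \<union> U) d (S \<union> U) (mg S e t) z = 0"
        using K face mg_PiE(1)[OF SV e t] unfolding kerv_def by blast
      thus "marg V d S e (sl V d z t) = 0"
        unfolding marg_SU[OF SV mg_PiE(1)[OF SV e t]] mg_PiE(2,3)[OF SV e t] .
    qed
  qed
  thus "(\<forall>i. i \<notin> cols_A (V \<union> U) d \<longrightarrow> z i = 0) \<and> (\<forall>j. (\<Sum>t\<in>cols_A U d. sl V d z t j) = 0) \<and>
    (\<forall>t\<in>cols_A U d. kerv V C d (sl V d z t))"
    using K s0 unfolding kerv_def by simp
next
  assume H: "(\<forall>i. i \<notin> cols_A (V \<union> U) d \<longrightarrow> z i = 0) \<and> (\<forall>j. (\<Sum>t\<in>cols_A U d. sl V d z t j) = 0) \<and>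
    (\<forall>t\<in>cols_A U d. kerv V C d (sl V d z t))"
  show "kerv (V \<union> U) (lawrence_cx V u C) d z"
    unfolding kerv_def
  proof (intro conjI allI impI ballI)
    fix i assume "i \<notin> cols_A (V \<union> U) d" thus "z i = 0" using H by simp
  next
    fix F e assume F: "F \<in> lawrence_cx V u C" and e: "e \<in> PiE F (\<lambda>v. {1..d v})"
    show "marg (V \<union> U) d F e z = 0"
    proof (cases "F \<subseteq> V")
      case True
      have "marg (V \<union> U) d F e z = marg V d F e (\<lambda>j. 0)"
        using marg_S[OF True e, of z] H by simp
      also have "\<dots> = 0" unfolding marg_def by simp
      finally show ?thesis .
    next
      case False
      then obtain S where S: "F = insert u S" "S \<in> C" using F unfolding lawrence_cx_def by blast
      have SV: "S \<subseteq> V" using S CV by blast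
      have FSU: "F = S \<union> U" using S Uu by simp
      have e': "e \<in> PiE (S \<union> U) (\<lambda>v. {1..d v})" using e FSU by simp
      have eS: "restrict e S \<in> PiE S (\<lambda>v. {1..d v})" using e' by auto
      have eU: "restrict e U \<in> cols_A U d" using e' unfolding cols_A_def by auto
      have "marg V d S (restrict e S) (sl V d z (restrict e U)) = 0"
        using H eU S(2) eS unfolding kerv_def by blast
      thus ?thesis unfolding FSU marg_SU[OF SV e'] .
    qed
  qed
qed

end


definition rigid :: "'a set \<Rightarrow> 'a set set \<Rightarrow> ('a \<Rightarrow> nat) \<Rightarrow> (('a \<Rightarrow> nat) \<Rightarrow> int) \<Rightarrow> bool" where
  "rigid V C d x \<longleftrightarrow> (\<forall>w. kerv V C d w \<and> (\<forall>i. w i \<noteq> 0 \<longrightarrow> x i \<noteq> 0) \<longrightarrow> (\<exists>c. \<forall>i. w i = c * x i))"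

definition Inv :: "'a set \<Rightarrow> 'a set set \<Rightarrow> ('a \<Rightarrow> nat) \<Rightarrow> bool" where
  "Inv V C d \<longleftrightarrow> (\<exists>x y. kerv V C d x \<and> kerv V C d y \<and> rigid V C d x \<and> rigid V C d y \<and>
     (\<forall>i. x i \<in> {-1,0,1}) \<and> (\<forall>i. y i \<in> {-1,0,1}) \<and>
     (\<exists>j. x j = y j \<and> x j \<noteq> 0) \<and> (\<exists>k. x k = - y k \<and> x k \<noteq> 0))"

lemma marg_lin: "marg V d S e (\<lambda>i. a * x i + b * y i) = a * marg V d S e x + b * marg V d S e y"
proof -
  have "marg V d S e (\<lambda>i. a * x i + b * y i) =
    (\<Sum>i\<in>cols_A V d. a * (if restrict i S = e then x i else 0) + b * (if restrict i S = e then y i else 0))"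
    unfolding marg_def by (intro sum.cong refl) simp
  also have "\<dots> = a * marg V d S e x + b * marg V d S e y"
    unfolding marg_def by (simp add: sum.distrib sum_distrib_left)
  finally show ?thesis .
qed

lemma kerv_lin: "kerv V C d x \<Longrightarrow> kerv V C d y \<Longrightarrow> kerv V C d (\<lambda>i. a * x i + b * y i)"
  unfolding kerv_def by (simp add: marg_lin)

lemma kerv_zero: "kerv V C d (\<lambda>i. 0)"
  unfolding kerv_def marg_def by simp

lemma kerv_scale: "kerv V C d x \<Longrightarrow> kerv V C d (\<lambda>i. a * x i)"
  using kerv_lin[of V C d x x a 0] by simp

context dsj begin

lemma sl_at: assumes i: "i \<in> cols_A (V \<union> U) d" shows "sl V d f (restrict i U) (restrict i V) = f i"
  unfolding sl_def using restrict_cols_V[OF i] mg_restrict[OF i] by simp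

lemma emb_vanish: "i \<notin> cols_A (V \<union> U) d \<Longrightarrow> emb V U d t y i = 0"
  unfolding emb_def by simp

lemma sl_emb:
  assumes t: "t \<in> cols_A U d" and t': "t' \<in> cols_A U d" and y0: "\<forall>j. j \<notin> cols_A V d \<longrightarrow> y j = 0"
  shows "sl V d (emb V U d t y) t' = (if t' = t then y else (\<lambda>j. 0))"
proof (rule ext)
  fix j show "sl V d (emb V U d t y) t' j = (if t' = t then y else (\<lambda>j. 0)) j"
  proof (cases "j \<in> cols_A V d")
    case True
    have "mg V j t' \<in> cols_A (V \<union> U) d" using mg_cols[OF True t'] .
    moreover have "restrict (mg V j t') U = t'" using restrict_mg_U[OF disj t'] .
    moreover have "restrict (mg V j t') V = j" using restrict_mg_V[OF True] .
    ultimately show ?thesis using True unfolding sl_def emb_def by (cases "t' = t") simp_all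
  next
    case False thus ?thesis using y0 unfolding sl_def by simp
  qed
qed

lemma sl_lin: "sl V d (\<lambda>i. a * f i + b * g i) t = (\<lambda>j. a * sl V d f t j + b * sl V d g t j)"
  unfolding sl_def by auto

lemma sl_eq_fun:
  assumes "\<forall>i. i \<notin> cols_A (V \<union> U) d \<longrightarrow> f i = 0" "\<forall>i. i \<notin> cols_A (V \<union> U) d \<longrightarrow> g i = 0"
    "\<forall>t\<in>cols_A U d. \<forall>j. sl V d f t j = sl V d g t j"
  shows "f i = g i"
proof (cases "i \<in> cols_A (V \<union> U) d")
  case True
  have "f i = sl V d f (restrict i U) (restrict i V)" using sl_at[OF True] by simp
  also have "\<dots> = sl V d g (restrict i U) (restrict i V)" using assms(3) restrict_cols_U[OF True] by blast
  also have "\<dots> = g i" using sl_at[OF True] by simp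
  finally show ?thesis .
next
  case False thus ?thesis using assms by simp
qed

lemma sl_nz: "sl V d f t j \<noteq> 0 \<Longrightarrow> j \<in> cols_A V d \<and> f (mg V j t) \<noteq> 0"
  unfolding sl_def by (simp split: if_splits)

lemma nz_sl:
  assumes "\<forall>i. i \<notin> cols_A (V \<union> U) d \<longrightarrow> f i = 0" "f i \<noteq> 0"
  shows "\<exists>t\<in>cols_A U d. \<exists>j. sl V d f t j \<noteq> 0"
proof -
  have i: "i \<in> cols_A (V \<union> U) d" using assms by blast
  show ?thesis using sl_at[OF i] restrict_cols_U[OF i] assms(2) by metis
qed

lemma sl_nz_ex: "sl V d f t j \<noteq> 0 \<Longrightarrow> \<exists>i. f i \<noteq> 0"
  using sl_nz by blast

lemma supp_sl:
  assumes "\<forall>i. f i \<noteq> 0 \<longrightarrow> g i \<noteq> 0" "sl V d f t j \<noteq> 0"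
  shows "sl V d g t j \<noteq> 0"
  using sl_nz[OF assms(2)] assms(1) unfolding sl_def by simp

lemma sl_supp:
  assumes "\<forall>i. i \<notin> cols_A (V \<union> U) d \<longrightarrow> f i = 0"
    "\<forall>t\<in>cols_A U d. \<forall>j. sl V d f t j \<noteq> 0 \<longrightarrow> sl V d g t j \<noteq> 0"
  shows "\<forall>i. f i \<noteq> 0 \<longrightarrow> g i \<noteq> 0"
proof (intro allI impI)
  fix i assume fi: "f i \<noteq> 0"
  hence i: "i \<in> cols_A (V \<union> U) d" using assms(1) by blast
  have "sl V d f (restrict i U) (restrict i V) \<noteq> 0" using sl_at[OF i] fi by simp
  hence "sl V d g (restrict i U) (restrict i V) \<noteq> 0" using assms(2) restrict_cols_U[OF i] by blast
  thus "g i \<noteq> 0" using sl_at[OF i] by simp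
qed

lemma sl_pm1: "\<forall>i. f i \<in> {-1,0,1} \<Longrightarrow> sl V d f t j \<in> {-1,0,1}"
  unfolding sl_def by simp

lemma pm1_sl:
  assumes "\<forall>i. i \<notin> cols_A (V \<union> U) d \<longrightarrow> f i = 0" "\<forall>t\<in>cols_A U d. \<forall>j. sl V d f t j \<in> {-1,0,1}"
  shows "f i \<in> {-1,0,1}"
proof (cases "i \<in> cols_A (V \<union> U) d")
  case True thus ?thesis using sl_at[OF True] assms(2) restrict_cols_U[OF True] by metis
next
  case False thus ?thesis using assms(1) by simp
qed

lemma sl_cols_nz:
  assumes "j \<in> cols_A V d" "t \<in> cols_A U d" "sl V d f t j \<noteq> 0"
  shows "f (mg V j t) \<noteq> 0"
  using sl_nz[OF assms(3)] by simp

end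


lemma kerv_van: "kerv V C d z \<Longrightarrow> \<forall>j. j \<notin> cols_A V d \<longrightarrow> z j = 0"
  unfolding kerv_def by simp

context dsj begin

lemma emb_pm1: "\<forall>j. y j \<in> {-1,0,1} \<Longrightarrow> emb V U d t y i \<in> {-1,0,1}"
  unfolding emb_def by simp

lemma emb_van: "\<forall>i. i \<notin> cols_A (V \<union> U) d \<longrightarrow> emb V U d t y i = 0"
  using emb_vanish by blast

lemma emb_nz:
  assumes "j \<in> cols_A V d" "t \<in> cols_A U d" "y j \<noteq> 0"
  shows "\<exists>i. emb V U d t y i \<noteq> 0"
proof -
  have "mg V j t \<in> cols_A (V \<union> U) d" using mg_cols assms by blast
  hence "emb V U d t y (mg V j t) = y j"
    unfolding emb_def using restrict_mg_U[OF disj assms(2)] restrict_mg_V[OF assms(1)] by simp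
  thus ?thesis using assms(3) by metis
qed

lemma PP_cone:
  assumes CV: "C \<subseteq> Pow V" and ne: "cols_A U d \<noteq> {}"
  shows "PP (V \<union> U) (cone_cx U C) d \<longleftrightarrow> PP V C d"
proof
  assume P': "PP (V \<union> U) (cone_cx U C) d"
  show "PP V C d" unfolding PP_def
  proof (intro allI impI)
    fix z assume "kerv V C d z \<and> (\<exists>i. z i \<noteq> 0)"
    then obtain j0 where kz: "kerv V C d z" and zj0: "z j0 \<noteq> 0" by blast
    have zv: "\<forall>j. j \<notin> cols_A V d \<longrightarrow> z j = 0" using kerv_van[OF kz] .
    have j0: "j0 \<in> cols_A V d" using zv zj0 by blast
    obtain t0 where t0: "t0 \<in> cols_A U d" using ne by blast
    define z' where "z' = emb V U d t0 z"
    have slz': "\<And>t. t \<in> cols_A U d \<Longrightarrow> sl V d z' t = (if t = t0 then z else (\<lambda>j. 0))"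
      unfolding z'_def using sl_emb[OF t0 _ zv] by simp
    have kz': "kerv (V \<union> U) (cone_cx U C) d z'"
      unfolding kerv_cone[OF CV] using emb_van slz' kz unfolding z'_def by (simp add: kerv_zero)
    have nz': "\<exists>i. z' i \<noteq> 0" unfolding z'_def using emb_nz[of j0 t0 z] j0 t0 zj0 by blast
    obtain y' where ky': "kerv (V \<union> U) (cone_cx U C) d y'" and ny': "\<exists>i. y' i \<noteq> 0"
      and py': "\<forall>i. y' i \<in> {-1,0,1}" and sy': "\<forall>i. y' i \<noteq> 0 \<longrightarrow> z' i \<noteq> 0"
      using P' kz' nz' unfolding PP_def by blast
    have ky'': "(\<forall>i. i \<notin> cols_A (V \<union> U) d \<longrightarrow> y' i = 0) \<and> (\<forall>t\<in>cols_A U d. kerv V C d (sl V d y' t))"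
      using ky' unfolding kerv_cone[OF CV] .
    define y where "y = sl V d y' t0"
    have "kerv V C d y" unfolding y_def using ky'' t0 by blast
    moreover have "\<exists>j. y j \<noteq> 0"
    proof -
      obtain i where "y' i \<noteq> 0" using ny' by blast
      then obtain t j where t: "t \<in> cols_A U d" and sj: "sl V d y' t j \<noteq> 0" using nz_sl ky'' by blast
      have "sl V d z' t j \<noteq> 0" using supp_sl[OF sy' sj] .
      hence "t = t0" using slz'[OF t] by (simp split: if_splits)
      thus ?thesis unfolding y_def using sj by blast
    qed
    moreover have "\<forall>j. y j \<in> {-1,0,1}" unfolding y_def using sl_pm1[OF py'] by blast
    moreover have "\<forall>j. y j \<noteq> 0 \<longrightarrow> z j \<noteq> 0"
    proof (intro allI impI)
      fix j assume "y j \<noteq> 0"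
      hence "sl V d z' t0 j \<noteq> 0" unfolding y_def using supp_sl[OF sy'] by blast
      thus "z j \<noteq> 0" using slz'[OF t0] by simp
    qed
    ultimately show "\<exists>y. kerv V C d y \<and> (\<exists>i. y i \<noteq> 0) \<and> (\<forall>i. y i \<in> {-1,0,1}) \<and> (\<forall>i. y i \<noteq> 0 \<longrightarrow> z i \<noteq> 0)"
      by blast
  qed
next
  assume P: "PP V C d"
  show "PP (V \<union> U) (cone_cx U C) d" unfolding PP_def
  proof (intro allI impI)
    fix z assume "kerv (V \<union> U) (cone_cx U C) d z \<and> (\<exists>i. z i \<noteq> 0)"
    then obtain i0 where kz: "kerv (V \<union> U) (cone_cx U C) d z" and zi0: "z i0 \<noteq> 0" by blast
    have kz': "(\<forall>i. i \<notin> cols_A (V \<union> U) d \<longrightarrow> z i = 0) \<and> (\<forall>t\<in>cols_A U d. kerv V C d (sl V d z t))"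
      using kz unfolding kerv_cone[OF CV] .
    obtain t0 j0 where t0: "t0 \<in> cols_A U d" and s0: "sl V d z t0 j0 \<noteq> 0" using nz_sl kz' zi0 by blast
    have ks: "kerv V C d (sl V d z t0)" using kz' t0 by blast
    obtain y where ky: "kerv V C d y" and ny: "\<exists>i. y i \<noteq> 0"
      and py: "\<forall>i. y i \<in> {-1,0,1}" and sy: "\<forall>i. y i \<noteq> 0 \<longrightarrow> sl V d z t0 i \<noteq> 0"
      using P ks s0 unfolding PP_def by blast
    have yv: "\<forall>j. j \<notin> cols_A V d \<longrightarrow> y j = 0" using kerv_van[OF ky] .
    define y' where "y' = emb V U d t0 y"
    have sly': "\<And>t. t \<in> cols_A U d \<Longrightarrow> sl V d y' t = (if t = t0 then y else (\<lambda>j. 0))"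
      unfolding y'_def using sl_emb[OF t0 _ yv] by simp
    have "kerv (V \<union> U) (cone_cx U C) d y'"
      unfolding kerv_cone[OF CV] using emb_van sly' ky unfolding y'_def by (simp add: kerv_zero)
    moreover have "\<exists>i. y' i \<noteq> 0"
    proof -
      obtain j where "y j \<noteq> 0" using ny by blast
      moreover hence "j \<in> cols_A V d" using yv by blast
      ultimately show ?thesis unfolding y'_def using emb_nz t0 by blast
    qed
    moreover have "\<forall>i. y' i \<in> {-1,0,1}" unfolding y'_def using emb_pm1[OF py] by blast
    moreover have "\<forall>i. y' i \<noteq> 0 \<longrightarrow> z i \<noteq> 0"
    proof (rule sl_supp)
      show "\<forall>i. i \<notin> cols_A (V \<union> U) d \<longrightarrow> y' i = 0" unfolding y'_def using emb_van by blast
      show "\<forall>t\<in>cols_A U d. \<forall>j. sl V d y' t j \<noteq> 0 \<longrightarrow> sl V d z t j \<noteq> 0"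
        using sly' sy by (auto split: if_splits)
    qed
    ultimately show "\<exists>y. kerv (V \<union> U) (cone_cx U C) d y \<and> (\<exists>i. y i \<noteq> 0) \<and> (\<forall>i. y i \<in> {-1,0,1}) \<and> (\<forall>i. y i \<noteq> 0 \<longrightarrow> z i \<noteq> 0)"
      by blast
  qed
qed

end

lemma PPE:
  assumes "PP V C d" "kerv V C d z" "z i \<noteq> 0"
  shows "\<exists>y. kerv V C d y \<and> (\<exists>i. y i \<noteq> 0) \<and> (\<forall>i. y i \<in> {-1,0,1}) \<and> (\<forall>i. y i \<noteq> 0 \<longrightarrow> z i \<noteq> 0)"
  using assms unfolding PP_def by blast

lemma PPI:
  assumes "\<And>z i. kerv V C d z \<Longrightarrow> z i \<noteq> 0 \<Longrightarrow>
     \<exists>y. kerv V C d y \<and> (\<exists>i. y i \<noteq> 0) \<and> (\<forall>i. y i \<in> {-1,0,1}) \<and> (\<forall>i. y i \<noteq> 0 \<longrightarrow> z i \<noteq> 0)"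
  shows "PP V C d"
  unfolding PP_def using assms by blast

lemma sum_supp2:
  assumes "finite A" "t1 \<in> A" "t2 \<in> A" "t1 \<noteq> t2" "\<forall>t\<in>A. t \<noteq> t1 \<and> t \<noteq> t2 \<longrightarrow> f t = 0"
  shows "sum f A = f t1 + f t2"
proof -
  have "sum f A = sum f {t1, t2}"
    using assms by (intro sum.mono_neutral_right) auto
  thus ?thesis using assms(4) by simp
qed

lemma sum_supp3:
  assumes "finite A" "t1 \<in> A" "t2 \<in> A" "t3 \<in> A" "t1 \<noteq> t2" "t1 \<noteq> t3" "t2 \<noteq> t3"
    "\<forall>t\<in>A. t \<noteq> t1 \<and> t \<noteq> t2 \<and> t \<noteq> t3 \<longrightarrow> f t = 0"
  shows "sum f A = f t1 + f t2 + f t3"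
proof -
  have "sum f A = sum f {t1, t2, t3}"
    using assms by (intro sum.mono_neutral_right) auto
  thus ?thesis using assms(5-7) by (simp add: add.assoc)
qed

context dsj begin

lemma sum_delta_cols: "t0 \<in> cols_A U d \<Longrightarrow> (\<Sum>t\<in>cols_A U d. (if t = t0 then f t else 0)) = f t0"
  using finite_cols[OF fU] by simp

lemma PP_ghost:
  assumes CV: "C \<subseteq> Pow V" and ne: "cols_A U d \<noteq> {}"
  shows "PP (V \<union> U) C d \<longleftrightarrow> PP V C d"
proof
  assume P': "PP (V \<union> U) C d"
  show "PP V C d"
  proof (rule PPI)
    fix z j0 assume kz: "kerv V C d z" and zj0: "z j0 \<noteq> 0"
    have zv: "\<forall>j. j \<notin> cols_A V d \<longrightarrow> z j = 0" using kerv_van[OF kz] .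
    have j0: "j0 \<in> cols_A V d" using zv zj0 by blast
    obtain t0 where t0: "t0 \<in> cols_A U d" using ne by blast
    define z' where "z' = emb V U d t0 z"
    have slz': "\<And>t. t \<in> cols_A U d \<Longrightarrow> sl V d z' t = (if t = t0 then z else (\<lambda>j. 0))"
      unfolding z'_def using sl_emb[OF t0 _ zv] by simp
    have sumz': "(\<lambda>j. \<Sum>t\<in>cols_A U d. sl V d z' t j) = z"
    proof
      fix j
      have "(\<Sum>t\<in>cols_A U d. sl V d z' t j) = (\<Sum>t\<in>cols_A U d. if t = t0 then z j else 0)"
        using slz' by (intro sum.cong refl) simp
      thus "(\<Sum>t\<in>cols_A U d. sl V d z' t j) = z j" using sum_delta_cols[OF t0, of "\<lambda>_. z j"] by simp
    qed
    have kz': "kerv (V \<union> U) C d z'"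
      unfolding kerv_ghost[OF CV] sumz' using emb_van kz unfolding z'_def by simp
    have nz': "\<exists>i. z' i \<noteq> 0" unfolding z'_def using emb_nz[of j0 t0 z] j0 t0 zj0 by blast
    then obtain i1 where i1: "z' i1 \<noteq> 0" by blast
    obtain y' where ky': "kerv (V \<union> U) C d y'" and ny': "\<exists>i. y' i \<noteq> 0"
      and py': "\<forall>i. y' i \<in> {-1,0,1}" and sy': "\<forall>i. y' i \<noteq> 0 \<longrightarrow> z' i \<noteq> 0"
      using PPE[OF P' kz' i1] by blast
    have ky'': "(\<forall>i. i \<notin> cols_A (V \<union> U) d \<longrightarrow> y' i = 0) \<and> kerv V C d (\<lambda>j. \<Sum>t\<in>cols_A U d. sl V d y' t j)"
      using ky' unfolding kerv_ghost[OF CV] .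
    have only: "\<And>t j. t \<in> cols_A U d \<Longrightarrow> sl V d y' t j \<noteq> 0 \<Longrightarrow> t = t0"
    proof -
      fix t j assume t: "t \<in> cols_A U d" and sj: "sl V d y' t j \<noteq> 0"
      have "sl V d z' t j \<noteq> 0" using supp_sl[OF sy' sj] .
      thus "t = t0" using slz'[OF t] by (simp split: if_splits)
    qed
    define y where "y = sl V d y' t0"
    have yeq: "(\<lambda>j. \<Sum>t\<in>cols_A U d. sl V d y' t j) = y"
    proof
      fix j
      have "(\<Sum>t\<in>cols_A U d. sl V d y' t j) = (\<Sum>t\<in>cols_A U d. if t = t0 then sl V d y' t0 j else 0)"
      proof (intro sum.cong refl)
        fix t assume t: "t \<in> cols_A U d"
        show "sl V d y' t j = (if t = t0 then sl V d y' t0 j else 0)"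
        proof (cases "t = t0")
          case False thus ?thesis using only[OF t] by auto
        qed simp
      qed
      thus "(\<Sum>t\<in>cols_A U d. sl V d y' t j) = y j" unfolding y_def using sum_delta_cols[OF t0] by simp
    qed
    have "kerv V C d y" using ky'' yeq by simp
    moreover have "\<exists>j. y j \<noteq> 0"
    proof -
      obtain i where "y' i \<noteq> 0" using ny' by blast
      then obtain t j where t: "t \<in> cols_A U d" and sj: "sl V d y' t j \<noteq> 0" using nz_sl ky'' by blast
      thus ?thesis unfolding y_def using only[OF t sj] by blast
    qed
    moreover have "\<forall>j. y j \<in> {-1,0,1}" unfolding y_def using sl_pm1[OF py'] by blast
    moreover have "\<forall>j. y j \<noteq> 0 \<longrightarrow> z j \<noteq> 0"
    proof (intro allI impI)
      fix j assume "y j \<noteq> 0"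
      hence "sl V d z' t0 j \<noteq> 0" unfolding y_def using supp_sl[OF sy'] by blast
      thus "z j \<noteq> 0" using slz'[OF t0] by simp
    qed
    ultimately show "\<exists>y. kerv V C d y \<and> (\<exists>i. y i \<noteq> 0) \<and> (\<forall>i. y i \<in> {-1,0,1}) \<and> (\<forall>i. y i \<noteq> 0 \<longrightarrow> z i \<noteq> 0)"
      by blast
  qed
next
  assume P: "PP V C d"
  show "PP (V \<union> U) C d"
  proof (rule PPI)
    fix z i0 assume kz: "kerv (V \<union> U) C d z" and zi0: "z i0 \<noteq> 0"
    have kz': "(\<forall>i. i \<notin> cols_A (V \<union> U) d \<longrightarrow> z i = 0) \<and> kerv V C d (\<lambda>j. \<Sum>t\<in>cols_A U d. sl V d z t j)"
      using kz unfolding kerv_ghost[OF CV] .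
    have zv: "\<forall>i. i \<notin> cols_A (V \<union> U) d \<longrightarrow> z i = 0" using kz' by simp
    show "\<exists>y. kerv (V \<union> U) C d y \<and> (\<exists>i. y i \<noteq> 0) \<and> (\<forall>i. y i \<in> {-1,0,1}) \<and> (\<forall>i. y i \<noteq> 0 \<longrightarrow> z i \<noteq> 0)"
    proof (cases "\<exists>j t1 t2. t1 \<in> cols_A U d \<and> t2 \<in> cols_A U d \<and> t1 \<noteq> t2 \<and> sl V d z t1 j \<noteq> 0 \<and> sl V d z t2 j \<noteq> 0")
      case True
      then obtain j t1 t2 where t1: "t1 \<in> cols_A U d" and t2: "t2 \<in> cols_A U d" and t12: "t1 \<noteq> t2"
        and s1: "sl V d z t1 j \<noteq> 0" and s2: "sl V d z t2 j \<noteq> 0" by blast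
      have j: "j \<in> cols_A V d" using sl_nz[OF s1] by simp
      define \<delta> where "\<delta> = (\<lambda>j'. if j' = j then (1::int) else 0)"
      have dv: "\<forall>j'. j' \<notin> cols_A V d \<longrightarrow> \<delta> j' = 0" unfolding \<delta>_def using j by auto
      define y' where "y' = (\<lambda>i. 1 * emb V U d t1 \<delta> i + (-1) * emb V U d t2 \<delta> i)"
      have sly': "\<And>t j'. t \<in> cols_A U d \<Longrightarrow> sl V d y' t j' = (if t = t1 then \<delta> j' else 0) - (if t = t2 then \<delta> j' else 0)"
        unfolding y'_def sl_lin using sl_emb[OF t1 _ dv] sl_emb[OF t2 _ dv] by simp
      have yv: "\<forall>i. i \<notin> cols_A (V \<union> U) d \<longrightarrow> y' i = 0" unfolding y'_def using emb_van by simp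
      have "(\<lambda>j'. \<Sum>t\<in>cols_A U d. sl V d y' t j') = (\<lambda>j'. 0)"
      proof
        fix j'
        have "(\<Sum>t\<in>cols_A U d. sl V d y' t j') = (\<Sum>t\<in>cols_A U d. (if t = t1 then \<delta> j' else 0) - (if t = t2 then \<delta> j' else 0))"
          using sly' by (intro sum.cong refl) simp
        also have "\<dots> = 0" using sum_delta_cols[OF t1, of "\<lambda>_. \<delta> j'"] sum_delta_cols[OF t2, of "\<lambda>_. \<delta> j'"] by (simp add: sum_subtractf)
        finally show "(\<Sum>t\<in>cols_A U d. sl V d y' t j') = 0" .
      qed
      hence "kerv (V \<union> U) C d y'" unfolding kerv_ghost[OF CV] using yv kerv_zero by simp
      moreover have "\<exists>i. y' i \<noteq> 0"
      proof -
        have "sl V d y' t1 j \<noteq> 0" using sly'[OF t1, of j] t12 unfolding \<delta>_def by simp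
        thus ?thesis using sl_nz_ex by blast
      qed
      moreover have "\<forall>i. y' i \<in> {-1,0,1}"
        using pm1_sl[OF yv] sly' t12 unfolding \<delta>_def by auto
      moreover have "\<forall>i. y' i \<noteq> 0 \<longrightarrow> z i \<noteq> 0"
      proof (rule sl_supp[OF yv], intro ballI allI impI)
        fix t j' assume t: "t \<in> cols_A U d" and ne: "sl V d y' t j' \<noteq> 0"
        hence "j' = j \<and> (t = t1 \<or> t = t2)" using sly'[OF t] unfolding \<delta>_def by (auto split: if_splits)
        thus "sl V d z t j' \<noteq> 0" using s1 s2 by blast
      qed
      ultimately show ?thesis by blast
    next
      case False
      hence uniq: "\<And>j t1 t2. t1 \<in> cols_A U d \<Longrightarrow> t2 \<in> cols_A U d \<Longrightarrow> sl V d z t1 j \<noteq> 0 \<Longrightarrow> sl V d z t2 j \<noteq> 0 \<Longrightarrow> t1 = t2"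
        by blast
      define s where "s = (\<lambda>j. \<Sum>t\<in>cols_A U d. sl V d z t j)"
      have sdelta: "\<And>j t1. t1 \<in> cols_A U d \<Longrightarrow> sl V d z t1 j \<noteq> 0 \<Longrightarrow> s j = sl V d z t1 j"
      proof -
        fix j t1 assume t1: "t1 \<in> cols_A U d" and nz: "sl V d z t1 j \<noteq> 0"
        have "s j = (\<Sum>t\<in>cols_A U d. if t = t1 then sl V d z t1 j else 0)"
          unfolding s_def
        proof (intro sum.cong refl)
          fix t assume t: "t \<in> cols_A U d"
          show "sl V d z t j = (if t = t1 then sl V d z t1 j else 0)"
          proof (cases "t = t1")
            case False thus ?thesis using uniq[OF t t1 _ nz] by auto
          qed simp
        qed
        thus "s j = sl V d z t1 j" using sum_delta_cols[OF t1] by simp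
      qed
      obtain t0 j0 where t0: "t0 \<in> cols_A U d" and s0: "sl V d z t0 j0 \<noteq> 0" using nz_sl zv zi0 by blast
      have sj0: "s j0 \<noteq> 0" using sdelta[OF t0 s0] s0 by simp
      have ks: "kerv V C d s" using kz' unfolding s_def by simp
      obtain y where ky: "kerv V C d y" and ny: "\<exists>i. y i \<noteq> 0"
        and py: "\<forall>i. y i \<in> {-1,0,1}" and sy: "\<forall>i. y i \<noteq> 0 \<longrightarrow> s i \<noteq> 0"
        using PPE[OF P ks sj0] by blast
      define y' where "y' = (\<lambda>i. if i \<in> cols_A (V \<union> U) d \<and> z i \<noteq> 0 then y (restrict i V) else 0)"
      have yv: "\<forall>i. i \<notin> cols_A (V \<union> U) d \<longrightarrow> y' i = 0" unfolding y'_def by simp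
      have sly': "\<And>t j. t \<in> cols_A U d \<Longrightarrow> sl V d y' t j = (if sl V d z t j \<noteq> 0 then y j else 0)"
      proof -
        fix t j assume t: "t \<in> cols_A U d"
        show "sl V d y' t j = (if sl V d z t j \<noteq> 0 then y j else 0)"
        proof (cases "j \<in> cols_A V d")
          case True
          have "mg V j t \<in> cols_A (V \<union> U) d" using mg_cols[OF True t] .
          thus ?thesis unfolding sl_def y'_def using True restrict_mg_V[OF True] by simp
        next
          case False thus ?thesis unfolding sl_def by simp
        qed
      qed
      have sumy': "(\<lambda>j. \<Sum>t\<in>cols_A U d. sl V d y' t j) = y"
      proof
        fix j
        show "(\<Sum>t\<in>cols_A U d. sl V d y' t j) = y j"
        proof (cases "y j = 0")
          case True
          have "(\<Sum>t\<in>cols_A U d. sl V d y' t j) = 0"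
          proof (intro sum.neutral ballI)
            fix t assume "t \<in> cols_A U d"
            thus "sl V d y' t j = 0" using sly' True by simp
          qed
          thus ?thesis using True by simp
        next
          case False
          hence "s j \<noteq> 0" using sy by blast
          have "\<exists>t\<in>cols_A U d. sl V d z t j \<noteq> 0"
          proof (rule ccontr)
            assume "\<not> (\<exists>t\<in>cols_A U d. sl V d z t j \<noteq> 0)"
            hence "s j = 0" unfolding s_def by (intro sum.neutral) blast
            thus False using \<open>s j \<noteq> 0\<close> by simp
          qed
          then obtain t1 where t1: "t1 \<in> cols_A U d" and n1: "sl V d z t1 j \<noteq> 0" by blast
          have "(\<Sum>t\<in>cols_A U d. sl V d y' t j) = (\<Sum>t\<in>cols_A U d. if t = t1 then y j else 0)"
          proof (intro sum.cong refl)
            fix t assume t: "t \<in> cols_A U d"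
            show "sl V d y' t j = (if t = t1 then y j else 0)"
            proof (cases "t = t1")
              case True thus ?thesis using sly'[OF t] n1 by simp
            next
              case False
              hence "sl V d z t j = 0" using uniq[OF t t1 _ n1] by auto
              thus ?thesis using sly'[OF t] False by simp
            qed
          qed
          thus ?thesis using sum_delta_cols[OF t1] by simp
        qed
      qed
      have "kerv (V \<union> U) C d y'" unfolding kerv_ghost[OF CV] sumy' using yv ky by simp
      moreover have "\<exists>i. y' i \<noteq> 0"
      proof -
        obtain j where yj: "y j \<noteq> 0" using ny by blast
        hence "(\<Sum>t\<in>cols_A U d. sl V d y' t j) \<noteq> 0" using fun_cong[OF sumy', of j] by simp
        hence "\<exists>t\<in>cols_A U d. sl V d y' t j \<noteq> 0"
        proof (rule contrapos_np)
          assume "\<not> (\<exists>t\<in>cols_A U d. sl V d y' t j \<noteq> 0)"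
          thus "(\<Sum>t\<in>cols_A U d. sl V d y' t j) = 0" by (intro sum.neutral) blast
        qed
        then obtain t where "sl V d y' t j \<noteq> 0" by blast
        thus ?thesis using sl_nz_ex by blast
      qed
      moreover have "\<forall>i. y' i \<in> {-1,0,1}" unfolding y'_def using py by simp
      moreover have "\<forall>i. y' i \<noteq> 0 \<longrightarrow> z i \<noteq> 0" unfolding y'_def by simp
      ultimately show ?thesis by blast
    qed
  qed
qed

end

context dsj begin

lemma sl_scale: "sl V d (\<lambda>i. c * f i) t = (\<lambda>j. c * sl V d f t j)"
  unfolding sl_def by auto

lemma mg_sl: "j \<in> cols_A V d \<Longrightarrow> f (mg V j t) = sl V d f t j"
  unfolding sl_def by simp

lemma sum_delta2:
  fixes a b :: int
  assumes "t1 \<in> cols_A U d" "t2 \<in> cols_A U d"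
  shows "(\<Sum>t\<in>cols_A U d. (if t = t1 then a else 0) - (if t = t2 then b else 0)) = a - b"
  unfolding sum_subtractf using sum_delta_cols[OF assms(1), of "\<lambda>_. a"] sum_delta_cols[OF assms(2), of "\<lambda>_. b"]
  by simp

lemma PP_law_down:
  assumes CV: "C \<subseteq> Pow V" and Uu: "U = {u}" and t1: "t1 \<in> cols_A U d" and t2: "t2 \<in> cols_A U d"
    and t12: "t1 \<noteq> t2" and P': "PP (V \<union> U) (lawrence_cx V u C) d"
  shows "PP V C d"
proof (rule PPI)
  fix z j0 assume kz: "kerv V C d z" and zj0: "z j0 \<noteq> 0"
  have zv: "\<forall>j. j \<notin> cols_A V d \<longrightarrow> z j = 0" using kerv_van[OF kz] .
  define z' where "z' = (\<lambda>i. 1 * emb V U d t1 z i + (-1) * emb V U d t2 z i)"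
  have slz': "\<And>t j. t \<in> cols_A U d \<Longrightarrow> sl V d z' t j = (if t = t1 then z j else 0) - (if t = t2 then z j else 0)"
    unfolding z'_def sl_lin using sl_emb[OF t1 _ zv] sl_emb[OF t2 _ zv] by simp
  have slz'2: "\<And>t. t \<in> cols_A U d \<Longrightarrow> sl V d z' t = (\<lambda>j. ((if t = t1 then 1 else 0) - (if t = t2 then 1 else 0)) * z j)"
    using slz' by (auto simp: fun_eq_iff)
  have kz': "kerv (V \<union> U) (lawrence_cx V u C) d z'"
    unfolding kerv_law[OF CV Uu]
  proof (intro conjI allI ballI)
    show "\<And>i. i \<notin> cols_A (V \<union> U) d \<longrightarrow> z' i = 0" unfolding z'_def using emb_van by simp
    fix j show "(\<Sum>t\<in>cols_A U d. sl V d z' t j) = 0"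
      using slz' sum_delta2[OF t1 t2, of "z j" "z j"] by simp
  next
    fix t assume "t \<in> cols_A U d"
    show "kerv V C d (sl V d z' t)" unfolding slz'2[OF \<open>t \<in> cols_A U d\<close>] by (rule kerv_scale[OF kz])
  qed
  have "sl V d z' t1 j0 \<noteq> 0" using slz'[OF t1] t12 zj0 by simp
  then obtain i1 where i1: "z' i1 \<noteq> 0" using sl_nz_ex by blast
  obtain y' where ky': "kerv (V \<union> U) (lawrence_cx V u C) d y'" and ny': "\<exists>i. y' i \<noteq> 0"
    and py': "\<forall>i. y' i \<in> {-1,0,1}" and sy': "\<forall>i. y' i \<noteq> 0 \<longrightarrow> z' i \<noteq> 0"
    using PPE[OF P' kz' i1] by blast
  have ky'': "(\<forall>i. i \<notin> cols_A (V \<union> U) d \<longrightarrow> y' i = 0) \<and> (\<forall>j. (\<Sum>t\<in>cols_A U d. sl V d y' t j) = 0) \<and>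
    (\<forall>t\<in>cols_A U d. kerv V C d (sl V d y' t))"
    using ky' unfolding kerv_law[OF CV Uu] .
  have other: "\<And>t j. t \<in> cols_A U d \<Longrightarrow> t \<noteq> t1 \<and> t \<noteq> t2 \<Longrightarrow> sl V d y' t j = 0"
  proof (rule ccontr)
    fix t j assume t: "t \<in> cols_A U d" "t \<noteq> t1 \<and> t \<noteq> t2" and "sl V d y' t j \<noteq> 0"
    hence "sl V d z' t j \<noteq> 0" using supp_sl[OF sy'] by blast
    thus False using slz'[OF t(1)] t(2) by simp
  qed
  have neg: "\<And>j. sl V d y' t2 j = - sl V d y' t1 j"
  proof -
    fix j
    have "(\<Sum>t\<in>cols_A U d. sl V d y' t j) = sl V d y' t1 j + sl V d y' t2 j"
      using other by (intro sum_supp2[OF finite_cols[OF fU] t1 t2 t12]) blast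
    thus "sl V d y' t2 j = - sl V d y' t1 j" using ky'' by simp
  qed
  define y where "y = sl V d y' t1"
  have "kerv V C d y" unfolding y_def using ky'' t1 by blast
  moreover have "\<exists>j. y j \<noteq> 0"
  proof -
    obtain i where "y' i \<noteq> 0" using ny' by blast
    then obtain t j where t: "t \<in> cols_A U d" and sj: "sl V d y' t j \<noteq> 0" using nz_sl ky'' by blast
    have "t = t1 \<or> t = t2" using other[OF t] sj by blast
    show ?thesis
    proof (cases "t = t1")
      case True thus ?thesis unfolding y_def using sj by blast
    next
      case False
      hence "t = t2" using \<open>t = t1 \<or> t = t2\<close> by simp
      hence "sl V d y' t1 j \<noteq> 0" using sj neg[of j] by simp
      thus ?thesis unfolding y_def by blast
    qed
  qed
  moreover have "\<forall>j. y j \<in> {-1,0,1}" unfolding y_def using sl_pm1[OF py'] by blast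
  moreover have "\<forall>j. y j \<noteq> 0 \<longrightarrow> z j \<noteq> 0"
  proof (intro allI impI)
    fix j assume "y j \<noteq> 0"
    hence "sl V d z' t1 j \<noteq> 0" unfolding y_def using supp_sl[OF sy'] by blast
    thus "z j \<noteq> 0" using slz'[OF t1] t12 by simp
  qed
  ultimately show "\<exists>y. kerv V C d y \<and> (\<exists>i. y i \<noteq> 0) \<and> (\<forall>i. y i \<in> {-1,0,1}) \<and> (\<forall>i. y i \<noteq> 0 \<longrightarrow> z i \<noteq> 0)"
    by blast
qed

lemma PP_law_up:
  assumes CV: "C \<subseteq> Pow V" and Uu: "U = {u}" and cU: "cols_A U d = {t1, t2}"
    and t12: "t1 \<noteq> t2" and P: "PP V C d"
  shows "PP (V \<union> U) (lawrence_cx V u C) d"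
proof (rule PPI)
  fix z i0 assume kz: "kerv (V \<union> U) (lawrence_cx V u C) d z" and zi0: "z i0 \<noteq> 0"
  have kz': "(\<forall>i. i \<notin> cols_A (V \<union> U) d \<longrightarrow> z i = 0) \<and> (\<forall>j. (\<Sum>t\<in>cols_A U d. sl V d z t j) = 0) \<and>
    (\<forall>t\<in>cols_A U d. kerv V C d (sl V d z t))"
    using kz unfolding kerv_law[OF CV Uu] .
  obtain t0 j0 where t0: "t0 \<in> cols_A U d" and s0: "sl V d z t0 j0 \<noteq> 0" using nz_sl kz' zi0 by blast
  define t' where "t' = (if t0 = t1 then t2 else t1)"
  have t': "t' \<in> cols_A U d" "t' \<noteq> t0" unfolding t'_def using cU t12 t0 by auto
  have cU': "cols_A U d = {t0, t'}" using cU t0 t' unfolding t'_def by auto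
  have neg: "\<And>j. sl V d z t' j = - sl V d z t0 j"
  proof -
    fix j
    have "(\<Sum>t\<in>cols_A U d. sl V d z t j) = sl V d z t0 j + sl V d z t' j"
      unfolding cU' using t'(2) by simp
    thus "sl V d z t' j = - sl V d z t0 j" using kz' by simp
  qed
  have ks: "kerv V C d (sl V d z t0)" using kz' t0 by blast
  obtain y where ky: "kerv V C d y" and ny: "\<exists>i. y i \<noteq> 0"
    and py: "\<forall>i. y i \<in> {-1,0,1}" and sy: "\<forall>i. y i \<noteq> 0 \<longrightarrow> sl V d z t0 i \<noteq> 0"
    using PPE[OF P ks s0] by blast
  have yv: "\<forall>j. j \<notin> cols_A V d \<longrightarrow> y j = 0" using kerv_van[OF ky] .
  define y' where "y' = (\<lambda>i. 1 * emb V U d t0 y i + (-1) * emb V U d t' y i)"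
  have sly': "\<And>t j. t \<in> cols_A U d \<Longrightarrow> sl V d y' t j = (if t = t0 then y j else 0) - (if t = t' then y j else 0)"
    unfolding y'_def sl_lin using sl_emb[OF t0 _ yv] sl_emb[OF t'(1) _ yv] by simp
  have sly'2: "\<And>t. t \<in> cols_A U d \<Longrightarrow> sl V d y' t = (\<lambda>j. ((if t = t0 then 1 else 0) - (if t = t' then 1 else 0)) * y j)"
    using sly' by (auto simp: fun_eq_iff)
  have yv': "\<forall>i. i \<notin> cols_A (V \<union> U) d \<longrightarrow> y' i = 0" unfolding y'_def using emb_van by simp
  have "kerv (V \<union> U) (lawrence_cx V u C) d y'"
    unfolding kerv_law[OF CV Uu]
  proof (intro conjI allI ballI)
    show "\<And>i. i \<notin> cols_A (V \<union> U) d \<longrightarrow> y' i = 0" using yv' by simp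
    fix j show "(\<Sum>t\<in>cols_A U d. sl V d y' t j) = 0"
      using sly' sum_delta2[OF t0 t'(1), of "y j" "y j"] by simp
  next
    fix t assume "t \<in> cols_A U d"
    show "kerv V C d (sl V d y' t)" unfolding sly'2[OF \<open>t \<in> cols_A U d\<close>] by (rule kerv_scale[OF ky])
  qed
  moreover have "\<exists>i. y' i \<noteq> 0"
  proof -
    obtain j where "y j \<noteq> 0" using ny by blast
    hence "sl V d y' t0 j \<noteq> 0" using sly'[OF t0] t'(2) by simp
    thus ?thesis using sl_nz_ex by blast
  qed
  moreover have "\<forall>i. y' i \<in> {-1,0,1}"
  proof
    fix i
    have "\<forall>t\<in>cols_A U d. \<forall>j. sl V d y' t j \<in> {-1,0,1}"
    proof (intro ballI allI)
      fix t j assume t: "t \<in> cols_A U d"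
      have "y j \<in> {-1,0,1}" using py by blast
      thus "sl V d y' t j \<in> {-1,0,1}" unfolding sly'[OF t] using t'(2) by auto
    qed
    thus "y' i \<in> {-1,0,1}" using pm1_sl[OF yv'] by blast
  qed
  moreover have "\<forall>i. y' i \<noteq> 0 \<longrightarrow> z i \<noteq> 0"
  proof (rule sl_supp[OF yv'], intro ballI allI impI)
    fix t j assume t: "t \<in> cols_A U d" and ne: "sl V d y' t j \<noteq> 0"
    hence tt: "t = t0 \<or> t = t'" and yj: "y j \<noteq> 0" using sly'[OF t] t'(2) by (auto split: if_splits)
    have "sl V d z t0 j \<noteq> 0" using sy yj by blast
    thus "sl V d z t j \<noteq> 0" using tt neg by auto
  qed
  ultimately show "\<exists>y. kerv (V \<union> U) (lawrence_cx V u C) d y \<and> (\<exists>i. y i \<noteq> 0) \<and> (\<forall>i. y i \<in> {-1,0,1}) \<and> (\<forall>i. y i \<noteq> 0 \<longrightarrow> z i \<noteq> 0)"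
    by blast
qed

end

lemma rigidE:
  assumes "rigid V C d x" "kerv V C d w" "\<forall>i. w i \<noteq> 0 \<longrightarrow> x i \<noteq> 0"
  shows "\<exists>c. \<forall>i. w i = c * x i"
  using assms unfolding rigid_def by blast

lemma pm1_cases: "(a::int) \<in> {-1,0,1} \<Longrightarrow> a \<noteq> 0 \<Longrightarrow> a = 1 \<or> a = -1"
  by auto

context dsj begin

lemma law_bad:
  assumes CV: "C \<subseteq> Pow V" and Uu: "U = {u}" and t1: "t1 \<in> cols_A U d" and t2: "t2 \<in> cols_A U d"
    and t3: "t3 \<in> cols_A U d" and t12: "t1 \<noteq> t2" and t13: "t1 \<noteq> t3" and t23: "t2 \<noteq> t3"
    and I: "Inv V C d"
  shows "\<not> PP (V \<union> U) (lawrence_cx V u C) d"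
proof
  assume P': "PP (V \<union> U) (lawrence_cx V u C) d"
  obtain x y where kx: "kerv V C d x" and ky: "kerv V C d y" and rx: "rigid V C d x" and ry: "rigid V C d y"
    and px: "\<forall>i. x i \<in> {-1,0,1}" and py: "\<forall>i. y i \<in> {-1,0,1}"
    and agr: "\<exists>j. x j = y j \<and> x j \<noteq> 0" and dis: "\<exists>k. x k = - y k \<and> x k \<noteq> 0"
    using I unfolding Inv_def by blast
  have xv: "\<forall>j. j \<notin> cols_A V d \<longrightarrow> x j = 0" using kerv_van[OF kx] .
  have yv: "\<forall>j. j \<notin> cols_A V d \<longrightarrow> y j = 0" using kerv_van[OF ky] .
  define xy where "xy = (\<lambda>j. x j + y j)"
  have xyv: "\<forall>j. j \<notin> cols_A V d \<longrightarrow> xy j = 0" unfolding xy_def using xv yv by simp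
  define z' where "z' = (\<lambda>i. 1 * (\<lambda>i. 1 * emb V U d t1 x i + 1 * emb V U d t2 y i) i + (-1) * emb V U d t3 xy i)"
  define a where "a = (\<lambda>t. (if t = t1 then 1 else 0) - (if t = t3 then 1 else (0::int)))"
  define b where "b = (\<lambda>t. (if t = t2 then 1 else 0) - (if t = t3 then 1 else (0::int)))"
  have slz': "\<And>t j. t \<in> cols_A U d \<Longrightarrow> sl V d z' t j = a t * x j + b t * y j"
  proof -
    fix t j assume t: "t \<in> cols_A U d"
    have "sl V d z' t j = (if t = t1 then x j else 0) + (if t = t2 then y j else 0) - (if t = t3 then xy j else 0)"
      unfolding z'_def sl_lin using sl_emb[OF t1 t xv] sl_emb[OF t2 t yv] sl_emb[OF t3 t xyv] by simp
    thus "sl V d z' t j = a t * x j + b t * y j"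
      unfolding a_def b_def xy_def using t12 t13 t23 by (auto simp: algebra_simps)
  qed
  have kz': "kerv (V \<union> U) (lawrence_cx V u C) d z'"
    unfolding kerv_law[OF CV Uu]
  proof (intro conjI allI ballI)
    show "\<And>i. i \<notin> cols_A (V \<union> U) d \<longrightarrow> z' i = 0" unfolding z'_def using emb_van by simp
    fix j
    have "(\<Sum>t\<in>cols_A U d. sl V d z' t j) = (\<Sum>t\<in>cols_A U d. a t * x j + b t * y j)"
      using slz' by (intro sum.cong refl) simp
    also have "\<dots> = a t1 * x j + b t1 * y j + (a t2 * x j + b t2 * y j) + (a t3 * x j + b t3 * y j)"
      by (rule sum_supp3[OF finite_cols[OF fU] t1 t2 t3 t12 t13 t23]) (simp add: a_def b_def)
    also have "\<dots> = 0" unfolding a_def b_def using t12 t13 t23 by simp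
    finally show "(\<Sum>t\<in>cols_A U d. sl V d z' t j) = 0" .
  next
    fix t assume t: "t \<in> cols_A U d"
    have "sl V d z' t = (\<lambda>j. a t * x j + b t * y j)" using slz'[OF t] by (simp add: fun_eq_iff)
    thus "kerv V C d (sl V d z' t)" using kerv_lin[OF kx ky] by simp
  qed
  obtain j where j: "x j = y j" "x j \<noteq> 0" using agr by blast
  obtain k where k: "x k = - y k" "x k \<noteq> 0" using dis by blast
  have "sl V d z' t1 j \<noteq> 0" using slz'[OF t1] j t12 t13 unfolding a_def b_def by simp
  then obtain i1 where i1: "z' i1 \<noteq> 0" using sl_nz_ex by blast
  obtain w' where kw: "kerv (V \<union> U) (lawrence_cx V u C) d w'" and nw: "\<exists>i. w' i \<noteq> 0"
    and pw: "\<forall>i. w' i \<in> {-1,0,1}" and sw: "\<forall>i. w' i \<noteq> 0 \<longrightarrow> z' i \<noteq> 0"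
    using PPE[OF P' kz' i1] by blast
  have kw': "(\<forall>i. i \<notin> cols_A (V \<union> U) d \<longrightarrow> w' i = 0) \<and> (\<forall>j. (\<Sum>t\<in>cols_A U d. sl V d w' t j) = 0) \<and>
    (\<forall>t\<in>cols_A U d. kerv V C d (sl V d w' t))"
    using kw unfolding kerv_law[OF CV Uu] .
  have zero_sl: "\<And>t j. t \<in> cols_A U d \<Longrightarrow> sl V d z' t j = 0 \<Longrightarrow> sl V d w' t j = 0"
    using supp_sl[OF sw] by blast
  have other: "\<And>t j. t \<in> cols_A U d \<Longrightarrow> t \<noteq> t1 \<and> t \<noteq> t2 \<and> t \<noteq> t3 \<Longrightarrow> sl V d w' t j = 0"
    using zero_sl slz' unfolding a_def b_def by simp
  obtain c1 where c1: "\<forall>j. sl V d w' t1 j = c1 * x j"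
  proof -
    have "\<forall>j. sl V d w' t1 j \<noteq> 0 \<longrightarrow> x j \<noteq> 0"
      using supp_sl[OF sw] slz'[OF t1] t12 t13 unfolding a_def b_def by fastforce
    thus ?thesis using rigidE[OF rx] kw' t1 that by blast
  qed
  obtain c2 where c2: "\<forall>j. sl V d w' t2 j = c2 * y j"
  proof -
    have "\<forall>j. sl V d w' t2 j \<noteq> 0 \<longrightarrow> y j \<noteq> 0"
      using supp_sl[OF sw] slz'[OF t2] t12 t23 unfolding a_def b_def by fastforce
    thus ?thesis using rigidE[OF ry] kw' t2 that by blast
  qed
  have s3: "\<And>j. sl V d w' t3 j = - (c1 * x j + c2 * y j)"
  proof -
    fix j
    have "(\<Sum>t\<in>cols_A U d. sl V d w' t j) = sl V d w' t1 j + sl V d w' t2 j + sl V d w' t3 j"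
      by (rule sum_supp3[OF finite_cols[OF fU] t1 t2 t3 t12 t13 t23]) (use other in blast)
    thus "sl V d w' t3 j = - (c1 * x j + c2 * y j)" using kw' c1 c2 by simp
  qed
  have "sl V d z' t3 k = 0" using slz'[OF t3] k t13 t23 unfolding a_def b_def by simp
  hence "sl V d w' t3 k = 0" using zero_sl[OF t3] by simp
  hence "c1 * x k + c2 * y k = 0" using s3 by simp
  hence "(c1 - c2) * x k = 0" using k by (simp add: algebra_simps)
  hence c12: "c1 = c2" using k by simp
  have "sl V d w' t3 j \<in> {-1,0,1}" using sl_pm1[OF pw] .
  hence "2 * c1 * x j \<in> {-1,0,1}" using s3[of j] j c12 by (auto simp: algebra_simps)
  moreover have "x j = 1 \<or> x j = -1" using pm1_cases px j by blast
  ultimately have c0: "c1 = 0" by auto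
  have "\<And>t j. t \<in> cols_A U d \<Longrightarrow> sl V d w' t j = sl V d (\<lambda>i. 0) t j"
  proof -
    fix t j assume t: "t \<in> cols_A U d"
    have "sl V d w' t j = 0"
    proof (cases "t = t1 \<or> t = t2 \<or> t = t3")
      case True thus ?thesis using c1 c2 s3 c0 c12 by auto
    next
      case False thus ?thesis using other[OF t] by blast
    qed
    thus "sl V d w' t j = sl V d (\<lambda>i. 0) t j" unfolding sl_def by simp
  qed
  hence "\<And>i. w' i = 0" using sl_eq_fun[of w' "\<lambda>i. 0"] kw' by simp
  thus False using nw by simp
qed

lemma w_eq_slices:
  assumes wv: "\<forall>i. i \<notin> cols_A (V \<union> U) d \<longrightarrow> w i = 0" and xv: "\<forall>i. i \<notin> cols_A (V \<union> U) d \<longrightarrow> x' i = 0"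
    and sl: "\<forall>t\<in>cols_A U d. \<forall>j. sl V d w t j = c * sl V d x' t j"
  shows "\<forall>i. w i = c * x' i"
proof
  fix i
  have "\<forall>t\<in>cols_A U d. \<forall>j. sl V d w t j = sl V d (\<lambda>i. c * x' i) t j"
    using sl unfolding sl_scale by simp
  moreover have "\<forall>i. i \<notin> cols_A (V \<union> U) d \<longrightarrow> c * x' i = 0" using xv by simp
  ultimately show "w i = c * x' i" using sl_eq_fun[OF wv, of "\<lambda>i. c * x' i"] by blast
qed

lemma Inv_cone:
  assumes CV: "C \<subseteq> Pow V" and t0: "t0 \<in> cols_A U d" and I: "Inv V C d"
  shows "Inv (V \<union> U) (cone_cx U C) d"
proof -
  obtain x y where kx: "kerv V C d x" and ky: "kerv V C d y" and rx: "rigid V C d x" and ry: "rigid V C d y"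
    and px: "\<forall>i. x i \<in> {-1,0,1}" and py: "\<forall>i. y i \<in> {-1,0,1}"
    and agr: "\<exists>j. x j = y j \<and> x j \<noteq> 0" and dis: "\<exists>k. x k = - y k \<and> x k \<noteq> 0"
    using I unfolding Inv_def by blast
  have lift: "kerv (V \<union> U) (cone_cx U C) d (emb V U d t0 f) \<and> rigid (V \<union> U) (cone_cx U C) d (emb V U d t0 f)
     \<and> (\<forall>j. j \<in> cols_A V d \<longrightarrow> emb V U d t0 f (mg V j t0) = f j)"
    if kf: "kerv V C d f" and rf: "rigid V C d f" for f
  proof (intro conjI allI impI)
    have fv: "\<forall>j. j \<notin> cols_A V d \<longrightarrow> f j = 0" using kerv_van[OF kf] .
    have slf: "\<And>t. t \<in> cols_A U d \<Longrightarrow> sl V d (emb V U d t0 f) t = (if t = t0 then f else (\<lambda>j. 0))"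
      using sl_emb[OF t0 _ fv] by simp
    show "kerv (V \<union> U) (cone_cx U C) d (emb V U d t0 f)"
      unfolding kerv_cone[OF CV] using emb_van slf kf by (simp add: kerv_zero)
    show "rigid (V \<union> U) (cone_cx U C) d (emb V U d t0 f)"
      unfolding rigid_def
    proof (intro allI impI)
      fix w assume H: "kerv (V \<union> U) (cone_cx U C) d w \<and> (\<forall>i. w i \<noteq> 0 \<longrightarrow> emb V U d t0 f i \<noteq> 0)"
      have kw: "(\<forall>i. i \<notin> cols_A (V \<union> U) d \<longrightarrow> w i = 0) \<and> (\<forall>t\<in>cols_A U d. kerv V C d (sl V d w t))"
        using H unfolding kerv_cone[OF CV] by simp
      have sw: "\<forall>i. w i \<noteq> 0 \<longrightarrow> emb V U d t0 f i \<noteq> 0" using H by simp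
      have z: "\<And>t j. t \<in> cols_A U d \<Longrightarrow> sl V d w t j \<noteq> 0 \<Longrightarrow> t = t0 \<and> f j \<noteq> 0"
      proof -
        fix t j assume t: "t \<in> cols_A U d" and ne: "sl V d w t j \<noteq> 0"
        have "sl V d (emb V U d t0 f) t j \<noteq> 0" using supp_sl[OF sw ne] .
        thus "t = t0 \<and> f j \<noteq> 0" using slf[OF t] by (simp split: if_splits)
      qed
      have "\<forall>j. sl V d w t0 j \<noteq> 0 \<longrightarrow> f j \<noteq> 0" using z[OF t0] by blast
      then obtain c where c: "\<forall>j. sl V d w t0 j = c * f j" using rigidE[OF rf] kw t0 by blast
      have "\<forall>t\<in>cols_A U d. \<forall>j. sl V d w t j = c * sl V d (emb V U d t0 f) t j"
      proof (intro ballI allI)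
        fix t j assume t: "t \<in> cols_A U d"
        show "sl V d w t j = c * sl V d (emb V U d t0 f) t j"
        proof (cases "t = t0")
          case True thus ?thesis using c slf[OF t] by simp
        next
          case False thus ?thesis using z[OF t, of j] slf[OF t] by auto
        qed
      qed
      hence "\<forall>i. w i = c * emb V U d t0 f i" using w_eq_slices kw emb_van by blast
      thus "\<exists>c. \<forall>i. w i = c * emb V U d t0 f i" by blast
    qed
  next
    fix j assume jj: "j \<in> cols_A V d"
    show "emb V U d t0 f (mg V j t0) = f j"
      using mg_sl[OF jj, of "emb V U d t0 f" t0] sl_emb[OF t0 t0 kerv_van[OF kf]] by simp
  qed
  obtain j where j: "x j = y j" "x j \<noteq> 0" using agr by blast
  obtain k where k: "x k = - y k" "x k \<noteq> 0" using dis by blast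
  have jc: "j \<in> cols_A V d" using j kerv_van[OF kx] by blast
  have kc: "k \<in> cols_A V d" using k kerv_van[OF kx] by blast
  show ?thesis unfolding Inv_def
    apply (rule exI[of _ "emb V U d t0 x"], rule exI[of _ "emb V U d t0 y"])
    using lift[OF kx rx] lift[OF ky ry] emb_pm1[OF px] emb_pm1[OF py] j k jc kc by metis
qed

lemma Inv_ghost:
  assumes CV: "C \<subseteq> Pow V" and t0: "t0 \<in> cols_A U d" and I: "Inv V C d"
  shows "Inv (V \<union> U) C d"
proof -
  obtain x y where kx: "kerv V C d x" and ky: "kerv V C d y" and rx: "rigid V C d x" and ry: "rigid V C d y"
    and px: "\<forall>i. x i \<in> {-1,0,1}" and py: "\<forall>i. y i \<in> {-1,0,1}"
    and agr: "\<exists>j. x j = y j \<and> x j \<noteq> 0" and dis: "\<exists>k. x k = - y k \<and> x k \<noteq> 0"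
    using I unfolding Inv_def by blast
  have lift: "kerv (V \<union> U) C d (emb V U d t0 f) \<and> rigid (V \<union> U) C d (emb V U d t0 f)
     \<and> (\<forall>j. j \<in> cols_A V d \<longrightarrow> emb V U d t0 f (mg V j t0) = f j)"
    if kf: "kerv V C d f" and rf: "rigid V C d f" for f
  proof (intro conjI allI impI)
    have fv: "\<forall>j. j \<notin> cols_A V d \<longrightarrow> f j = 0" using kerv_van[OF kf] .
    have slf: "\<And>t. t \<in> cols_A U d \<Longrightarrow> sl V d (emb V U d t0 f) t = (if t = t0 then f else (\<lambda>j. 0))"
      using sl_emb[OF t0 _ fv] by simp
    have sumf: "(\<lambda>j. \<Sum>t\<in>cols_A U d. sl V d (emb V U d t0 f) t j) = f"
    proof
      fix j
      have "(\<Sum>t\<in>cols_A U d. sl V d (emb V U d t0 f) t j) = (\<Sum>t\<in>cols_A U d. if t = t0 then f j else 0)"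
        using slf by (intro sum.cong refl) simp
      thus "(\<Sum>t\<in>cols_A U d. sl V d (emb V U d t0 f) t j) = f j" using sum_delta_cols[OF t0, of "\<lambda>_. f j"] by simp
    qed
    show "kerv (V \<union> U) C d (emb V U d t0 f)"
      unfolding kerv_ghost[OF CV] sumf using emb_van kf by simp
    show "rigid (V \<union> U) C d (emb V U d t0 f)"
      unfolding rigid_def
    proof (intro allI impI)
      fix w assume H: "kerv (V \<union> U) C d w \<and> (\<forall>i. w i \<noteq> 0 \<longrightarrow> emb V U d t0 f i \<noteq> 0)"
      have kw: "(\<forall>i. i \<notin> cols_A (V \<union> U) d \<longrightarrow> w i = 0) \<and> kerv V C d (\<lambda>j. \<Sum>t\<in>cols_A U d. sl V d w t j)"
        using H unfolding kerv_ghost[OF CV] by simp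
      have sw: "\<forall>i. w i \<noteq> 0 \<longrightarrow> emb V U d t0 f i \<noteq> 0" using H by simp
      have z: "\<And>t j. t \<in> cols_A U d \<Longrightarrow> sl V d w t j \<noteq> 0 \<Longrightarrow> t = t0 \<and> f j \<noteq> 0"
      proof -
        fix t j assume t: "t \<in> cols_A U d" and ne: "sl V d w t j \<noteq> 0"
        have "sl V d (emb V U d t0 f) t j \<noteq> 0" using supp_sl[OF sw ne] .
        thus "t = t0 \<and> f j \<noteq> 0" using slf[OF t] by (simp split: if_splits)
      qed
      have sumw: "(\<lambda>j. \<Sum>t\<in>cols_A U d. sl V d w t j) = sl V d w t0"
      proof
        fix j
        have "(\<Sum>t\<in>cols_A U d. sl V d w t j) = (\<Sum>t\<in>cols_A U d. if t = t0 then sl V d w t0 j else 0)"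
        proof (intro sum.cong refl)
          fix t assume t: "t \<in> cols_A U d"
          show "sl V d w t j = (if t = t0 then sl V d w t0 j else 0)" using z[OF t, of j] by auto
        qed
        thus "(\<Sum>t\<in>cols_A U d. sl V d w t j) = sl V d w t0 j" using sum_delta_cols[OF t0] by simp
      qed
      have "\<forall>j. sl V d w t0 j \<noteq> 0 \<longrightarrow> f j \<noteq> 0" using z[OF t0] by blast
      moreover have "kerv V C d (sl V d w t0)" using kw sumw by simp
      ultimately obtain c where c: "\<forall>j. sl V d w t0 j = c * f j" using rigidE[OF rf] by blast
      have "\<forall>t\<in>cols_A U d. \<forall>j. sl V d w t j = c * sl V d (emb V U d t0 f) t j"
      proof (intro ballI allI)
        fix t j assume t: "t \<in> cols_A U d"
        show "sl V d w t j = c * sl V d (emb V U d t0 f) t j"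
        proof (cases "t = t0")
          case True thus ?thesis using c slf[OF t] by simp
        next
          case False thus ?thesis using z[OF t, of j] slf[OF t] by auto
        qed
      qed
      hence "\<forall>i. w i = c * emb V U d t0 f i" using w_eq_slices kw emb_van by blast
      thus "\<exists>c. \<forall>i. w i = c * emb V U d t0 f i" by blast
    qed
  next
    fix j assume jj: "j \<in> cols_A V d"
    show "emb V U d t0 f (mg V j t0) = f j"
      using mg_sl[OF jj, of "emb V U d t0 f" t0] sl_emb[OF t0 t0 kerv_van[OF kf]] by simp
  qed
  obtain j where j: "x j = y j" "x j \<noteq> 0" using agr by blast
  obtain k where k: "x k = - y k" "x k \<noteq> 0" using dis by blast
  have jc: "j \<in> cols_A V d" using j kerv_van[OF kx] by blast
  have kc: "k \<in> cols_A V d" using k kerv_van[OF kx] by blast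
  show ?thesis unfolding Inv_def
    apply (rule exI[of _ "emb V U d t0 x"], rule exI[of _ "emb V U d t0 y"])
    using lift[OF kx rx] lift[OF ky ry] emb_pm1[OF px] emb_pm1[OF py] j k jc kc by metis
qed

lemma Inv_law:
  assumes CV: "C \<subseteq> Pow V" and Uu: "U = {u}" and t1: "t1 \<in> cols_A U d" and t2: "t2 \<in> cols_A U d"
    and t12: "t1 \<noteq> t2" and I: "Inv V C d"
  shows "Inv (V \<union> U) (lawrence_cx V u C) d"
proof -
  obtain x y where kx: "kerv V C d x" and ky: "kerv V C d y" and rx: "rigid V C d x" and ry: "rigid V C d y"
    and px: "\<forall>i. x i \<in> {-1,0,1}" and py: "\<forall>i. y i \<in> {-1,0,1}"
    and agr: "\<exists>j. x j = y j \<and> x j \<noteq> 0" and dis: "\<exists>k. x k = - y k \<and> x k \<noteq> 0"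
    using I unfolding Inv_def by blast
  define L where "L = (\<lambda>f i. 1 * emb V U d t1 f i + (-1) * emb V U d t2 f i)"
  have lift: "kerv (V \<union> U) (lawrence_cx V u C) d (L f) \<and> rigid (V \<union> U) (lawrence_cx V u C) d (L f)
     \<and> (\<forall>j. j \<in> cols_A V d \<longrightarrow> L f (mg V j t1) = f j)"
    if kf: "kerv V C d f" and rf: "rigid V C d f" for f
  proof (intro conjI allI impI)
    have fv: "\<forall>j. j \<notin> cols_A V d \<longrightarrow> f j = 0" using kerv_van[OF kf] .
    have slf: "\<And>t j. t \<in> cols_A U d \<Longrightarrow> sl V d (L f) t j = (if t = t1 then f j else 0) - (if t = t2 then f j else 0)"
      unfolding L_def sl_lin using sl_emb[OF t1 _ fv] sl_emb[OF t2 _ fv] by simp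
    have slf2: "\<And>t. t \<in> cols_A U d \<Longrightarrow> sl V d (L f) t = (\<lambda>j. ((if t = t1 then 1 else 0) - (if t = t2 then 1 else 0)) * f j)"
      using slf by (auto simp: fun_eq_iff)
    have Lv: "\<forall>i. i \<notin> cols_A (V \<union> U) d \<longrightarrow> L f i = 0" unfolding L_def using emb_van by simp
    show "kerv (V \<union> U) (lawrence_cx V u C) d (L f)"
      unfolding kerv_law[OF CV Uu]
    proof (intro conjI allI ballI)
      show "\<And>i. i \<notin> cols_A (V \<union> U) d \<longrightarrow> L f i = 0" using Lv by simp
      fix j show "(\<Sum>t\<in>cols_A U d. sl V d (L f) t j) = 0"
        using slf sum_delta2[OF t1 t2, of "f j" "f j"] by simp
    next
      fix t assume "t \<in> cols_A U d"
      show "kerv V C d (sl V d (L f) t)" unfolding slf2[OF \<open>t \<in> cols_A U d\<close>] by (rule kerv_scale[OF kf])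
    qed
    show "rigid (V \<union> U) (lawrence_cx V u C) d (L f)"
      unfolding rigid_def
    proof (intro allI impI)
      fix w assume H: "kerv (V \<union> U) (lawrence_cx V u C) d w \<and> (\<forall>i. w i \<noteq> 0 \<longrightarrow> L f i \<noteq> 0)"
      have kw: "(\<forall>i. i \<notin> cols_A (V \<union> U) d \<longrightarrow> w i = 0) \<and> (\<forall>j. (\<Sum>t\<in>cols_A U d. sl V d w t j) = 0) \<and>
         (\<forall>t\<in>cols_A U d. kerv V C d (sl V d w t))"
        using H unfolding kerv_law[OF CV Uu] by simp
      have sw: "\<forall>i. w i \<noteq> 0 \<longrightarrow> L f i \<noteq> 0" using H by simp
      have z: "\<And>t j. t \<in> cols_A U d \<Longrightarrow> sl V d w t j \<noteq> 0 \<Longrightarrow> (t = t1 \<or> t = t2) \<and> f j \<noteq> 0"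
      proof -
        fix t j assume t: "t \<in> cols_A U d" and ne: "sl V d w t j \<noteq> 0"
        have "sl V d (L f) t j \<noteq> 0" using supp_sl[OF sw ne] .
        thus "(t = t1 \<or> t = t2) \<and> f j \<noteq> 0" using slf[OF t] by (simp split: if_splits)
      qed
      have neg: "\<And>j. sl V d w t2 j = - sl V d w t1 j"
      proof -
        fix j
        have "(\<Sum>t\<in>cols_A U d. sl V d w t j) = sl V d w t1 j + sl V d w t2 j"
        proof (rule sum_supp2[OF finite_cols[OF fU] t1 t2 t12], intro ballI impI)
          fix t assume "t \<in> cols_A U d" "t \<noteq> t1 \<and> t \<noteq> t2"
          thus "sl V d w t j = 0" using z by blast
        qed
        thus "sl V d w t2 j = - sl V d w t1 j" using kw by simp
      qed
      have "\<forall>j. sl V d w t1 j \<noteq> 0 \<longrightarrow> f j \<noteq> 0" using z[OF t1] by blast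
      then obtain c where c: "\<forall>j. sl V d w t1 j = c * f j" using rigidE[OF rf] kw t1 by blast
      have "\<forall>t\<in>cols_A U d. \<forall>j. sl V d w t j = c * sl V d (L f) t j"
      proof (intro ballI allI)
        fix t j assume t: "t \<in> cols_A U d"
        show "sl V d w t j = c * sl V d (L f) t j"
        proof (cases "t = t1")
          case True thus ?thesis using c slf[OF t] t12 by simp
        next
          case F: False
          show ?thesis
          proof (cases "t = t2")
            case True thus ?thesis using c neg slf[OF t] t12 by simp
          next
            case False thus ?thesis using z[OF t, of j] slf[OF t] F by auto
          qed
        qed
      qed
      hence "\<forall>i. w i = c * L f i" using w_eq_slices kw Lv by blast
      thus "\<exists>c. \<forall>i. w i = c * L f i" by blast
    qed
  next
    fix j assume j: "j \<in> cols_A V d"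
    have "L f (mg V j t1) = sl V d (L f) t1 j" using mg_sl[OF j] .
    also have "\<dots> = f j" using t12
      unfolding L_def sl_lin using sl_emb[OF t1 t1 kerv_van[OF kf]] sl_emb[OF t2 t1 kerv_van[OF kf]] by simp
    finally show "L f (mg V j t1) = f j" .
  qed
  have pL: "\<And>f. \<forall>i. f i \<in> {-1,0,1} \<Longrightarrow> \<forall>i. L f i \<in> {-1,0,1}"
    unfolding L_def emb_def using t12 by auto
  obtain j where j: "x j = y j" "x j \<noteq> 0" using agr by blast
  obtain k where k: "x k = - y k" "x k \<noteq> 0" using dis by blast
  have jc: "j \<in> cols_A V d" using j kerv_van[OF kx] by blast
  have kc: "k \<in> cols_A V d" using k kerv_van[OF kx] by blast
  show ?thesis unfolding Inv_def
    apply (rule exI[of _ "L x"], rule exI[of _ "L y"])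
    using lift[OF kx rx] lift[OF ky ry] pL[OF px] pL[OF py] j k jc kc by metis
qed

end

lemma cols_cong: "\<forall>v\<in>V. d v = d' v \<Longrightarrow> cols_A V d = cols_A V d'"
  unfolding cols_A_def by (rule PiE_cong) auto

lemma kerv_cong:
  assumes dd: "\<forall>v\<in>V. d v = d' v" and CV: "C \<subseteq> Pow V"
  shows "kerv V C d z = kerv V C d' z"
proof -
  have c: "cols_A V d = cols_A V d'" using cols_cong[OF dd] .
  have p: "PiE S (\<lambda>v. {1..d v}) = PiE S (\<lambda>v. {1..d' v})" if S: "S \<in> C" for S
  proof -
    have "S \<subseteq> V" using S CV by blast
    thus ?thesis using dd by (intro PiE_cong) auto
  qed
  have m: "\<And>S e. marg V d S e z = marg V d' S e z" unfolding marg_def c ..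
  have "(\<forall>S\<in>C. \<forall>e\<in>PiE S (\<lambda>v. {1..d v}). marg V d' S e z = 0) \<longleftrightarrow>
        (\<forall>S\<in>C. \<forall>e\<in>PiE S (\<lambda>v. {1..d' v}). marg V d' S e z = 0)"
    by (intro ball_cong refl p)
  thus ?thesis unfolding kerv_def c m by simp
qed

lemma PP_cong: assumes "\<forall>v\<in>V. d v = d' v" "C \<subseteq> Pow V" shows "PP V C d = PP V C d'"
  by (simp only: PP_def kerv_cong[OF assms])

lemma rigid_cong: assumes "\<forall>v\<in>V. d v = d' v" "C \<subseteq> Pow V" shows "rigid V C d x = rigid V C d' x"
  by (simp only: rigid_def kerv_cong[OF assms])

lemma Inv_cong: assumes "\<forall>v\<in>V. d v = d' v" "C \<subseteq> Pow V" shows "Inv V C d = Inv V C d'"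
  by (simp only: Inv_def kerv_cong[OF assms] rigid_cong[OF assms])

locale box =
  fixes V :: "'a set" and C :: "'a set set" and d d' :: "'a \<Rightarrow> nat"
  assumes fV: "finite V" and CV: "C \<subseteq> Pow V" and le: "\<forall>v\<in>V. d' v \<le> d v"
begin

lemma cols_mono: "cols_A V d' \<subseteq> cols_A V d"
  unfolding cols_A_def by (rule PiE_mono) (use le in auto)

lemma marg_box:
  assumes wv: "\<forall>i. i \<notin> cols_A V d' \<longrightarrow> w i = 0"
  shows "marg V d S e w = marg V d' S e w"
  unfolding marg_def
  by (rule sum.mono_neutral_right[OF finite_cols[OF fV] cols_mono]) (use wv in auto)

lemma kerv_up: "kerv V C d' w \<Longrightarrow> kerv V C d w"
proof -
  assume K: "kerv V C d' w"
  have wv: "\<forall>i. i \<notin> cols_A V d' \<longrightarrow> w i = 0" using kerv_van[OF K] .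
  show "kerv V C d w" unfolding kerv_def
  proof (intro conjI allI impI ballI)
    fix i assume "i \<notin> cols_A V d" thus "w i = 0" using wv cols_mono by blast
  next
    fix S e assume S: "S \<in> C" and e: "e \<in> PiE S (\<lambda>v. {1..d v})"
    show "marg V d S e w = 0"
    proof (cases "e \<in> PiE S (\<lambda>v. {1..d' v})")
      case True thus ?thesis using K S marg_box[OF wv] unfolding kerv_def by simp
    next
      case False
      have SV: "S \<subseteq> V" using S CV by blast
      have "marg V d' S e w = 0" unfolding marg_def
      proof (intro sum.neutral ballI)
        fix i assume "i \<in> cols_A V d'"
        hence "restrict i S \<in> PiE S (\<lambda>v. {1..d' v})" using SV unfolding cols_A_def by auto
        thus "(if restrict i S = e then w i else 0) = 0" using False by auto
      qed
      thus ?thesis using marg_box[OF wv] by simp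
    qed
  qed
qed

lemma kerv_down:
  assumes K: "kerv V C d w" and wv: "\<forall>i. w i \<noteq> 0 \<longrightarrow> i \<in> cols_A V d'"
  shows "kerv V C d' w"
  unfolding kerv_def
proof (intro conjI allI impI ballI)
  fix i assume "i \<notin> cols_A V d'" thus "w i = 0" using wv by blast
next
  fix S e assume S: "S \<in> C" and e: "e \<in> PiE S (\<lambda>v. {1..d' v})"
  have SV: "S \<subseteq> V" using S CV by blast
  have "PiE S (\<lambda>v. {1..d' v}) \<subseteq> PiE S (\<lambda>v. {1..d v})" by (rule PiE_mono) (use le SV in auto)
  hence "e \<in> PiE S (\<lambda>v. {1..d v})" using e by blast
  hence "marg V d S e w = 0" using K S unfolding kerv_def by blast
  moreover have "marg V d S e w = marg V d' S e w" using marg_box wv by blast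
  ultimately show "marg V d' S e w = 0" by simp
qed

lemma PP_box: "PP V C d \<Longrightarrow> PP V C d'"
proof (rule PPI)
  fix z i assume P: "PP V C d" and kz: "kerv V C d' z" and zi: "z i \<noteq> 0"
  have zv: "\<forall>i. z i \<noteq> 0 \<longrightarrow> i \<in> cols_A V d'" using kerv_van[OF kz] by blast
  obtain y where ky: "kerv V C d y" and ny: "\<exists>i. y i \<noteq> 0"
    and py: "\<forall>i. y i \<in> {-1,0,1}" and sy: "\<forall>i. y i \<noteq> 0 \<longrightarrow> z i \<noteq> 0"
    using PPE[OF P kerv_up[OF kz] zi] by blast
  have "kerv V C d' y" using kerv_down[OF ky] sy zv by blast
  thus "\<exists>y. kerv V C d' y \<and> (\<exists>i. y i \<noteq> 0) \<and> (\<forall>i. y i \<in> {-1,0,1}) \<and> (\<forall>i. y i \<noteq> 0 \<longrightarrow> z i \<noteq> 0)"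
    using ny py sy by blast
qed

lemma rigid_box: "kerv V C d' x \<Longrightarrow> rigid V C d' x \<Longrightarrow> rigid V C d x"
  unfolding rigid_def
proof (intro allI impI)
  fix w assume kx: "kerv V C d' x" and R: "\<forall>w. kerv V C d' w \<and> (\<forall>i. w i \<noteq> 0 \<longrightarrow> x i \<noteq> 0) \<longrightarrow> (\<exists>c. \<forall>i. w i = c * x i)"
    and H: "kerv V C d w \<and> (\<forall>i. w i \<noteq> 0 \<longrightarrow> x i \<noteq> 0)"
  have "\<forall>i. w i \<noteq> 0 \<longrightarrow> i \<in> cols_A V d'" using H kerv_van[OF kx] by blast
  hence "kerv V C d' w" using kerv_down H by blast
  thus "\<exists>c. \<forall>i. w i = c * x i" using R H by blast
qed

lemma Inv_box: "Inv V C d' \<Longrightarrow> Inv V C d"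
proof -
  assume "Inv V C d'"
  then obtain x y where kx: "kerv V C d' x" and ky: "kerv V C d' y" and rx: "rigid V C d' x" and ry: "rigid V C d' y"
    and rest: "(\<forall>i. x i \<in> {-1,0,1}) \<and> (\<forall>i. y i \<in> {-1,0,1}) \<and>
     (\<exists>j. x j = y j \<and> x j \<noteq> 0) \<and> (\<exists>k. x k = - y k \<and> x k \<noteq> 0)"
    unfolding Inv_def by blast
  show "Inv V C d" unfolding Inv_def
    using kerv_up[OF kx] kerv_up[OF ky] rigid_box[OF kx rx] rigid_box[OF ky ry] rest by blast
qed

end

section \<open>The complex D_{m,n}\<close>

lemma Dmn_char:
  assumes "A \<inter> B = {}"
  shows "Dmn A B = {S. S \<subseteq> A \<union> B \<and> (\<exists>a\<in>A. a \<notin> S) \<and> (\<exists>b\<in>B. b \<notin> S)}"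
  unfolding Dmn_def alexander_dual_def simplex_disj_union_def using assms by auto

lemma Dmn_sym: "Dmn A B = Dmn B A"
  unfolding Dmn_def simplex_disj_union_def by (simp add: Un_commute)

lemma marg_two:
  assumes fV: "finite V" and a: "a \<in> V" and b: "b \<in> V" and ab: "a \<noteq> b" and i: "i \<in> cols_A V d"
  shows "marg V d (V - {a, b}) (restrict i (V - {a, b})) z = (\<Sum>p\<in>{1..d a}. \<Sum>q\<in>{1..d b}. z (i(a := p, b := q)))"
proof -
  define F where "F = V - {a, b}"
  define g where "g = (\<lambda>(p, q). i(a := p, b := q))"
  have iext: "\<And>x. x \<notin> V \<Longrightarrow> i x = undefined" using i unfolding cols_A_def by (auto simp: PiE_def extensional_def)
  have iv: "\<And>x. x \<in> V \<Longrightarrow> i x \<in> {1..d x}" using i unfolding cols_A_def by auto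
  have set_eq: "{i' \<in> cols_A V d. restrict i' F = restrict i F} = g ` ({1..d a} \<times> {1..d b})"
  proof
    show "{i' \<in> cols_A V d. restrict i' F = restrict i F} \<subseteq> g ` ({1..d a} \<times> {1..d b})"
    proof
      fix i' assume H: "i' \<in> {i' \<in> cols_A V d. restrict i' F = restrict i F}"
      have i'c: "i' \<in> cols_A V d" and r: "restrict i' F = restrict i F" using H by auto
      have i'ext: "\<And>x. x \<notin> V \<Longrightarrow> i' x = undefined" using i'c unfolding cols_A_def by (auto simp: PiE_def extensional_def)
      have i'v: "\<And>x. x \<in> V \<Longrightarrow> i' x \<in> {1..d x}" using i'c unfolding cols_A_def by auto
      have eqF: "\<And>x. x \<in> F \<Longrightarrow> i' x = i x" using r by (metis restrict_apply')
      have "i' = g (i' a, i' b)"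
      proof
        fix x show "i' x = g (i' a, i' b) x"
          unfolding g_def using eqF iext i'ext unfolding F_def by (cases "x \<in> V") auto
      qed
      moreover have "(i' a, i' b) \<in> {1..d a} \<times> {1..d b}" using i'v a b by auto
      ultimately show "i' \<in> g ` ({1..d a} \<times> {1..d b})" by blast
    qed
    show "g ` ({1..d a} \<times> {1..d b}) \<subseteq> {i' \<in> cols_A V d. restrict i' F = restrict i F}"
    proof
      fix i' assume "i' \<in> g ` ({1..d a} \<times> {1..d b})"
      then obtain p q where pq: "p \<in> {1..d a}" "q \<in> {1..d b}" "i' = i(a := p, b := q)" unfolding g_def by auto
      have "i' \<in> cols_A V d" using pq i a b ab unfolding cols_A_def by (auto simp: PiE_def extensional_def Pi_def)
      moreover have "restrict i' F = restrict i F" using pq unfolding F_def by (auto simp: fun_eq_iff)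
      ultimately show "i' \<in> {i' \<in> cols_A V d. restrict i' F = restrict i F}" by simp
    qed
  qed
  have inj: "inj_on g ({1..d a} \<times> {1..d b})"
  proof (rule inj_onI)
    fix x y assume "x \<in> {1..d a} \<times> {1..d b}" "y \<in> {1..d a} \<times> {1..d b}" "g x = g y"
    then obtain p q p' q' where xy: "x = (p, q)" "y = (p', q')" and e: "i(a := p, b := q) = i(a := p', b := q')"
      unfolding g_def by (cases x, cases y) auto
    moreover have "p = p'"
    proof -
      have "p = (i(a := p, b := q)) a" using ab by simp
      also have "\<dots> = (i(a := p', b := q')) a" using e by simp
      also have "\<dots> = p'" using ab by simp
      finally show ?thesis .
    qed
    moreover have "q = q'"
    proof -
      have "q = (i(a := p, b := q)) b" by simp
      also have "\<dots> = (i(a := p', b := q')) b" using e by simp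
      also have "\<dots> = q'" by simp
      finally show ?thesis .
    qed
    ultimately show "x = y" using xy by simp
  qed
  have "marg V d F (restrict i F) z = (\<Sum>i'\<in>{i' \<in> cols_A V d. restrict i' F = restrict i F}. z i')"
    unfolding marg_def using finite_cols[OF fV] by (simp add: sum.inter_filter)
  also have "\<dots> = (\<Sum>x\<in>{1..d a} \<times> {1..d b}. z (g x))"
    unfolding set_eq by (rule sum.reindex[OF inj, unfolded comp_def])
  also have "\<dots> = (\<Sum>(p, q)\<in>{1..d a} \<times> {1..d b}. z (i(a := p, b := q)))"
    unfolding g_def by (intro sum.cong refl) auto
  also have "\<dots> = (\<Sum>p\<in>{1..d a}. \<Sum>q\<in>{1..d b}. z (i(a := p, b := q)))"
    by (rule sum.cartesian_product[symmetric])
  finally show ?thesis unfolding F_def .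
qed

lemma kerv_Dmn:
  assumes AB: "A \<inter> B = {}" and fA: "finite A" and fB: "finite B" and d1: "\<forall>v\<in>A \<union> B. d v \<ge> 1"
  shows "kerv (A \<union> B) (Dmn A B) d z \<longleftrightarrow> (\<forall>i. i \<notin> cols_A (A \<union> B) d \<longrightarrow> z i = 0) \<and>
    (\<forall>a\<in>A. \<forall>b\<in>B. \<forall>i\<in>cols_A (A \<union> B) d. (\<Sum>p\<in>{1..d a}. \<Sum>q\<in>{1..d b}. z (i(a := p, b := q))) = 0)"
proof -
  define V where "V = A \<union> B"
  have fV: "finite V" unfolding V_def using fA fB by simp
  have face: "\<And>a b. a \<in> A \<Longrightarrow> b \<in> B \<Longrightarrow> V - {a, b} \<in> Dmn A B"
    unfolding Dmn_char[OF AB] V_def by auto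
  have ab: "\<And>a b. a \<in> A \<Longrightarrow> b \<in> B \<Longrightarrow> a \<noteq> b" using AB by blast
  show ?thesis unfolding V_def[symmetric]
  proof
    assume K: "kerv V (Dmn A B) d z"
    have "\<forall>a\<in>A. \<forall>b\<in>B. \<forall>i\<in>cols_A V d. (\<Sum>p\<in>{1..d a}. \<Sum>q\<in>{1..d b}. z (i(a := p, b := q))) = 0"
    proof (intro ballI)
      fix a b i assume a: "a \<in> A" and b: "b \<in> B" and i: "i \<in> cols_A V d"
      have "restrict i (V - {a, b}) \<in> PiE (V - {a, b}) (\<lambda>v. {1..d v})" using i unfolding cols_A_def by auto
      hence "marg V d (V - {a, b}) (restrict i (V - {a, b})) z = 0" using K face[OF a b] unfolding kerv_def by blast
      moreover have aV: "a \<in> V" and bV: "b \<in> V" using a b unfolding V_def by auto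
      ultimately show "(\<Sum>p\<in>{1..d a}. \<Sum>q\<in>{1..d b}. z (i(a := p, b := q))) = 0"
        using marg_two[OF fV aV bV ab[OF a b] i] by simp
    qed
    thus "(\<forall>i. i \<notin> cols_A V d \<longrightarrow> z i = 0) \<and>
      (\<forall>a\<in>A. \<forall>b\<in>B. \<forall>i\<in>cols_A V d. (\<Sum>p\<in>{1..d a}. \<Sum>q\<in>{1..d b}. z (i(a := p, b := q))) = 0)"
      using K unfolding kerv_def by simp
  next
    assume H: "(\<forall>i. i \<notin> cols_A V d \<longrightarrow> z i = 0) \<and>
      (\<forall>a\<in>A. \<forall>b\<in>B. \<forall>i\<in>cols_A V d. (\<Sum>p\<in>{1..d a}. \<Sum>q\<in>{1..d b}. z (i(a := p, b := q))) = 0)"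
    show "kerv V (Dmn A B) d z" unfolding kerv_def
    proof (intro conjI allI impI ballI)
      fix i assume "i \<notin> cols_A V d" thus "z i = 0" using H by simp
    next
      fix S e assume S: "S \<in> Dmn A B" and e: "e \<in> PiE S (\<lambda>v. {1..d v})"
      obtain a b where a: "a \<in> A" "a \<notin> S" and b: "b \<in> B" "b \<notin> S" and SV: "S \<subseteq> V"
        using S unfolding Dmn_char[OF AB] V_def by blast
      have SF: "S \<subseteq> V - {a, b}" using SV a b by blast
      have aV: "a \<in> V" and bV: "b \<in> V" using a b unfolding V_def by auto
      have m0: "marg V d (V - {a, b}) e' z = 0" if e': "e' \<in> PiE (V - {a, b}) (\<lambda>v. {1..d v})" for e'
      proof -
        define i where "i = e'(a := 1, b := 1)"
        have i: "i \<in> cols_A V d" unfolding i_def cols_A_def using e' d1 aV bV unfolding V_def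
          by (auto simp: PiE_def extensional_def Pi_def)
        have "restrict i (V - {a, b}) = e'" unfolding i_def using e'
          by (auto simp: fun_eq_iff PiE_def extensional_def)
        hence "marg V d (V - {a, b}) e' z = (\<Sum>p\<in>{1..d a}. \<Sum>q\<in>{1..d b}. z (i(a := p, b := q)))"
          using marg_two[OF fV aV bV ab[OF a(1) b(1)] i] by simp
        thus ?thesis using H a b i by simp
      qed
      show "marg V d S e z = 0"
        unfolding marg_sub[OF fV SF Diff_subset] using m0 by (intro sum.neutral) simp
    qed
  qed
qed

lemma sum_12: "(\<Sum>p\<in>{1..2::nat}. f p) = f 1 + f 2"
  by (simp add: numeral_2_eq_2 atLeastAtMostSuc_conv add.commute)

lemma sum_123: "(\<Sum>p\<in>{1..3::nat}. f p) = f 1 + f 2 + f 3"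
  by (simp add: numeral_3_eq_3 numeral_2_eq_2 atLeastAtMostSuc_conv add.commute add.left_commute)


definition ovr :: "'a set \<Rightarrow> ('a \<Rightarrow> nat) \<Rightarrow> ('a \<Rightarrow> nat) \<Rightarrow> ('a \<Rightarrow> nat)" where
  "ovr X j i = (\<lambda>v. if v \<in> X then j v else i v)"

definition sg :: "'a set \<Rightarrow> ('a \<Rightarrow> nat) \<Rightarrow> int" where
  "sg W i = (\<Prod>u\<in>W. if i u = 2 then -1 else 1)"

definition s2 :: "nat \<Rightarrow> int" where "s2 p = (if p = 2 then -1 else 1)"

lemma ovr_cols: "X \<subseteq> V \<Longrightarrow> i \<in> cols_A V d \<Longrightarrow> j \<in> cols_A V d \<Longrightarrow> ovr X j i \<in> cols_A V d"
  unfolding ovr_def cols_A_def by (auto simp: PiE_def Pi_def extensional_def)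

lemma ovr_upd: "b \<notin> X \<Longrightarrow> ovr X j (i(b := q)) = (ovr X j i)(b := q)"
  unfolding ovr_def by (auto simp: fun_eq_iff)

lemma ovr_upd_in: "a \<in> X \<Longrightarrow> ovr X j (i(a := q)) = ovr X j i"
  unfolding ovr_def by (auto simp: fun_eq_iff)

lemma ovr_ovr:
  assumes "i \<in> cols_A V d" "j \<in> cols_A V d" "\<forall>v\<in>V - (X \<union> Y). i v = j v"
  shows "ovr X j (ovr Y j i) = j"
proof
  fix v show "ovr X j (ovr Y j i) v = j v"
  proof (cases "v \<in> V")
    case True thus ?thesis using assms(3) unfolding ovr_def by auto
  next
    case False
    hence "i v = undefined" "j v = undefined" using assms(1,2) unfolding cols_A_def by (auto simp: PiE_def extensional_def)
    thus ?thesis unfolding ovr_def by auto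
  qed
qed

lemma in12: "(x::nat) \<in> {1..2} \<longleftrightarrow> x = 1 \<or> x = 2" by auto

lemma upd_cols: "i \<in> cols_A V d \<Longrightarrow> a \<in> V \<Longrightarrow> p \<in> {1..d a} \<Longrightarrow> i(a := p) \<in> cols_A V d"
  unfolding cols_A_def by (auto simp: PiE_def Pi_def extensional_def)

lemma conn:
  assumes fX: "finite X" and XV: "X \<subseteq> V" and d2: "\<forall>v\<in>X. d v = 2"
    and H: "\<forall>i\<in>cols_A V d. \<forall>a\<in>X. f (i(a := 1)) = f (i(a := 2))"
  shows "i \<in> cols_A V d \<Longrightarrow> j \<in> cols_A V d \<Longrightarrow> f i = f (ovr X j i)"
proof (induction "card {a\<in>X. i a \<noteq> j a}" arbitrary: i rule: less_induct)
  case less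
  show ?case
  proof (cases "{a\<in>X. i a \<noteq> j a} = {}")
    case True
    hence "ovr X j i = i" unfolding ovr_def by (auto simp: fun_eq_iff)
    thus ?thesis by simp
  next
    case False
    then obtain a where a: "a \<in> X" "i a \<noteq> j a" by blast
    have aV: "a \<in> V" using a XV by blast
    have ia: "i a \<in> {1..2}" using less.prems(1) aV d2 a unfolding cols_A_def by force
    have ja: "j a \<in> {1..2}" using less.prems(2) aV d2 a unfolding cols_A_def by force
    define i' where "i' = i(a := j a)"
    have i'c: "i' \<in> cols_A V d" unfolding i'_def using upd_cols[OF less.prems(1) aV] ja d2 a by simp
    have "f i = f i'"
    proof -
      have e1: "f (i(a := 1)) = f (i(a := 2))" using H less.prems(1) a by blast
      have "i = i(a := i a)" by simp
      thus ?thesis unfolding i'_def using e1 ia ja a(2) unfolding in12 by (metis)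
    qed
    moreover have "ovr X j i' = ovr X j i" unfolding i'_def using ovr_upd_in[OF a(1)] by simp
    moreover have "card {b\<in>X. i' b \<noteq> j b} < card {b\<in>X. i b \<noteq> j b}"
    proof (rule psubset_card_mono)
      show "finite {b\<in>X. i b \<noteq> j b}" using fX by simp
      show "{b\<in>X. i' b \<noteq> j b} \<subset> {b\<in>X. i b \<noteq> j b}" unfolding i'_def using a by auto
    qed
    ultimately show ?thesis using less.hyps[OF _ i'c less.prems(2)] by simp
  qed
qed

lemma rect:
  fixes w :: "('a \<Rightarrow> nat) \<Rightarrow> int"
  assumes fV: "finite V" and XV: "X \<subseteq> V" and YV: "Y \<subseteq> V" and XY: "X \<inter> Y = {}"
    and d2: "\<forall>v\<in>X \<union> Y. d v = 2"
    and H4: "\<forall>i\<in>cols_A V d. \<forall>a\<in>X. \<forall>b\<in>Y.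
       w (i(a := 1, b := 1)) - w (i(a := 2, b := 1)) - w (i(a := 1, b := 2)) + w (i(a := 2, b := 2)) = 0"
    and i: "i \<in> cols_A V d" and j: "j \<in> cols_A V d" and agree: "\<forall>v\<in>V - (X \<union> Y). i v = j v"
  shows "w i + w j = w (ovr X j i) + w (ovr Y j i)"
proof -
  have fX: "finite X" and fY: "finite Y" using XV YV fV finite_subset by auto
  define \<phi> where "\<phi> = (\<lambda>b i. w (i(b := 1)) - w (i(b := 2)))"
  have step1: "\<And>b i. b \<in> Y \<Longrightarrow> i \<in> cols_A V d \<Longrightarrow> \<phi> b i = \<phi> b (ovr X j i)"
  proof -
    fix b i assume b: "b \<in> Y" and i: "i \<in> cols_A V d"
    have "\<forall>i\<in>cols_A V d. \<forall>a\<in>X. \<phi> b (i(a := 1)) = \<phi> b (i(a := 2))"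
    proof (intro ballI)
      fix i a assume i: "i \<in> cols_A V d" and a: "a \<in> X"
      have "w (i(a := 1, b := 1)) - w (i(a := 2, b := 1)) - w (i(a := 1, b := 2)) + w (i(a := 2, b := 2)) = 0"
        using H4 i a b by blast
      thus "\<phi> b (i(a := 1)) = \<phi> b (i(a := 2))" unfolding \<phi>_def by linarith
    qed
    thus "\<phi> b i = \<phi> b (ovr X j i)" using conn[OF fX XV _ _ i j] d2 by blast
  qed
  define \<Delta> where "\<Delta> = (\<lambda>i. w i - w (ovr X j i))"
  have "\<forall>i\<in>cols_A V d. \<forall>b\<in>Y. \<Delta> (i(b := 1)) = \<Delta> (i(b := 2))"
  proof (intro ballI)
    fix i b assume i: "i \<in> cols_A V d" and b: "b \<in> Y"
    have bX: "b \<notin> X" using b XY by blast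
    have "\<phi> b i = \<phi> b (ovr X j i)" using step1[OF b i] .
    thus "\<Delta> (i(b := 1)) = \<Delta> (i(b := 2))"
      unfolding \<Delta>_def \<phi>_def ovr_upd[OF bX] by linarith
  qed
  hence "\<Delta> i = \<Delta> (ovr Y j i)" using conn[OF fY YV _ _ i j] d2 by blast
  thus ?thesis unfolding \<Delta>_def ovr_ovr[OF i j agree] by simp
qed

lemma sg_pm: "sg W i = 1 \<or> sg W i = -1"
proof -
  have "\<And>u. (if i u = 2 then -1 else (1::int)) \<in> {-1, 1}" by simp
  have "(\<Prod>u\<in>W. if i u = 2 then -1 else (1::int)) \<in> {-1, 1}"
  proof (induction W rule: infinite_finite_induct)
    case (insert x F) thus ?case by auto
  qed auto
  thus ?thesis unfolding sg_def by auto
qed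

lemma sg_sq: "sg W i * sg W i = 1"
  using sg_pm[of W i] by auto

lemma sg_nz: "sg W i \<noteq> 0"
  using sg_pm[of W i] by auto

lemma sg_upd:
  assumes "finite W" "a \<in> W"
  shows "sg W (i(a := p)) = s2 p * sg (W - {a}) i"
proof -
  have "sg W (i(a := p)) = (if p = 2 then -1 else 1) * (\<Prod>u\<in>W - {a}. if (i(a := p)) u = 2 then -1 else 1)"
    unfolding sg_def using prod.remove[OF assms, of "\<lambda>u. if (i(a := p)) u = 2 then -1 else (1::int)"] by simp
  also have "(\<Prod>u\<in>W - {a}. if (i(a := p)) u = 2 then -1 else (1::int)) = sg (W - {a}) i"
    unfolding sg_def by (intro prod.cong refl) auto
  finally show ?thesis unfolding s2_def .
qed

lemma sg_upd_out: "a \<notin> W \<Longrightarrow> sg W (i(a := p)) = sg W i"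
  unfolding sg_def by (intro prod.cong refl) auto

lemma sg_upd2:
  assumes "finite W" "a \<in> W" "b \<in> W" "a \<noteq> b"
  shows "sg W (i(a := p, b := q)) = s2 p * s2 q * sg (W - {a, b}) i"
proof -
  have "sg W (i(a := p, b := q)) = s2 q * sg (W - {b}) (i(a := p))" using sg_upd[OF assms(1,3)] by simp
  also have "sg (W - {b}) (i(a := p)) = s2 p * sg (W - {b} - {a}) i" using sg_upd[of "W - {b}" a i p] assms by simp
  also have "W - {b} - {a} = W - {a, b}" by auto
  finally show ?thesis by (simp only: mult.assoc mult.left_commute)
qed

lemma s2_12: "s2 1 = 1" "s2 2 = -1" unfolding s2_def by simp_all

lemma alt4:
  fixes G H :: "nat \<Rightarrow> int"
  shows "(\<Sum>p\<in>{1..2::nat}. \<Sum>q\<in>{1..2::nat}. s2 p * s2 q * (G q + H p)) = 0"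
  unfolding sum_12 s2_12 by simp


definition ind :: "bool \<Rightarrow> int" where "ind b = (if b then 1 else 0)"

definition alt4 :: "(('a \<Rightarrow> nat) \<Rightarrow> int) \<Rightarrow> ('a \<Rightarrow> nat) \<Rightarrow> 'a \<Rightarrow> 'a \<Rightarrow> int" where
  "alt4 W i a b = W (i(a := 1, b := 1)) - W (i(a := 2, b := 1)) - W (i(a := 1, b := 2)) + W (i(a := 2, b := 2))"

lemma alt_gh: "((g1::int) + h1) - (g1 + h2) - (g2 + h1) + (g2 + h2) = 0" by simp

locale bin =
  fixes A B :: "'a set"
  assumes AB: "A \<inter> B = {}" and fA: "finite A" and fB: "finite B"
begin

abbreviation "d2 \<equiv> (\<lambda>_::'a. 2::nat)"
abbreviation "K \<equiv> cols_A (A \<union> B) d2"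

lemma fV: "finite (A \<union> B)" using fA fB by simp

lemma Dmn_sub: "Dmn A B \<subseteq> Pow (A \<union> B)" unfolding Dmn_char[OF AB] by auto

lemma d1: "\<forall>v\<in>A \<union> B. d2 v \<ge> 1" by simp

lemma kerv_alt:
  "kerv (A \<union> B) (Dmn A B) d2 z \<longleftrightarrow> (\<forall>i. i \<notin> K \<longrightarrow> z i = 0) \<and>
    (\<forall>i\<in>K. \<forall>a\<in>A. \<forall>b\<in>B. alt4 (\<lambda>i. sg (A \<union> B) i * z i) i a b = 0)"
proof -
  define SU where "SU = (\<lambda>i a b. \<Sum>p\<in>{1..2::nat}. \<Sum>q\<in>{1..2::nat}. z (i(a := p, b := q)))"
  have eq: "SU i a b = 0 \<longleftrightarrow> alt4 (\<lambda>i. sg (A \<union> B) i * z i) i a b = 0"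
    if a: "a \<in> A" and b: "b \<in> B" for i a b
  proof -
    have ab: "a \<noteq> b" using a b AB by blast
    define r where "r = sg (A \<union> B - {a, b}) i"
    have sgp: "\<And>p q. sg (A \<union> B) (i(a := p, b := q)) = s2 p * s2 q * r"
      unfolding r_def using sg_upd2[OF fV _ _ ab] a b by simp
    have r0: "r \<noteq> 0" unfolding r_def by (rule sg_nz)
    have "alt4 (\<lambda>i. sg (A \<union> B) i * z i) i a b = r * SU i a b"
      unfolding alt4_def SU_def sum_12 using sgp s2_12 by (simp add: algebra_simps)
    thus ?thesis using r0 by simp
  qed
  have "(\<forall>a\<in>A. \<forall>b\<in>B. \<forall>i\<in>K. SU i a b = 0) \<longleftrightarrow> (\<forall>i\<in>K. \<forall>a\<in>A. \<forall>b\<in>B. alt4 (\<lambda>i. sg (A \<union> B) i * z i) i a b = 0)"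
    using eq by blast
  thus ?thesis unfolding kerv_Dmn[OF AB fA fB d1] SU_def by simp
qed

lemma mg_AB_cols: "\<alpha> \<in> cols_A A d2 \<Longrightarrow> \<beta> \<in> cols_A B d2 \<Longrightarrow> mg A \<alpha> \<beta> \<in> K"
  by (rule mg_cols)

lemma ovr_mg_A: "ovr A (mg A \<alpha>' \<beta>') (mg A \<alpha> \<beta>) = mg A \<alpha>' \<beta>"
  unfolding ovr_def mg_def by (auto simp: fun_eq_iff)

lemma ovr_mg_B:
  assumes "\<beta> \<in> cols_A B d2" "\<beta>' \<in> cols_A B d2"
  shows "ovr B (mg A \<alpha>' \<beta>') (mg A \<alpha> \<beta>) = mg A \<alpha> \<beta>'"
proof
  fix x
  have e: "x \<notin> B \<Longrightarrow> \<beta> x = \<beta>' x" using assms unfolding cols_A_def by (auto simp: PiE_def extensional_def)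
  show "ovr B (mg A \<alpha>' \<beta>') (mg A \<alpha> \<beta>) x = mg A \<alpha> \<beta>' x"
    unfolding ovr_def mg_def using AB e by auto
qed

lemma rect_AB:
  assumes K: "kerv (A \<union> B) (Dmn A B) d2 z"
    and \<alpha>: "\<alpha> \<in> cols_A A d2" and \<beta>: "\<beta> \<in> cols_A B d2" and \<alpha>': "\<alpha>' \<in> cols_A A d2" and \<beta>': "\<beta>' \<in> cols_A B d2"
  shows "sg (A \<union> B) (mg A \<alpha> \<beta>) * z (mg A \<alpha> \<beta>) + sg (A \<union> B) (mg A \<alpha>' \<beta>') * z (mg A \<alpha>' \<beta>') =
         sg (A \<union> B) (mg A \<alpha>' \<beta>) * z (mg A \<alpha>' \<beta>) + sg (A \<union> B) (mg A \<alpha> \<beta>') * z (mg A \<alpha> \<beta>')"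
proof -
  have H4: "\<forall>i\<in>K. \<forall>a\<in>A. \<forall>b\<in>B. (\<lambda>i. sg (A \<union> B) i * z i) (i(a := 1, b := 1)) - (\<lambda>i. sg (A \<union> B) i * z i) (i(a := 2, b := 1))
      - (\<lambda>i. sg (A \<union> B) i * z i) (i(a := 1, b := 2)) + (\<lambda>i. sg (A \<union> B) i * z i) (i(a := 2, b := 2)) = 0"
    using K unfolding kerv_alt alt4_def by blast
  have "(\<lambda>i. sg (A \<union> B) i * z i) (mg A \<alpha> \<beta>) + (\<lambda>i. sg (A \<union> B) i * z i) (mg A \<alpha>' \<beta>') =
    (\<lambda>i. sg (A \<union> B) i * z i) (ovr A (mg A \<alpha>' \<beta>') (mg A \<alpha> \<beta>)) + (\<lambda>i. sg (A \<union> B) i * z i) (ovr B (mg A \<alpha>' \<beta>') (mg A \<alpha> \<beta>))"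
    by (rule rect[OF fV _ _ AB _ H4 mg_AB_cols[OF \<alpha> \<beta>] mg_AB_cols[OF \<alpha>' \<beta>']]) auto
  thus ?thesis unfolding ovr_mg_A ovr_mg_B[OF \<beta> \<beta>'] by simp
qed

lemma kerv_PQ:
  fixes P Q :: "('a \<Rightarrow> nat) \<Rightarrow> int"
  shows "kerv (A \<union> B) (Dmn A B) d2 (\<lambda>i. if i \<in> K then sg (A \<union> B) i * (P (restrict i B) + Q (restrict i A)) else 0)"
  unfolding kerv_alt
proof (intro conjI allI impI ballI)
  fix i assume "i \<notin> K" thus "(if i \<in> K then sg (A \<union> B) i * (P (restrict i B) + Q (restrict i A)) else 0) = 0" by simp
next
  fix i a b assume i: "i \<in> K" and a: "a \<in> A" and b: "b \<in> B"
  have ab: "a \<noteq> b" using a b AB by blast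
  have aV: "a \<in> A \<union> B" and bV: "b \<in> A \<union> B" using a b by auto
  have c: "\<And>p q. p \<in> {1..2} \<Longrightarrow> q \<in> {1..2} \<Longrightarrow> i(a := p, b := q) \<in> K"
    using upd_cols[OF upd_cols[OF i aV] bV] by simp
  have rB: "\<And>p q. restrict (i(a := p, b := q)) B = restrict (i(b := q)) B"
    using a AB by (auto simp: fun_eq_iff)
  have rA: "\<And>p q. restrict (i(a := p, b := q)) A = restrict (i(a := p)) A"
    using b AB by (auto simp: fun_eq_iff)
  have one: "\<And>p q. p \<in> {1..2} \<Longrightarrow> q \<in> {1..2} \<Longrightarrow>
    sg (A \<union> B) (i(a := p, b := q)) * (if i(a := p, b := q) \<in> K then sg (A \<union> B) (i(a := p, b := q)) *
      (P (restrict (i(a := p, b := q)) B) + Q (restrict (i(a := p, b := q)) A)) else 0)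
    = P (restrict (i(b := q)) B) + Q (restrict (i(a := p)) A)"
  proof -
    fix p q :: nat assume "p \<in> {1..2}" "q \<in> {1..2}"
    hence "i(a := p, b := q) \<in> K" using c by blast
    thus "?thesis p q" unfolding rB rA by (simp add: mult.assoc[symmetric] sg_sq)
  qed
  show "alt4 (\<lambda>i. sg (A \<union> B) i * (if i \<in> K then sg (A \<union> B) i * (P (restrict i B) + Q (restrict i A)) else 0)) i a b = 0"
  proof -
    have p1: "(1::nat) \<in> {1..2}" and p2: "(2::nat) \<in> {1..2}" by auto
    show ?thesis unfolding alt4_def one[OF p1 p1] one[OF p2 p1] one[OF p1 p2] one[OF p2 p2]
      by (rule alt_gh)
  qed
qed

end


lemma ind_vals: "ind b \<in> {0, 1}" unfolding ind_def by simp

lemma two_elems: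
  assumes "finite X" "card X \<ge> 2"
  obtains a1 a2 where "a1 \<in> X" "a2 \<in> X" "a1 \<noteq> a2"
proof -
  have "X \<noteq> {}" using assms by auto
  then obtain a1 where a1: "a1 \<in> X" by blast
  have "card (X - {a1}) \<ge> 1" using assms a1 by simp
  have "X - {a1} \<noteq> {}"
  proof
    assume e: "X - {a1} = {}"
    have "card (X - {a1}) = 0" unfolding e by simp
    thus False using \<open>card (X - {a1}) \<ge> 1\<close> by simp
  qed
  then obtain a2 where "a2 \<in> X - {a1}" by blast
  thus ?thesis using that a1 by blast
qed

lemma four_cols:
  assumes a1: "a1 \<in> X" and a2: "a2 \<in> X" and a12: "a1 \<noteq> a2"
  defines "e1 \<equiv> restrict (\<lambda>_. 1::nat) X"
  shows "e1 \<in> cols_A X (\<lambda>_. 2)" "e1(a1 := 2) \<in> cols_A X (\<lambda>_. 2)" "e1(a2 := 2) \<in> cols_A X (\<lambda>_. 2)"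
    "e1(a1 := 2, a2 := 2) \<in> cols_A X (\<lambda>_. 2)"
    "e1 \<noteq> e1(a1 := 2)" "e1 \<noteq> e1(a2 := 2)" "e1 \<noteq> e1(a1 := 2, a2 := 2)"
    "e1(a1 := 2) \<noteq> e1(a2 := 2)" "e1(a1 := 2) \<noteq> e1(a1 := 2, a2 := 2)" "e1(a2 := 2) \<noteq> e1(a1 := 2, a2 := 2)"
proof -
  have c: "e1 \<in> cols_A X (\<lambda>_. 2)" unfolding e1_def cols_A_def by auto
  show "e1 \<in> cols_A X (\<lambda>_. 2)" by (rule c)
  show "e1(a1 := 2) \<in> cols_A X (\<lambda>_. 2)" by (rule upd_cols[OF c a1]) simp
  show "e1(a2 := 2) \<in> cols_A X (\<lambda>_. 2)" by (rule upd_cols[OF c a2]) simp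
  show "e1(a1 := 2, a2 := 2) \<in> cols_A X (\<lambda>_. 2)" by (rule upd_cols[OF upd_cols[OF c a1] a2]) simp_all
  have v1: "e1 a1 = 1" "e1 a2 = 1" unfolding e1_def using a1 a2 by auto
  show "e1 \<noteq> e1(a1 := 2)"
  proof
    assume "e1 = e1(a1 := 2)"
    hence "e1 a1 = (e1(a1 := 2)) a1" by simp
    thus False using v1 a12 by simp
  qed
  show "e1 \<noteq> e1(a2 := 2)"
  proof
    assume "e1 = e1(a2 := 2)"
    hence "e1 a2 = (e1(a2 := 2)) a2" by simp
    thus False using v1 a12 by simp
  qed
  show "e1 \<noteq> e1(a1 := 2, a2 := 2)"
  proof
    assume "e1 = e1(a1 := 2, a2 := 2)"
    hence "e1 a1 = (e1(a1 := 2, a2 := 2)) a1" by simp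
    thus False using v1 a12 by simp
  qed
  show "e1(a1 := 2) \<noteq> e1(a2 := 2)"
  proof
    assume "e1(a1 := 2) = e1(a2 := 2)"
    hence "(e1(a1 := 2)) a1 = (e1(a2 := 2)) a1" by simp
    thus False using v1 a12 by simp
  qed
  show "e1(a1 := 2) \<noteq> e1(a1 := 2, a2 := 2)"
  proof
    assume "e1(a1 := 2) = e1(a1 := 2, a2 := 2)"
    hence "(e1(a1 := 2)) a2 = (e1(a1 := 2, a2 := 2)) a2" by simp
    thus False using v1 a12 by simp
  qed
  show "e1(a2 := 2) \<noteq> e1(a1 := 2, a2 := 2)"
  proof
    assume "e1(a2 := 2) = e1(a1 := 2, a2 := 2)"
    hence "(e1(a2 := 2)) a1 = (e1(a1 := 2, a2 := 2)) a1" by simp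
    thus False using v1 a12 by simp
  qed
qed

context bin begin

lemma Wform:
  assumes K: "kerv (A \<union> B) (Dmn A B) d2 z" and i0: "i0 \<in> K"
  defines "P \<equiv> (\<lambda>\<beta>. sg (A \<union> B) (mg A (restrict i0 A) \<beta>) * z (mg A (restrict i0 A) \<beta>) - sg (A \<union> B) i0 * z i0)"
    and "Q \<equiv> (\<lambda>\<alpha>. sg (A \<union> B) (mg A \<alpha> (restrict i0 B)) * z (mg A \<alpha> (restrict i0 B)))"
  shows "\<forall>i\<in>K. sg (A \<union> B) i * z i = P (restrict i B) + Q (restrict i A)"
proof
  fix i assume i: "i \<in> K"
  have a: "restrict i A \<in> cols_A A d2" and b: "restrict i B \<in> cols_A B d2"
    using restrict_cols_V[OF i] restrict_cols_U[OF i] by auto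
  have a0: "restrict i0 A \<in> cols_A A d2" and b0: "restrict i0 B \<in> cols_A B d2"
    using restrict_cols_V[OF i0] restrict_cols_U[OF i0] by auto
  have "mg A (restrict i0 A) (restrict i0 B) = i0" using mg_restrict[OF i0] .
  moreover have "mg A (restrict i A) (restrict i B) = i" using mg_restrict[OF i] .
  ultimately show "sg (A \<union> B) i * z i = P (restrict i B) + Q (restrict i A)"
    using rect_AB[OF K a b a0 b0] unfolding P_def Q_def by simp
qed

theorem PP_bin: "PP (A \<union> B) (Dmn A B) d2"
proof (rule PPI)
  fix z i1 assume K: "kerv (A \<union> B) (Dmn A B) d2 z" and zi1: "z i1 \<noteq> 0"
  have i1: "i1 \<in> K" using K zi1 unfolding kerv_def by blast
  define P where "P = (\<lambda>\<beta>. sg (A \<union> B) (mg A (restrict i1 A) \<beta>) * z (mg A (restrict i1 A) \<beta>) - sg (A \<union> B) i1 * z i1)"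
  define Q where "Q = (\<lambda>\<alpha>. sg (A \<union> B) (mg A \<alpha> (restrict i1 B)) * z (mg A \<alpha> (restrict i1 B)))"
  have W: "\<forall>i\<in>K. sg (A \<union> B) i * z i = P (restrict i B) + Q (restrict i A)"
    using Wform[OF K i1] unfolding P_def Q_def .
  define c where "c = P (restrict i1 B)"
  define y where "y = (\<lambda>i. if i \<in> K then sg (A \<union> B) i * ((\<lambda>\<beta>. ind (P \<beta> = c)) (restrict i B) +
     (\<lambda>\<alpha>. - ind (- Q \<alpha> = c)) (restrict i A)) else 0)"
  have "kerv (A \<union> B) (Dmn A B) d2 y" unfolding y_def by (rule kerv_PQ)
  moreover have "y i1 \<noteq> 0"
  proof -
    have "sg (A \<union> B) i1 * z i1 \<noteq> 0" using zi1 sg_nz by simp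
    hence "- Q (restrict i1 A) \<noteq> c" using W i1 unfolding c_def by auto
    thus ?thesis unfolding y_def using i1 sg_nz unfolding c_def ind_def by simp
  qed
  moreover have "\<forall>i. y i \<in> {-1,0,1}"
  proof
    fix i show "y i \<in> {-1,0,1}"
      unfolding y_def ind_def using sg_pm[of "A \<union> B" i] by auto
  qed
  moreover have "\<forall>i. y i \<noteq> 0 \<longrightarrow> z i \<noteq> 0"
  proof (intro allI impI)
    fix i assume yi: "y i \<noteq> 0"
    hence i: "i \<in> K" unfolding y_def by (simp split: if_splits)
    have "P (restrict i B) \<noteq> - Q (restrict i A)"
    proof
      assume "P (restrict i B) = - Q (restrict i A)"
      hence "y i = 0" unfolding y_def ind_def by simp
      thus False using yi by simp
    qed
    hence "sg (A \<union> B) i * z i \<noteq> 0" using W i by simp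
    thus "z i \<noteq> 0" by auto
  qed
  ultimately show "\<exists>y. kerv (A \<union> B) (Dmn A B) d2 y \<and> (\<exists>i. y i \<noteq> 0) \<and> (\<forall>i. y i \<in> {-1,0,1}) \<and> (\<forall>i. y i \<noteq> 0 \<longrightarrow> z i \<noteq> 0)"
    by blast
qed

definition pat :: "('a \<Rightarrow> nat) set \<Rightarrow> ('a \<Rightarrow> nat) set \<Rightarrow> ('a \<Rightarrow> nat) \<Rightarrow> int" where
  "pat S T = (\<lambda>i. if i \<in> K then sg (A \<union> B) i * ((\<lambda>\<beta>. ind (\<beta> \<in> S)) (restrict i B) + (\<lambda>\<alpha>. - ind (\<alpha> \<in> T)) (restrict i A)) else 0)"

lemma pat_kerv: "kerv (A \<union> B) (Dmn A B) d2 (pat S T)"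
  unfolding pat_def by (rule kerv_PQ)

lemma pat_pm1: "pat S T i \<in> {-1,0,1}"
  unfolding pat_def ind_def using sg_pm[of "A \<union> B" i] by auto

lemma pat_mg:
  assumes "\<alpha> \<in> cols_A A d2" "\<beta> \<in> cols_A B d2"
  shows "pat S T (mg A \<alpha> \<beta>) = sg (A \<union> B) (mg A \<alpha> \<beta>) * (ind (\<beta> \<in> S) - ind (\<alpha> \<in> T))"
  unfolding pat_def using mg_AB_cols[OF assms] restrict_mg_V[OF assms(1)] restrict_mg_U[OF AB assms(2)] by simp

lemma pat_rigid:
  assumes at: "\<alpha>t \<in> cols_A A d2" "\<alpha>t \<in> T" and ac: "\<alpha>c \<in> cols_A A d2" "\<alpha>c \<notin> T"
    and bs: "\<beta>s \<in> cols_A B d2" "\<beta>s \<in> S" and bc: "\<beta>c \<in> cols_A B d2" "\<beta>c \<notin> S"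
  shows "rigid (A \<union> B) (Dmn A B) d2 (pat S T)"
  unfolding rigid_def
proof (intro allI impI)
  fix w assume H: "kerv (A \<union> B) (Dmn A B) d2 w \<and> (\<forall>i. w i \<noteq> 0 \<longrightarrow> pat S T i \<noteq> 0)"
  have kw: "kerv (A \<union> B) (Dmn A B) d2 w" and sw: "\<forall>i. w i \<noteq> 0 \<longrightarrow> pat S T i \<noteq> 0" using H by auto
  define f where "f = (\<lambda>\<alpha> \<beta>. sg (A \<union> B) (mg A \<alpha> \<beta>) * w (mg A \<alpha> \<beta>))"
  have R: "\<And>\<alpha> \<beta> \<alpha>' \<beta>'. \<alpha> \<in> cols_A A d2 \<Longrightarrow> \<beta> \<in> cols_A B d2 \<Longrightarrow> \<alpha>' \<in> cols_A A d2 \<Longrightarrow> \<beta>' \<in> cols_A B d2 \<Longrightarrow>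
      f \<alpha> \<beta> + f \<alpha>' \<beta>' = f \<alpha>' \<beta> + f \<alpha> \<beta>'"
    unfolding f_def using rect_AB[OF kw] by blast
  have Z: "\<And>\<alpha> \<beta>. \<alpha> \<in> cols_A A d2 \<Longrightarrow> \<beta> \<in> cols_A B d2 \<Longrightarrow> (\<beta> \<in> S) = (\<alpha> \<in> T) \<Longrightarrow> f \<alpha> \<beta> = 0"
  proof -
    fix \<alpha> \<beta> assume a: "\<alpha> \<in> cols_A A d2" and b: "\<beta> \<in> cols_A B d2" and e: "(\<beta> \<in> S) = (\<alpha> \<in> T)"
    have "pat S T (mg A \<alpha> \<beta>) = 0" unfolding pat_mg[OF a b] ind_def using e by simp
    hence "w (mg A \<alpha> \<beta>) = 0" using sw by blast
    thus "f \<alpha> \<beta> = 0" unfolding f_def by simp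
  qed
  define c where "c = f \<alpha>c \<beta>s"
  have F: "\<And>\<alpha> \<beta>. \<alpha> \<in> cols_A A d2 \<Longrightarrow> \<beta> \<in> cols_A B d2 \<Longrightarrow> f \<alpha> \<beta> = c * (ind (\<beta> \<in> S) - ind (\<alpha> \<in> T))"
  proof -
    fix \<alpha> \<beta> assume a: "\<alpha> \<in> cols_A A d2" and b: "\<beta> \<in> cols_A B d2"
    show "f \<alpha> \<beta> = c * (ind (\<beta> \<in> S) - ind (\<alpha> \<in> T))"
    proof (cases "(\<beta> \<in> S) = (\<alpha> \<in> T)")
      case True thus ?thesis using Z[OF a b] unfolding ind_def by auto
    next
      case False
      show ?thesis
      proof (cases "\<beta> \<in> S")
        case True
        hence aT: "\<alpha> \<notin> T" using False by simp
        have "f \<alpha> \<beta> + f \<alpha>t \<beta>c = f \<alpha>t \<beta> + f \<alpha> \<beta>c" using R[OF a b at(1) bc(1)] .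
        moreover have "f \<alpha>t \<beta> = 0" using Z[OF at(1) b] True at(2) by simp
        moreover have "f \<alpha> \<beta>c = 0" using Z[OF a bc(1)] aT bc(2) by simp
        moreover have "f \<alpha>c \<beta>s + f \<alpha>t \<beta>c = f \<alpha>t \<beta>s + f \<alpha>c \<beta>c" using R[OF ac(1) bs(1) at(1) bc(1)] .
        moreover have "f \<alpha>t \<beta>s = 0" using Z[OF at(1) bs(1)] at(2) bs(2) by simp
        moreover have "f \<alpha>c \<beta>c = 0" using Z[OF ac(1) bc(1)] ac(2) bc(2) by simp
        ultimately show ?thesis unfolding c_def ind_def using True aT by simp
      next
        case F: False
        hence aT: "\<alpha> \<in> T" using False by simp
        have "f \<alpha> \<beta> + f \<alpha>c \<beta>s = f \<alpha>c \<beta> + f \<alpha> \<beta>s" using R[OF a b ac(1) bs(1)] .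
        moreover have "f \<alpha>c \<beta> = 0" using Z[OF ac(1) b] F ac(2) by simp
        moreover have "f \<alpha> \<beta>s = 0" using Z[OF a bs(1)] aT bs(2) by simp
        ultimately show ?thesis unfolding c_def ind_def using F aT by simp
      qed
    qed
  qed
  have "\<forall>i. w i = c * pat S T i"
  proof
    fix i show "w i = c * pat S T i"
    proof (cases "i \<in> K")
      case True
      have a: "restrict i A \<in> cols_A A d2" and b: "restrict i B \<in> cols_A B d2"
        using restrict_cols_V[OF True] restrict_cols_U[OF True] by auto
      have mi: "mg A (restrict i A) (restrict i B) = i" using mg_restrict[OF True] .
      have "sg (A \<union> B) i * w i = c * (ind (restrict i B \<in> S) - ind (restrict i A \<in> T))"
        using F[OF a b] unfolding f_def mi .
      hence "sg (A \<union> B) i * (sg (A \<union> B) i * w i) = sg (A \<union> B) i * (c * (ind (restrict i B \<in> S) - ind (restrict i A \<in> T)))"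
        by simp
      hence "w i = sg (A \<union> B) i * (c * (ind (restrict i B \<in> S) - ind (restrict i A \<in> T)))"
        by (simp add: mult.assoc[symmetric] sg_sq)
      thus ?thesis unfolding pat_def using True by (simp add: algebra_simps)
    next
      case False
      thus ?thesis using kerv_van[OF kw] unfolding pat_def by simp
    qed
  qed
  thus "\<exists>c. \<forall>i. w i = c * pat S T i" by blast
qed

theorem Inv_bin:
  assumes cA: "card A \<ge> 2" and cB: "card B \<ge> 2"
  shows "Inv (A \<union> B) (Dmn A B) d2"
proof -
  obtain a1 a2 where a: "a1 \<in> A" "a2 \<in> A" "a1 \<noteq> a2" using two_elems[OF fA cA] by blast
  obtain b1 b2 where b: "b1 \<in> B" "b2 \<in> B" "b1 \<noteq> b2" using two_elems[OF fB cB] by blast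
  define e where "e = restrict (\<lambda>_. 1::nat) A"
  define f where "f = restrict (\<lambda>_. 1::nat) B"
  define \<alpha>1 where "\<alpha>1 = e"
  define \<alpha>2 where "\<alpha>2 = e(a1 := 2)"
  define \<alpha>3 where "\<alpha>3 = e(a2 := 2)"
  define \<beta>1 where "\<beta>1 = f"
  define \<beta>2 where "\<beta>2 = f(b1 := 2)"
  define \<beta>3 where "\<beta>3 = f(b2 := 2)"
  note FA = four_cols[OF a, folded e_def]
  note FB = four_cols[OF b, folded f_def]
  have A1: "\<alpha>1 \<in> cols_A A d2" "\<alpha>2 \<in> cols_A A d2" "\<alpha>3 \<in> cols_A A d2"
    unfolding \<alpha>1_def \<alpha>2_def \<alpha>3_def using FA by auto
  have A2: "\<alpha>1 \<noteq> \<alpha>2" "\<alpha>1 \<noteq> \<alpha>3" "\<alpha>2 \<noteq> \<alpha>3" unfolding \<alpha>1_def \<alpha>2_def \<alpha>3_def using FA by auto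
  have B1: "\<beta>1 \<in> cols_A B d2" "\<beta>2 \<in> cols_A B d2" "\<beta>3 \<in> cols_A B d2"
    unfolding \<beta>1_def \<beta>2_def \<beta>3_def using FB by auto
  have B2: "\<beta>1 \<noteq> \<beta>2" "\<beta>1 \<noteq> \<beta>3" "\<beta>2 \<noteq> \<beta>3" unfolding \<beta>1_def \<beta>2_def \<beta>3_def using FB by auto
  define x where "x = pat {\<beta>1, \<beta>2} {\<alpha>1}"
  define y where "y = pat {\<beta>1} {\<alpha>1, \<alpha>2}"
  have rx: "rigid (A \<union> B) (Dmn A B) d2 x" unfolding x_def
    by (rule pat_rigid[where \<alpha>t=\<alpha>1 and \<alpha>c=\<alpha>2 and \<beta>s=\<beta>1 and \<beta>c=\<beta>3]) (use A1 A2 B1 B2 in auto)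
  have ry: "rigid (A \<union> B) (Dmn A B) d2 y" unfolding y_def
    by (rule pat_rigid[where \<alpha>t=\<alpha>1 and \<alpha>c=\<alpha>3 and \<beta>s=\<beta>1 and \<beta>c=\<beta>2]) (use A1 A2 B1 B2 in auto)
  have j1: "x (mg A \<alpha>3 \<beta>1) = sg (A \<union> B) (mg A \<alpha>3 \<beta>1)" "y (mg A \<alpha>3 \<beta>1) = sg (A \<union> B) (mg A \<alpha>3 \<beta>1)"
    unfolding x_def y_def pat_mg[OF A1(3) B1(1)] ind_def using A2 B2 by auto
  have k1: "x (mg A \<alpha>2 \<beta>2) = sg (A \<union> B) (mg A \<alpha>2 \<beta>2)" "y (mg A \<alpha>2 \<beta>2) = - sg (A \<union> B) (mg A \<alpha>2 \<beta>2)"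
    unfolding x_def y_def pat_mg[OF A1(2) B1(2)] ind_def using A2 B2 by auto
  have kx: "kerv (A \<union> B) (Dmn A B) d2 x" and ky: "kerv (A \<union> B) (Dmn A B) d2 y"
    unfolding x_def y_def by (rule pat_kerv)+
  have px: "\<forall>i. x i \<in> {-1,0,1}" and py: "\<forall>i. y i \<in> {-1,0,1}"
    unfolding x_def y_def using pat_pm1 by blast+
  have ag: "\<exists>j. x j = y j \<and> x j \<noteq> 0" using j1 sg_nz by metis
  have dg: "\<exists>k. x k = - y k \<and> x k \<noteq> 0" using k1 sg_nz by (metis minus_minus)
  show ?thesis unfolding Inv_def
    by (intro exI[of _ x] exI[of _ y] conjI kx ky rx ry px py ag dg)
qed

end


locale ter = bin +
  fixes v :: 'a
  assumes vA: "v \<in> A"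
begin

abbreviation "A' \<equiv> A - {v}"
abbreviation "d3 \<equiv> (\<lambda>u::'a. if u = v then 3 else 2::nat)"
abbreviation "K3 \<equiv> cols_A (A \<union> B) d3"
abbreviation "W0 \<equiv> A \<union> B - {v}"

definition col3 :: "nat \<Rightarrow> ('a \<Rightarrow> nat) \<Rightarrow> ('a \<Rightarrow> nat) \<Rightarrow> ('a \<Rightarrow> nat)" where
  "col3 k \<alpha> \<beta> = (\<lambda>u. if u = v then k else if u \<in> A' then \<alpha> u else \<beta> u)"

lemma vB: "v \<notin> B" using vA AB by blast

lemma cA'_d3: "cols_A A' d3 = cols_A A' d2"
  by (rule cols_cong) auto

lemma cB_d3: "cols_A B d3 = cols_A B d2"
  by (rule cols_cong) (use vB in auto)

lemma col3_K3:
  assumes k: "k \<in> {1..3}" and a: "\<alpha> \<in> cols_A A' d2" and b: "\<beta> \<in> cols_A B d2"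
  shows "col3 k \<alpha> \<beta> \<in> K3"
  using k a b vA vB unfolding col3_def cols_A_def by (auto simp: PiE_def Pi_def extensional_def)

lemma col3_v: "col3 k \<alpha> \<beta> v = k" unfolding col3_def by simp

lemma col3_rA: "\<alpha> \<in> cols_A A' d2 \<Longrightarrow> restrict (col3 k \<alpha> \<beta>) A' = \<alpha>"
  unfolding col3_def cols_A_def by (auto simp: fun_eq_iff PiE_def extensional_def)

lemma col3_rB: "\<beta> \<in> cols_A B d2 \<Longrightarrow> restrict (col3 k \<alpha> \<beta>) B = \<beta>"
  unfolding col3_def cols_A_def using AB vB by (auto simp: fun_eq_iff PiE_def extensional_def)

lemma K3_parts:
  assumes i: "i \<in> K3"
  shows "i v \<in> {1..3}" "restrict i A' \<in> cols_A A' d2" "restrict i B \<in> cols_A B d2"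
    "col3 (i v) (restrict i A') (restrict i B) = i"
proof -
  show "i v \<in> {1..3}" using i vA unfolding cols_A_def by force
  have "restrict i A' \<in> cols_A A' d3" using i unfolding cols_A_def by auto
  thus "restrict i A' \<in> cols_A A' d2" using cA'_d3 by simp
  have "restrict i B \<in> cols_A B d3" using i unfolding cols_A_def by auto
  thus "restrict i B \<in> cols_A B d2" using cB_d3 by simp
  have ie: "\<And>x. x \<notin> A \<union> B \<Longrightarrow> i x = undefined" using i unfolding cols_A_def by (auto simp: PiE_def extensional_def)
  show "col3 (i v) (restrict i A') (restrict i B) = i"
  proof
    fix x show "col3 (i v) (restrict i A') (restrict i B) x = i x"
      unfolding col3_def using ie by auto
  qed
qed

lemma col3_upd_v: "(col3 k \<alpha> \<beta>)(v := p) = col3 p \<alpha> \<beta>"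
  unfolding col3_def by (auto simp: fun_eq_iff)

lemma ovr_col3_A: "ovr A' (col3 k \<alpha>' \<beta>') (col3 k \<alpha> \<beta>) = col3 k \<alpha>' \<beta>"
  unfolding ovr_def col3_def by (auto simp: fun_eq_iff)

lemma ovr_col3_B:
  assumes "\<beta> \<in> cols_A B d2" "\<beta>' \<in> cols_A B d2"
  shows "ovr B (col3 k \<alpha>' \<beta>') (col3 k \<alpha> \<beta>) = col3 k \<alpha> \<beta>'"
proof
  fix x
  have e: "x \<notin> B \<Longrightarrow> \<beta> x = \<beta>' x" using assms unfolding cols_A_def by (auto simp: PiE_def extensional_def)
  show "ovr B (col3 k \<alpha>' \<beta>') (col3 k \<alpha> \<beta>) x = col3 k \<alpha> \<beta>' x"
    unfolding ovr_def col3_def using AB vB e by auto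
qed

lemma d3_1: "\<forall>u\<in>A \<union> B. d3 u \<ge> 1" by simp

lemma fW0: "finite W0" using fV by simp

lemma sgt_upd2:
  assumes a: "a \<in> A'" and b: "b \<in> B"
  shows "sg W0 (i(a := p, b := q)) = s2 p * s2 q * sg (W0 - {a, b}) i"
proof -
  have "a \<noteq> b" using a b AB by blast
  thus ?thesis using sg_upd2[OF fW0, of a b i p q] a b vB by auto
qed

lemma sgt_updv:
  assumes b: "b \<in> B"
  shows "sg W0 (i(v := p, b := q)) = s2 q * sg (W0 - {b}) i"
proof -
  have bv: "b \<noteq> v" using b vB by blast
  have "i(v := p, b := q) = (i(b := q))(v := p)" using bv by (simp add: fun_upd_twist)
  hence "sg W0 (i(v := p, b := q)) = sg W0 (i(b := q))" using sg_upd_out[of v W0] by simp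
  also have "\<dots> = s2 q * sg (W0 - {b}) i" using sg_upd[OF fW0, of b i q] b bv by simp
  finally show ?thesis .
qed

lemma K3_upd: "i \<in> K3 \<Longrightarrow> a \<in> A \<union> B \<Longrightarrow> p \<in> {1..d3 a} \<Longrightarrow> i(a := p) \<in> K3"
  by (rule upd_cols)

lemma kerv_HG:
  fixes H G :: "nat \<Rightarrow> ('a \<Rightarrow> nat) \<Rightarrow> int"
  assumes G0: "\<And>\<beta>. G 1 \<beta> + G 2 \<beta> + G 3 \<beta> = 0"
  shows "kerv (A \<union> B) (Dmn A B) d3 (\<lambda>i. if i \<in> K3 then sg W0 i * (H (i v) (restrict i A') + G (i v) (restrict i B)) else 0)"
  unfolding kerv_Dmn[OF AB fA fB d3_1]
proof (intro conjI allI impI ballI)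
  fix i assume "i \<notin> K3"
  thus "(if i \<in> K3 then sg W0 i * (H (i v) (restrict i A') + G (i v) (restrict i B)) else 0) = 0" by simp
next
  fix a b i assume a: "a \<in> A" and b: "b \<in> B" and i: "i \<in> K3"
  have bv: "b \<noteq> v" using b vB by blast
  have ab: "a \<noteq> b" using a b AB by blast
  have aV: "a \<in> A \<union> B" and bV: "b \<in> A \<union> B" using a b by auto
  define z where "z = (\<lambda>i. if i \<in> K3 then sg W0 i * (H (i v) (restrict i A') + G (i v) (restrict i B)) else 0)"
  have inK: "\<And>p q. p \<in> {1..d3 a} \<Longrightarrow> q \<in> {1..d3 b} \<Longrightarrow> i(a := p, b := q) \<in> K3"
    using K3_upd[OF K3_upd[OF i aV] bV] by simp
  have rA: "\<And>p q. restrict (i(a := p, b := q)) A' = (if a = v then restrict i A' else restrict (i(a := p)) A')"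
    using b AB by (auto simp: fun_eq_iff)
  have rB: "\<And>p q. restrict (i(a := p, b := q)) B = restrict (i(b := q)) B"
    using a AB by (auto simp: fun_eq_iff)
  show "(\<Sum>p\<in>{1..d3 a}. \<Sum>q\<in>{1..d3 b}. z (i(a := p, b := q))) = 0"
  proof (cases "a = v")
    case False
    hence aA': "a \<in> A'" using a by simp
    have d: "d3 a = 2" "d3 b = 2" using False bv by auto
    define r where "r = sg (W0 - {a, b}) i"
    have one: "z (i(a := p, b := q)) = s2 p * s2 q * r * (H (i v) (restrict (i(a := p)) A') + G (i v) (restrict (i(b := q)) B))"
      if p: "p \<in> {1..2}" and q: "q \<in> {1..2}" for p q
    proof -
      have "i(a := p, b := q) \<in> K3" using inK p q d by simp
      moreover have "(i(a := p, b := q)) v = i v" using False bv by simp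
      ultimately show ?thesis unfolding z_def r_def using sgt_upd2[OF aA' b] rA rB False by simp
    qed
    have p1: "(1::nat) \<in> {1..2}" and p2: "(2::nat) \<in> {1..2}" by auto
    show ?thesis unfolding d sum_12 one[OF p1 p1] one[OF p1 p2] one[OF p2 p1] one[OF p2 p2] s2_12
      by (simp add: algebra_simps)
  next
    case True
    have d: "d3 a = 3" "d3 b = 2" using True bv by auto
    define r where "r = sg (W0 - {b}) i"
    have one: "z (i(a := p, b := q)) = s2 q * r * (H p (restrict i A') + G p (restrict (i(b := q)) B))"
      if p: "p \<in> {1..3}" and q: "q \<in> {1..2}" for p q
    proof -
      have "i(a := p, b := q) \<in> K3" using inK p q d by simp
      moreover have "(i(a := p, b := q)) v = p" using True bv by simp
      ultimately show ?thesis unfolding z_def r_def using sgt_updv[OF b] rA rB True by simp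
    qed
    have q1: "(1::nat) \<in> {1..2}" and q2: "(2::nat) \<in> {1..2}" by auto
    have p1: "(1::nat) \<in> {1..3}" and p2: "(2::nat) \<in> {1..3}" and p3: "(3::nat) \<in> {1..3}" by auto
    have s: "(\<Sum>q\<in>{1..2}. z (i(a := p, b := q))) = r * (G p (restrict (i(b := 1)) B) - G p (restrict (i(b := 2)) B))"
      if p: "p \<in> {1..3}" for p
      unfolding sum_12 one[OF p q1] one[OF p q2] s2_12 by (simp add: algebra_simps)
    have "(\<Sum>p\<in>{1..3}. \<Sum>q\<in>{1..2}. z (i(a := p, b := q))) =
      r * ((G 1 (restrict (i(b := 1)) B) + G 2 (restrict (i(b := 1)) B) + G 3 (restrict (i(b := 1)) B))
         - (G 1 (restrict (i(b := 2)) B) + G 2 (restrict (i(b := 2)) B) + G 3 (restrict (i(b := 2)) B)))"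
      unfolding sum_123 s[OF p1] s[OF p2] s[OF p3] by (simp add: algebra_simps)
    also have "\<dots> = 0" using G0 by simp
    finally show ?thesis unfolding d .
  qed
qed

lemma kerv3_alt:
  assumes K: "kerv (A \<union> B) (Dmn A B) d3 y" and i: "i \<in> K3" and a: "a \<in> A'" and b: "b \<in> B"
  shows "alt4 (\<lambda>i. sg W0 i * y i) i a b = 0"
proof -
  have aA: "a \<in> A" using a by simp
  have av: "a \<noteq> v" and bv: "b \<noteq> v" using a b vB by auto
  have d: "d3 a = 2" "d3 b = 2" using av bv by auto
  have S0: "(\<Sum>p\<in>{1..d3 a}. \<Sum>q\<in>{1..d3 b}. y (i(a := p, b := q))) = 0"
    using K aA b i unfolding kerv_Dmn[OF AB fA fB d3_1] by blast
  have S: "(\<Sum>p\<in>{1..2::nat}. \<Sum>q\<in>{1..2::nat}. y (i(a := p, b := q))) = 0"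
    using S0 av bv by simp
  define r where "r = sg (W0 - {a, b}) i"
  have r0: "r \<noteq> 0" unfolding r_def by (rule sg_nz)
  have sgp: "\<And>p q. sg W0 (i(a := p, b := q)) = s2 p * s2 q * r" unfolding r_def using sgt_upd2[OF a b] by simp
  have "alt4 (\<lambda>i. sg W0 i * y i) i a b = r * (\<Sum>p\<in>{1..2::nat}. \<Sum>q\<in>{1..2::nat}. y (i(a := p, b := q)))"
    unfolding alt4_def sum_12 sgp s2_12 by (simp add: algebra_simps)
  thus ?thesis using S by simp
qed

lemma kerv3_sum:
  assumes K: "kerv (A \<union> B) (Dmn A B) d3 y" and i: "i \<in> K3" and b: "b \<in> B"
  shows "(\<Sum>p\<in>{1..3::nat}. sg W0 (i(v := p, b := 1)) * y (i(v := p, b := 1))) =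
         (\<Sum>p\<in>{1..3::nat}. sg W0 (i(v := p, b := 2)) * y (i(v := p, b := 2)))"
proof -
  have bv: "b \<noteq> v" using b vB by auto
  have d: "d3 v = 3" "d3 b = 2" using bv by auto
  have S0: "(\<Sum>p\<in>{1..d3 v}. \<Sum>q\<in>{1..d3 b}. y (i(v := p, b := q))) = 0"
    using K vA b i unfolding kerv_Dmn[OF AB fA fB d3_1] by blast
  have S: "(\<Sum>p\<in>{1..3::nat}. \<Sum>q\<in>{1..2::nat}. y (i(v := p, b := q))) = 0"
    using S0 bv by simp
  define r where "r = sg (W0 - {b}) i"
  have r0: "r \<noteq> 0" unfolding r_def by (rule sg_nz)
  have sgp: "\<And>p q. sg W0 (i(v := p, b := q)) = s2 q * r" unfolding r_def using sgt_updv[OF b] by simp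
  have "(\<Sum>p\<in>{1..3::nat}. sg W0 (i(v := p, b := 1)) * y (i(v := p, b := 1))) -
        (\<Sum>p\<in>{1..3::nat}. sg W0 (i(v := p, b := 2)) * y (i(v := p, b := 2))) =
        r * (\<Sum>p\<in>{1..3::nat}. \<Sum>q\<in>{1..2::nat}. y (i(v := p, b := q)))"
    unfolding sum_12 sum_123 sgp s2_12 by (simp add: algebra_simps)
  thus ?thesis using S by simp
qed

end


context ter begin

theorem not_PP_ter:
  assumes cA: "card A \<ge> 2" and cB: "card B \<ge> 2"
  shows "\<not> PP (A \<union> B) (Dmn A B) d3"
proof
  assume P: "PP (A \<union> B) (Dmn A B) d3"
  obtain a1 a2 where a12: "a1 \<in> A" "a2 \<in> A" "a1 \<noteq> a2" using two_elems[OF fA cA] by blast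
  obtain a0 where a0: "a0 \<in> A'" using a12 by (cases "a1 = v") auto
  obtain b1 b2 where b: "b1 \<in> B" "b2 \<in> B" "b1 \<noteq> b2" using two_elems[OF fB cB] by blast
  define \<alpha>0 where "\<alpha>0 = restrict (\<lambda>_. 1::nat) A'"
  define \<alpha>1 where "\<alpha>1 = \<alpha>0(a0 := 2)"
  have ca0: "\<alpha>0 \<in> cols_A A' d2" unfolding \<alpha>0_def cols_A_def by auto
  have ca1: "\<alpha>1 \<in> cols_A A' d2" unfolding \<alpha>1_def by (rule upd_cols[OF ca0 a0]) simp
  have a01: "\<alpha>1 \<noteq> \<alpha>0"
  proof
    assume "\<alpha>1 = \<alpha>0"
    hence "\<alpha>1 a0 = \<alpha>0 a0" by simp
    thus False unfolding \<alpha>1_def \<alpha>0_def using a0 by simp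
  qed
  define f0 where "f0 = restrict (\<lambda>_. 1::nat) B"
  define p0 where "p0 = f0"
  define p1 where "p1 = f0(b1 := 2)"
  define q where "q = f0(b2 := 2)"
  define r where "r = f0(b1 := 2, b2 := 2)"
  note FB = four_cols[OF b, folded f0_def]
  have cb: "p0 \<in> cols_A B d2" "p1 \<in> cols_A B d2" "q \<in> cols_A B d2" "r \<in> cols_A B d2"
    unfolding p0_def p1_def q_def r_def using FB by auto
  have dB: "p0 \<noteq> p1" "p0 \<noteq> q" "p0 \<noteq> r" "p1 \<noteq> q" "p1 \<noteq> r" "q \<noteq> r"
    unfolding p0_def p1_def q_def r_def using FB by auto
  define H where "H = (\<lambda>(k::nat) \<alpha>. if k = 3 then - ind (\<alpha> \<noteq> \<alpha>0) else ind (\<alpha> = \<alpha>0))"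
  define G where "G = (\<lambda>(k::nat) \<beta>. if k = 1 then - ind (\<beta> = p1) - ind (\<beta> = q)
     else if k = 2 then - ind (\<beta> = p1) - ind (\<beta> = r) else 2 * ind (\<beta> = p1) + ind (\<beta> = q) + ind (\<beta> = r))"
  have G0: "\<And>\<beta>. G 1 \<beta> + G 2 \<beta> + G 3 \<beta> = 0" unfolding G_def by simp
  define z where "z = (\<lambda>i. if i \<in> K3 then sg W0 i * (H (i v) (restrict i A') + G (i v) (restrict i B)) else 0)"
  have kz: "kerv (A \<union> B) (Dmn A B) d3 z" unfolding z_def by (rule kerv_HG[OF G0])
  have zc: "z (col3 k \<alpha> \<beta>) = sg W0 (col3 k \<alpha> \<beta>) * (H k \<alpha> + G k \<beta>)"
    if k: "k \<in> {1..3}" and a: "\<alpha> \<in> cols_A A' d2" and bb: "\<beta> \<in> cols_A B d2" for k \<alpha> \<beta>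
    unfolding z_def using col3_K3[OF k a bb] col3_v col3_rA[OF a] col3_rB[OF bb] by simp
  have k1: "(1::nat) \<in> {1..3}" and k2: "(2::nat) \<in> {1..3}" and k3: "(3::nat) \<in> {1..3}" by auto
  have "z (col3 3 \<alpha>0 p1) \<noteq> 0"
    unfolding zc[OF k3 ca0 cb(2)] using sg_nz dB unfolding H_def G_def ind_def by simp
  then obtain y where ky: "kerv (A \<union> B) (Dmn A B) d3 y" and ny: "\<exists>i. y i \<noteq> 0"
    and py: "\<forall>i. y i \<in> {-1,0,1}" and sy: "\<forall>i. y i \<noteq> 0 \<longrightarrow> z i \<noteq> 0"
    using PPE[OF P kz] by blast
  define f where "f = (\<lambda>k \<alpha> \<beta>. sg W0 (col3 k \<alpha> \<beta>) * y (col3 k \<alpha> \<beta>))"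
  have H4: "\<forall>i\<in>K3. \<forall>a\<in>A'. \<forall>b\<in>B. (\<lambda>i. sg W0 i * y i) (i(a := 1, b := 1)) - (\<lambda>i. sg W0 i * y i) (i(a := 2, b := 1))
      - (\<lambda>i. sg W0 i * y i) (i(a := 1, b := 2)) + (\<lambda>i. sg W0 i * y i) (i(a := 2, b := 2)) = 0"
    using kerv3_alt[OF ky] unfolding alt4_def by blast
  have R: "f k \<alpha> \<beta> + f k \<alpha>' \<beta>' = f k \<alpha>' \<beta> + f k \<alpha> \<beta>'"
    if k: "k \<in> {1..3}" and a: "\<alpha> \<in> cols_A A' d2" and bb: "\<beta> \<in> cols_A B d2"
      and a': "\<alpha>' \<in> cols_A A' d2" and bb': "\<beta>' \<in> cols_A B d2" for k \<alpha> \<beta> \<alpha>' \<beta>'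
  proof -
    have "(\<lambda>i. sg W0 i * y i) (col3 k \<alpha> \<beta>) + (\<lambda>i. sg W0 i * y i) (col3 k \<alpha>' \<beta>') =
      (\<lambda>i. sg W0 i * y i) (ovr A' (col3 k \<alpha>' \<beta>') (col3 k \<alpha> \<beta>)) + (\<lambda>i. sg W0 i * y i) (ovr B (col3 k \<alpha>' \<beta>') (col3 k \<alpha> \<beta>))"
    proof (rule rect[OF fV _ _ _ _ H4 col3_K3[OF k a bb] col3_K3[OF k a' bb']])
      show "A' \<subseteq> A \<union> B" by auto
      show "B \<subseteq> A \<union> B" by auto
      show "A' \<inter> B = {}" using AB by auto
      show "\<forall>u\<in>A' \<union> B. d3 u = 2" using vB by auto
      show "\<forall>u\<in>A \<union> B - (A' \<union> B). col3 k \<alpha> \<beta> u = col3 k \<alpha>' \<beta>' u" unfolding col3_def by auto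
    qed
    thus ?thesis unfolding f_def ovr_col3_A ovr_col3_B[OF bb bb'] by simp
  qed
  define T where "T = (\<lambda>i. \<Sum>p\<in>{1..3::nat}. sg W0 (i(v := p)) * y (i(v := p)))"
  have Tflip: "\<forall>i\<in>K3. \<forall>b\<in>B. T (i(b := 1)) = T (i(b := 2))"
  proof (intro ballI)
    fix i b assume i: "i \<in> K3" and bB: "b \<in> B"
    have bv: "b \<noteq> v" using bB vB by blast
    have e: "\<And>p q. i(b := q, v := p) = i(v := p, b := q)" using bv by (simp add: fun_upd_twist)
    show "T (i(b := 1)) = T (i(b := 2))" unfolding T_def e using kerv3_sum[OF ky i bB] by simp
  qed
  have S: "f 1 \<alpha> \<beta> + f 2 \<alpha> \<beta> + f 3 \<alpha> \<beta> = f 1 \<alpha> \<beta>' + f 2 \<alpha> \<beta>' + f 3 \<alpha> \<beta>'"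
    if a: "\<alpha> \<in> cols_A A' d2" and bb: "\<beta> \<in> cols_A B d2" and bb': "\<beta>' \<in> cols_A B d2" for \<alpha> \<beta> \<beta>'
  proof -
    have "T (col3 1 \<alpha> \<beta>) = T (ovr B (col3 1 \<alpha> \<beta>') (col3 1 \<alpha> \<beta>))"
      by (rule conn[OF fB _ _ Tflip col3_K3[OF k1 a bb] col3_K3[OF k1 a bb']]) (use vB in auto)
    hence "T (col3 1 \<alpha> \<beta>) = T (col3 1 \<alpha> \<beta>')" unfolding ovr_col3_B[OF bb bb'] .
    thus ?thesis unfolding T_def col3_upd_v sum_123 f_def .
  qed
  have Z: "f k \<alpha> \<beta> = 0" if k: "k \<in> {1..3}" and a: "\<alpha> \<in> cols_A A' d2" and bb: "\<beta> \<in> cols_A B d2"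
    and h: "H k \<alpha> + G k \<beta> = 0" for k \<alpha> \<beta>
  proof -
    have "z (col3 k \<alpha> \<beta>) = 0" unfolding zc[OF k a bb] h by simp
    hence "y (col3 k \<alpha> \<beta>) = 0" using sy by blast
    thus ?thesis unfolding f_def by simp
  qed
  have pm: "f k \<alpha> \<beta> \<in> {-1,0,1}" for k \<alpha> \<beta>
    unfolding f_def using sg_pm[of W0 "col3 k \<alpha> \<beta>"] py by (cases "sg W0 (col3 k \<alpha> \<beta>) = 1") auto
  note Hs = H_def G_def ind_def
  have Z1a: "f 1 \<alpha>0 p1 = 0" by (rule Z[OF k1 ca0 cb(2)]) (use dB in \<open>simp add: Hs\<close>)
  have Z1b: "f 1 \<alpha>0 q = 0" by (rule Z[OF k1 ca0 cb(3)]) (use dB in \<open>simp add: Hs\<close>)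
  have Z1c: "f 1 \<alpha> \<beta> = 0" if a: "\<alpha> \<in> cols_A A' d2" "\<alpha> \<noteq> \<alpha>0" and bb: "\<beta> \<in> cols_A B d2" "\<beta> \<noteq> p1" "\<beta> \<noteq> q" for \<alpha> \<beta>
    by (rule Z[OF k1 a(1) bb(1)]) (use a bb in \<open>simp add: Hs\<close>)
  have Z2a: "f 2 \<alpha>0 p1 = 0" by (rule Z[OF k2 ca0 cb(2)]) (use dB in \<open>simp add: Hs\<close>)
  have Z2b: "f 2 \<alpha>0 r = 0" by (rule Z[OF k2 ca0 cb(4)]) (use dB in \<open>simp add: Hs\<close>)
  have Z2c: "f 2 \<alpha> \<beta> = 0" if a: "\<alpha> \<in> cols_A A' d2" "\<alpha> \<noteq> \<alpha>0" and bb: "\<beta> \<in> cols_A B d2" "\<beta> \<noteq> p1" "\<beta> \<noteq> r" for \<alpha> \<beta>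
    by (rule Z[OF k2 a(1) bb(1)]) (use a bb in \<open>simp add: Hs\<close>)
  have Z3a: "f 3 \<alpha>0 \<beta> = 0" if bb: "\<beta> \<in> cols_A B d2" "\<beta> \<noteq> p1" "\<beta> \<noteq> q" "\<beta> \<noteq> r" for \<beta>
    by (rule Z[OF k3 ca0 bb(1)]) (use bb in \<open>simp add: Hs\<close>)
  have Z3b: "f 3 \<alpha> q = 0" if a: "\<alpha> \<in> cols_A A' d2" "\<alpha> \<noteq> \<alpha>0" for \<alpha>
    by (rule Z[OF k3 a(1) cb(3)]) (use a dB in \<open>simp add: Hs\<close>)
  have Z3c: "f 3 \<alpha> r = 0" if a: "\<alpha> \<in> cols_A A' d2" "\<alpha> \<noteq> \<alpha>0" for \<alpha>
    by (rule Z[OF k3 a(1) cb(4)]) (use a dB in \<open>simp add: Hs\<close>)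
  define lam where "lam = f 1 \<alpha>0 p0"
  define mu where "mu = f 2 \<alpha>0 p0"
  define nu where "nu = f 3 \<alpha>0 q"
  define pi where "pi = f 3 \<alpha>0 p1"
  have i: "f 1 \<alpha>1 p1 = - lam"
    using R[OF k1 ca0 cb(1) ca1 cb(2)] Z1c[OF ca1 a01 cb(1)] Z1a dB unfolding lam_def by simp
  have ii: "f 1 \<alpha>0 r = lam"
    using R[OF k1 ca0 cb(4) ca1 cb(2)] Z1c[OF ca1 a01 cb(4)] Z1a dB i by simp
  have iii: "f 2 \<alpha>1 p1 = - mu"
    using R[OF k2 ca0 cb(1) ca1 cb(2)] Z2c[OF ca1 a01 cb(1)] Z2a dB unfolding mu_def by simp
  have iv: "f 2 \<alpha>0 q = mu"
    using R[OF k2 ca0 cb(3) ca1 cb(2)] Z2c[OF ca1 a01 cb(3)] Z2a dB iii by simp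
  have v: "f 3 \<alpha>0 r = nu"
    using R[OF k3 ca0 cb(4) ca1 cb(3)] Z3b[OF ca1 a01] Z3c[OF ca1 a01] unfolding nu_def by simp
  have s1: "lam + mu = mu + nu"
    using S[OF ca0 cb(1) cb(3)] Z3a[OF cb(1)] Z1b iv dB unfolding lam_def mu_def nu_def by simp
  have s2: "lam + mu = lam + nu"
    using S[OF ca0 cb(1) cb(4)] Z3a[OF cb(1)] Z2b ii v dB unfolding lam_def mu_def by simp
  have s3: "lam + mu = pi"
    using S[OF ca0 cb(1) cb(2)] Z3a[OF cb(1)] Z1a Z2a dB unfolding lam_def mu_def pi_def by simp
  have "pi \<in> {-1,0,1}" unfolding pi_def by (rule pm)
  hence l0: "lam = 0" using s1 s2 s3 by auto
  hence m0: "mu = 0" and n0: "nu = 0" and p0': "pi = 0" using s1 s2 s3 by auto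
  have all0: "f k \<alpha> \<beta> = 0" if k: "k \<in> {1..3}" and a: "\<alpha> \<in> cols_A A' d2" and bb: "\<beta> \<in> cols_A B d2" for k \<alpha> \<beta>
  proof -
    have "k = 1 \<or> k = 2 \<or> k = 3" using k by auto
    moreover
    { assume k1': "k = 1"
      have ?thesis
      proof (cases "\<alpha> = \<alpha>0")
        case True
        show ?thesis
        proof (cases "\<beta> = p1 \<or> \<beta> = q")
          case True thus ?thesis using Z1a Z1b k1' \<open>\<alpha> = \<alpha>0\<close> by auto
        next
          case False
          have "f 1 \<alpha>0 \<beta> + f 1 \<alpha>1 p1 = f 1 \<alpha>1 \<beta> + f 1 \<alpha>0 p1" using R[OF k1 ca0 bb ca1 cb(2)] .
          thus ?thesis using Z1c[OF ca1 a01 bb] False Z1a i l0 k1' True by simp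
        qed
      next
        case False
        show ?thesis
        proof (cases "\<beta> = p1 \<or> \<beta> = q")
          case True
          have "f 1 \<alpha> \<beta> + f 1 \<alpha>0 p0 = f 1 \<alpha>0 \<beta> + f 1 \<alpha> p0" using R[OF k1 a bb ca0 cb(1)] .
          moreover have "f 1 \<alpha>0 \<beta> = 0" using True Z1a Z1b by auto
          moreover have "f 1 \<alpha> p0 = 0" using Z1c[OF a False cb(1)] dB by simp
          ultimately show ?thesis using l0 k1' unfolding lam_def by simp
        next
          case F2: False thus ?thesis using Z1c[OF a False bb] k1' by simp
        qed
      qed }
    moreover
    { assume k2': "k = 2"
      have ?thesis
      proof (cases "\<alpha> = \<alpha>0")
        case True
        show ?thesis
        proof (cases "\<beta> = p1 \<or> \<beta> = r")
          case True thus ?thesis using Z2a Z2b k2' \<open>\<alpha> = \<alpha>0\<close> by auto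
        next
          case False
          have "f 2 \<alpha>0 \<beta> + f 2 \<alpha>1 p1 = f 2 \<alpha>1 \<beta> + f 2 \<alpha>0 p1" using R[OF k2 ca0 bb ca1 cb(2)] .
          thus ?thesis using Z2c[OF ca1 a01 bb] False Z2a iii m0 k2' True by simp
        qed
      next
        case False
        show ?thesis
        proof (cases "\<beta> = p1 \<or> \<beta> = r")
          case True
          have "f 2 \<alpha> \<beta> + f 2 \<alpha>0 p0 = f 2 \<alpha>0 \<beta> + f 2 \<alpha> p0" using R[OF k2 a bb ca0 cb(1)] .
          moreover have "f 2 \<alpha>0 \<beta> = 0" using True Z2a Z2b by auto
          moreover have "f 2 \<alpha> p0 = 0" using Z2c[OF a False cb(1)] dB by simp
          ultimately show ?thesis using m0 k2' unfolding mu_def by simp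
        next
          case F2: False thus ?thesis using Z2c[OF a False bb] k2' by simp
        qed
      qed }
    moreover
    { assume k3': "k = 3"
      have ?thesis
      proof (cases "\<alpha> = \<alpha>0")
        case True
        show ?thesis
        proof (cases "\<beta> = p1")
          case True thus ?thesis using p0' k3' \<open>\<alpha> = \<alpha>0\<close> unfolding pi_def by simp
        next
          case F1: False
          show ?thesis
          proof (cases "\<beta> = q")
            case True thus ?thesis using n0 k3' \<open>\<alpha> = \<alpha>0\<close> unfolding nu_def by simp
          next
            case F2: False
            show ?thesis
            proof (cases "\<beta> = r")
              case True thus ?thesis using v n0 k3' \<open>\<alpha> = \<alpha>0\<close> by simp
            next
              case False thus ?thesis using Z3a[OF bb F1 F2] k3' \<open>\<alpha> = \<alpha>0\<close> by simp
            qed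
          qed
        qed
      next
        case False
        have Rq: "f 3 \<alpha> \<beta> + f 3 \<alpha>0 q = f 3 \<alpha>0 \<beta> + f 3 \<alpha> q" using R[OF k3 a bb ca0 cb(3)] .
        show ?thesis
        proof (cases "\<beta> = q \<or> \<beta> = r")
          case True thus ?thesis using Z3b[OF a False] Z3c[OF a False] k3' by auto
        next
          case F1: False
          show ?thesis
          proof (cases "\<beta> = p1")
            case True thus ?thesis using Rq Z3b[OF a False] p0' n0 k3' unfolding pi_def nu_def by simp
          next
            case F2: False
            thus ?thesis using Rq Z3b[OF a False] Z3a[OF bb] F1 n0 k3' unfolding nu_def by simp
          qed
        qed
      qed }
    ultimately show ?thesis by blast
  qed
  have "\<forall>i. y i = 0"
  proof
    fix i show "y i = 0"
    proof (cases "i \<in> K3")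
      case True
      note KP = K3_parts[OF True]
      have "f (i v) (restrict i A') (restrict i B) = 0" by (rule all0[OF KP(1,2,3)])
      hence "sg W0 i * y i = 0" unfolding f_def KP(4) .
      thus ?thesis using sg_nz[of W0 i] by simp
    next
      case False thus ?thesis using kerv_van[OF ky] by simp
    qed
  qed
  thus False using ny by simp
qed

end


lemma base_thm:
  assumes AB: "A \<inter> B = {}" and fA: "finite A" and fB: "finite B" and cA: "card A \<ge> 2" and cB: "card B \<ge> 2"
    and d2: "\<forall>v\<in>A \<union> B. d v \<ge> 2"
  shows "(PP (A \<union> B) (Dmn A B) d \<longleftrightarrow> (\<forall>v\<in>A \<union> B. d v = 2)) \<and> Inv (A \<union> B) (Dmn A B) d"
proof -
  interpret bin A B by unfold_locales (rule AB fA fB)+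
  have fV: "finite (A \<union> B)" using fA fB by simp
  interpret bx: box "A \<union> B" "Dmn A B" d "\<lambda>_. 2"
    by unfold_locales (use fV Dmn_sub d2 in auto)
  have I: "Inv (A \<union> B) (Dmn A B) d" using bx.Inv_box Inv_bin[OF cA cB] by blast
  have "PP (A \<union> B) (Dmn A B) d \<longleftrightarrow> (\<forall>v\<in>A \<union> B. d v = 2)"
  proof
    assume P: "PP (A \<union> B) (Dmn A B) d"
    show "\<forall>v\<in>A \<union> B. d v = 2"
    proof (rule ccontr)
      assume "\<not> (\<forall>v\<in>A \<union> B. d v = 2)"
      then obtain v where v: "v \<in> A \<union> B" "d v \<noteq> 2" by blast
      have "2 \<le> d v" using d2 v(1) by blast
      hence d3: "d v \<ge> 3" using v(2) by linarith
      show False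
      proof (cases "v \<in> A")
        case True
        interpret ter A B v by unfold_locales (rule True)
        interpret b3: box "A \<union> B" "Dmn A B" d "\<lambda>u. if u = v then 3 else 2"
          by unfold_locales (use fV Dmn_sub d2 d3 in auto)
        show False using not_PP_ter[OF cA cB] b3.PP_box[OF P] by simp
      next
        case False
        hence vB: "v \<in> B" using v by simp
        interpret b': bin B A by unfold_locales (use AB fA fB in auto)
        interpret t': ter B A v by unfold_locales (rule vB)
        have eqV: "B \<union> A = A \<union> B" by auto
        have eqD: "Dmn B A = Dmn A B" by (rule Dmn_sym[symmetric])
        interpret b3: box "A \<union> B" "Dmn A B" d "\<lambda>u. if u = v then 3 else 2"
          by unfold_locales (use fV Dmn_sub d2 d3 in auto)
        show False using t'.not_PP_ter[OF cB cA] b3.PP_box[OF P] unfolding eqV eqD by simp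
      qed
    qed
  next
    assume "\<forall>v\<in>A \<union> B. d v = 2"
    hence "PP (A \<union> B) (Dmn A B) d = PP (A \<union> B) (Dmn A B) (\<lambda>_. 2)" by (intro PP_cong Dmn_sub) simp
    thus "PP (A \<union> B) (Dmn A B) d" using PP_bin by simp
  qed
  thus ?thesis using I by simp
qed

lemma obtained_struct:
  "obtained m n V C W L \<Longrightarrow> finite V \<and> C \<subseteq> Pow V \<and> W \<subseteq> V \<and> L \<subseteq> V"
proof (induction rule: obtained.induct)
  case (base A B)
  thus ?case unfolding Dmn_char[OF base(3)] by auto
next
  case (cone V C W L U)
  thus ?case unfolding cone_cx_def by auto
next
  case (ghost V C W L u)
  thus ?case by auto
next
  case (lawrence V C W L u)
  thus ?case unfolding lawrence_cx_def by auto
qed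

lemma cols_nonempty: "\<forall>u\<in>U. d u \<ge> 1 \<Longrightarrow> cols_A U d \<noteq> {}"
  unfolding cols_A_def by (auto simp: PiE_eq_empty_iff)

definition tk :: "'a \<Rightarrow> nat \<Rightarrow> ('a \<Rightarrow> nat)" where
  "tk u k = (\<lambda>x. if x = u then k else undefined)"

lemma tk_in: "k \<in> {1..d u} \<Longrightarrow> tk u k \<in> cols_A {u} d"
  unfolding tk_def cols_A_def by (auto simp: PiE_def extensional_def)

lemma tk_inj: "tk u k = tk u k' \<Longrightarrow> k = k'"
  unfolding tk_def by (metis (full_types))

lemma cols_single: "t \<in> cols_A {u} d \<Longrightarrow> t = tk u (t u) \<and> t u \<in> {1..d u}"
  unfolding tk_def cols_A_def by (auto simp: PiE_def extensional_def fun_eq_iff)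

lemma main_induct:
  assumes "obtained m n V C W L" "m \<ge> 1" "n \<ge> 1" "\<forall>v\<in>V. d v \<ge> 2"
  shows "(PP V C d \<longleftrightarrow> (\<forall>v\<in>W. d v = 2) \<and> (\<forall>v\<in>L. d v = 2)) \<and> Inv V C d"
  using assms
proof (induction rule: obtained.induct)
  case (base A B)
  have cA: "card A \<ge> 2" and cB: "card B \<ge> 2" using base by auto
  show ?case using base_thm[OF base(3,1,2) cA cB] base(8) by simp
next
  case (cone V C W L U)
  have st: "finite V \<and> C \<subseteq> Pow V \<and> W \<subseteq> V \<and> L \<subseteq> V" using obtained_struct[OF cone(1)] .
  have IH: "(PP V C d \<longleftrightarrow> (\<forall>v\<in>W. d v = 2) \<and> (\<forall>v\<in>L. d v = 2)) \<and> Inv V C d"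
    using cone by simp
  interpret dsj V U d by unfold_locales (use st cone in auto)
  have ne: "cols_A U d \<noteq> {}" using cols_nonempty[of U d] cone(8) by force
  then obtain t0 where t0: "t0 \<in> cols_A U d" by blast
  have CV: "C \<subseteq> Pow V" using st by simp
  show ?case using PP_cone[OF CV ne] Inv_cone[OF CV t0] IH by simp
next
  case (ghost V C W L u)
  have st: "finite V \<and> C \<subseteq> Pow V \<and> W \<subseteq> V \<and> L \<subseteq> V" using obtained_struct[OF ghost(1)] .
  have IH: "(PP V C d \<longleftrightarrow> (\<forall>v\<in>W. d v = 2) \<and> (\<forall>v\<in>L. d v = 2)) \<and> Inv V C d"
    using ghost by simp
  interpret dsj V "{u}" d by unfold_locales (use st ghost in auto)
  have ne: "cols_A {u} d \<noteq> {}" using cols_nonempty[of "{u}" d] ghost(6) by force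
  then obtain t0 where t0: "t0 \<in> cols_A {u} d" by blast
  have CV: "C \<subseteq> Pow V" using st by simp
  have iu: "insert u V = V \<union> {u}" by auto
  show ?case unfolding iu using PP_ghost[OF CV ne] Inv_ghost[OF CV t0] IH by simp
next
  case (lawrence V C W L u)
  have st: "finite V \<and> C \<subseteq> Pow V \<and> W \<subseteq> V \<and> L \<subseteq> V" using obtained_struct[OF lawrence(1)] .
  have IH: "(PP V C d \<longleftrightarrow> (\<forall>v\<in>W. d v = 2) \<and> (\<forall>v\<in>L. d v = 2)) \<and> Inv V C d"
    using lawrence by simp
  interpret dsj V "{u}" d by unfold_locales (use st lawrence in auto)
  have CV: "C \<subseteq> Pow V" using st by simp
  have iu: "insert u V = V \<union> {u}" by auto
  have du: "d u \<ge> 2" using lawrence(6) by simp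
  have t1: "tk u 1 \<in> cols_A {u} d" and t2: "tk u 2 \<in> cols_A {u} d" using du by (auto intro: tk_in)
  have t12: "tk u 1 \<noteq> tk u 2" using tk_inj by force
  have WL: "W \<subseteq> V" "L \<subseteq> V" using st by auto
  have PPeq: "PP (V \<union> {u}) (lawrence_cx V u C) d \<longleftrightarrow> (\<forall>v\<in>W. d v = 2) \<and> (\<forall>v\<in>insert u L. d v = 2)"
  proof
    assume P: "PP (V \<union> {u}) (lawrence_cx V u C) d"
    have "PP V C d" using PP_law_down[OF CV refl t1 t2 t12 P] .
    hence c1: "(\<forall>v\<in>W. d v = 2) \<and> (\<forall>v\<in>L. d v = 2)" using IH by simp
    have "d u = 2"
    proof (rule ccontr)
      assume "d u \<noteq> 2"
      hence "d u \<ge> 3" using du by simp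
      hence t3: "tk u 3 \<in> cols_A {u} d" by (auto intro: tk_in)
      have "tk u 1 \<noteq> tk u 3" "tk u 2 \<noteq> tk u 3" using tk_inj by force+
      thus False using law_bad[OF CV refl t1 t2 t3 t12] IH P by blast
    qed
    thus "(\<forall>v\<in>W. d v = 2) \<and> (\<forall>v\<in>insert u L. d v = 2)" using c1 by simp
  next
    assume H: "(\<forall>v\<in>W. d v = 2) \<and> (\<forall>v\<in>insert u L. d v = 2)"
    hence "PP V C d" using IH by simp
    moreover have "cols_A {u} d = {tk u 1, tk u 2}"
    proof
      show "cols_A {u} d \<subseteq> {tk u 1, tk u 2}"
      proof
        fix t assume tin: "t \<in> cols_A {u} d"
        have tt: "t = tk u (t u) \<and> t u \<in> {1..d u}" using cols_single[OF tin] .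
        moreover have "d u = 2" using H by simp
        ultimately have "t u = 1 \<or> t u = 2" by auto
        thus "t \<in> {tk u 1, tk u 2}" using tt by auto
      qed
      show "{tk u 1, tk u 2} \<subseteq> cols_A {u} d" using t1 t2 by simp
    qed
    ultimately show "PP (V \<union> {u}) (lawrence_cx V u C) d" using PP_law_up[OF CV refl _ t12] by blast
  qed
  show ?case unfolding iu using PPeq Inv_law[OF CV refl t1 t2 t12] IH by simp
qed

theorem theorem7p10:
  fixes m n :: nat and V W L :: "'a set" and C :: "'a set set" and d :: "'a \<Rightarrow> nat"
  assumes "m \<ge> 1" and "n \<ge> 1"
    and "obtained m n V C W L"
    and "\<forall>v\<in>V. d v \<ge> 2"
  shows "A_unimodular V C d \<longleftrightarrow> (\<forall>v\<in>W. d v = 2) \<and> (\<forall>v\<in>L. d v = 2)"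
proof -
  have st: "finite V \<and> C \<subseteq> Pow V \<and> W \<subseteq> V \<and> L \<subseteq> V" using obtained_struct[OF assms(3)] .
  have "A_unimodular V C d \<longleftrightarrow> PP V C d" using A_unimodular_iff_PP st by blast
  thus ?thesis using main_induct[OF assms(3,1,2,4)] by simp
qed


end
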